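(* For any eigenfunction $\phi$ and any adjoint eigenfunction $\psi$ of the dmKP hierarchy, \[ \phi(n,t)=\operatorname{res}_{\lambda}\Big(w(n,t,\lambda)\,S\big(\phi(n,t'),\Delta w^{*}(n,t',\lambda)\big)\Big),\qquad \psi(n,t)=\operatorname{res}_{\lambda}\Big(w^{*}(n,t,\lambda)\,\hat S\big(\Delta w(n,t',\lambda),\psi(n+1,t')\big)\Big). \]
   Context: $\varGamma g(n)=g(n+1)$, $\varGamma^{-1}g(n)=g(n-1)$, $\Delta=\varGamma-I$, $\Delta^*=\varGamma^{-1}-I$; pseudo-difference operators $\sum_{i\le m}a_i\Delta^i$ are multiplied by $\Delta^{k}\circ g=\sum_{i\ge0}\binom ki (\Delta^{i}g)(n+k-i)\Delta^{k-i}$; the adjoint satisfies $(a\Delta^k)^*=(\Delta^* )^k a$; $(A)_{\ge1}$ is the part with positive powers of $\Delta$, $(A)_{\le0}$ the rest; $\operatorname{res}_\Delta$ is the coefficient of $\Delta^{-1}$ and $\operatorname{res}_\lambda$ the coefficient of $\lambda^{-1}$. The dmKP hierarchy is $\partial_{t_i}L=[(L^i)_{\ge1},L]$, $L=Z\Delta Z^{-1}=\Delta+u_0+u_1\Delta^{-1}+\cdots$, $Z=z_0+z_1\Delta^{-1}+\cdots$, $\partial_{t_i}Z=-(L^i)_{\le0}Z$. With $\xi(t,\lambda)=\sum_k t_k\lambda^k$, the wave function is $w(n,t,\lambda)=Z(n)(1+\lambda)^ne^{\xi(t,\lambda)}$ and the adjoint wave function is $w^*(n,t,\lambda)=(Z^{-1}(n-1)\Delta^{-1})^*(1+\lambda)^{-n}e^{-\xi(t,\lambda)}$.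 An eigenfunction $\phi$ satisfies $\phi_{t_i}=(L^i)_{\ge1}(\phi)$ and an adjoint eigenfunction $\psi$ satisfies $\psi_{t_i}=-(\Delta^{-1}(L^i)^*_{\ge1}\Delta)(\psi)$ for all $i$. The squared eigenfunction potential $S(\phi,\Delta\psi)$ is a function with $\Delta S(\phi,\Delta\psi)=\phi\,(\Delta\psi)$ and $\partial_{t_i}S(\phi,\Delta\psi)=\operatorname{res}_{\Delta}(\varGamma\Delta^{-1}(\Delta\psi)(L^{i})_{\geq1}\phi\Delta^{-1})$; the second potential is $\hat S(\Delta\phi,\varGamma\psi)=\phi\psi-S(\phi,\Delta\psi)$, which satisfies $\Delta\hat S(\Delta\phi,\varGamma\psi)=(\Delta\phi)\varGamma\psi$. (The wave function $w(\cdot,\lambda)$ is an eigenfunction and $w^*(\cdot,\lambda)$ an adjoint eigenfunction, so these potentials apply to them.) *)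

theory Defs
  imports "HOL-Analysis.Analysis" "HOL-Computational_Algebra.Formal_Laurent_Series"
begin

text \<open>Times are t = (t_1, t_2, ...), a function nat => real (t 0 is unused).
  Partial derivative in t_i.\<close>

definition pd :: "nat \<Rightarrow> ((nat \<Rightarrow> real) \<Rightarrow> real) \<Rightarrow> (nat \<Rightarrow> real) \<Rightarrow> real" where
  "pd i f t = deriv (\<lambda>s. f (t(i := s))) (t i)"

definition pdiff :: "nat \<Rightarrow> ((nat \<Rightarrow> real) \<Rightarrow> real) \<Rightarrow> (nat \<Rightarrow> real) \<Rightarrow> bool" where
  "pdiff i f t \<longleftrightarrow> (\<lambda>s. f (t(i := s))) differentiable (at (t i))"

definition ibinom :: "int \<Rightarrow> nat \<Rightarrow> int" where
  "ibinom k r = (if k \<ge> 0 then int (nat k choose r)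
                 else (-1) ^ r * int ((nat (- k) + r - 1) choose r))"

definition fdiff :: "nat \<Rightarrow> (int \<Rightarrow> 'a::comm_ring_1) \<Rightarrow> int \<Rightarrow> 'a" where
  "fdiff r g n = (\<Sum>s\<le>r. of_int ((-1) ^ (r - s) * int (r choose s)) * g (n + int s))"

definition bdiff :: "nat \<Rightarrow> (int \<Rightarrow> 'a::comm_ring_1) \<Rightarrow> int \<Rightarrow> 'a" where
  "bdiff r g n = (\<Sum>s\<le>r. of_int ((-1) ^ (r - s) * int (r choose s)) * g (n - int s))"

text \<open>A k n = coefficient of Delta^k at lattice site n.\<close>
type_synonym 'a pdo = "int \<Rightarrow> int \<Rightarrow> 'a"

definition pdo_bounded :: "'a::zero pdo \<Rightarrow> bool" where
  "pdo_bounded A \<longleftrightarrow> (\<exists>m. \<forall>k>m. \<forall>n. A k n = 0)"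

definition pdo_deg :: "'a::zero pdo \<Rightarrow> int" where
  "pdo_deg A = (SOME m. \<forall>k>m. \<forall>n. A k n = 0)"

text \<open>Product, using  Delta^i o b = sum_r binom(i,r) (Delta^r b)(n+i-r) Delta^(i-r).\<close>
definition pdo_mult :: "'a::comm_ring_1 pdo \<Rightarrow> 'a pdo \<Rightarrow> 'a pdo" where
  "pdo_mult A B j n =
     (\<Sum>r\<in>{0..nat (pdo_deg A + pdo_deg B - j)}.
        \<Sum>i\<in>{j + int r - pdo_deg B .. pdo_deg A}.
          A i n * of_int (ibinom i r) * fdiff r (B (j - i + int r)) (n + i - int r))"

definition pdo_one :: "'a::{zero,one} pdo" where
  "pdo_one k n = (if k = 0 then 1 else 0)"

definition pdo_Delta :: "'a::{zero,one} pdo" where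
  "pdo_Delta k n = (if k = 1 then 1 else 0)"

definition pdo_Delta_inv :: "'a::{zero,one} pdo" where
  "pdo_Delta_inv k n = (if k = -1 then 1 else 0)"

definition pdo_Gamma :: "'a::{zero,one} pdo" where
  "pdo_Gamma k n = (if k = 0 \<or> k = 1 then 1 else 0)"

definition pdo_fun :: "(int \<Rightarrow> 'a::zero) \<Rightarrow> 'a pdo" where
  "pdo_fun f k n = (if k = 0 then f n else 0)"

primrec pdo_pow :: "'a::comm_ring_1 pdo \<Rightarrow> nat \<Rightarrow> 'a pdo" where
  "pdo_pow A 0 = pdo_one"
| "pdo_pow A (Suc m) = pdo_mult (pdo_pow A m) A"

definition pdo_pos :: "'a::zero pdo \<Rightarrow> 'a pdo" where
  "pdo_pos A k n = (if k \<ge> 1 then A k n else 0)"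

definition pdo_nonpos :: "'a::zero pdo \<Rightarrow> 'a pdo" where
  "pdo_nonpos A k n = (if k \<le> 0 then A k n else 0)"

definition pdo_res :: "'a pdo \<Rightarrow> int \<Rightarrow> 'a" where
  "pdo_res A n = A (-1) n"

definition pdo_map :: "('a \<Rightarrow> 'b) \<Rightarrow> 'a pdo \<Rightarrow> 'b pdo" where
  "pdo_map h A k n = h (A k n)"

definition pdo_apply :: "'a::comm_ring_1 pdo \<Rightarrow> (int \<Rightarrow> 'a) \<Rightarrow> int \<Rightarrow> 'a" where
  "pdo_apply A f n = (\<Sum>k\<in>{0..nat (pdo_deg A)}. A (int k) n * fdiff k f n)"

text \<open>For  A = sum_{k>=1} a_k Delta^k :  (Delta^{-1} A^* Delta) f, where
  A^* = sum_k (Delta^* )^k a_k and Delta^{-1} (Delta^* )^k = (-1)^k Gamma^{-k} Delta^{k-1}.\<close>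
definition adj_conj_apply :: "'a::comm_ring_1 pdo \<Rightarrow> (int \<Rightarrow> 'a) \<Rightarrow> int \<Rightarrow> 'a" where
  "adj_conj_apply A f n =
     (\<Sum>k\<in>{1..nat (pdo_deg A)}. (-1) ^ k *
         fdiff (k - 1) (\<lambda>m. A (int k) m * (f (m + 1) - f m)) (n - int k))"

type_synonym tpdo = "(nat \<Rightarrow> real) \<Rightarrow> real pdo"

definition Lax :: "tpdo \<Rightarrow> tpdo \<Rightarrow> tpdo" where
  "Lax Z Zi t = pdo_mult (pdo_mult (Z t) pdo_Delta) (Zi t)"

text \<open>Z = z_0 + z_1 Delta^{-1} + ..., Zi = Z^{-1}, L = Z Delta Z^{-1} = Delta + u_0 + ...,
  and the dressing equations  d_{t_i} Z = -(L^i)_{<=0} Z .\<close>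
definition dmKP_dressing :: "tpdo \<Rightarrow> tpdo \<Rightarrow> bool" where
  "dmKP_dressing Z Zi \<longleftrightarrow>
     (\<forall>t k n. k > 0 \<longrightarrow> Z t k n = 0 \<and> Zi t k n = 0) \<and>
     (\<forall>t. pdo_mult (Z t) (Zi t) = pdo_one \<and> pdo_mult (Zi t) (Z t) = pdo_one) \<and>
     (\<forall>t n. Lax Z Zi t 1 n = 1) \<and>
     (\<forall>i\<ge>1. \<forall>t k n. pdiff i (\<lambda>s. Z s k n) t \<and>
        pd i (\<lambda>s. Z s k n) t = - pdo_mult (pdo_nonpos (pdo_pow (Lax Z Zi t) i)) (Z t) k n)"

definition eigenfunction :: "tpdo \<Rightarrow> ((nat \<Rightarrow> real) \<Rightarrow> int \<Rightarrow> real) \<Rightarrow> bool" where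
  "eigenfunction L \<phi> \<longleftrightarrow>
     (\<forall>i\<ge>1. \<forall>t n. pdiff i (\<lambda>s. \<phi> s n) t \<and>
        pd i (\<lambda>s. \<phi> s n) t = pdo_apply (pdo_pos (pdo_pow (L t) i)) (\<phi> t) n)"

definition adjoint_eigenfunction :: "tpdo \<Rightarrow> ((nat \<Rightarrow> real) \<Rightarrow> int \<Rightarrow> real) \<Rightarrow> bool" where
  "adjoint_eigenfunction L \<psi> \<longleftrightarrow>
     (\<forall>i\<ge>1. \<forall>t n. pdiff i (\<lambda>s. \<psi> s n) t \<and>
        pd i (\<lambda>s. \<psi> s n) t = - adj_conj_apply (pdo_pos (pdo_pow (L t) i)) (\<psi> t) n)"

section \<open>lambda-dependent objects as formal Laurent series in X = lambda^{-1}\<close>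

text \<open>(1+lambda)^n = lambda^n (1+lambda^{-1})^n = X^{-n} (1+X)^n\<close>
definition onepl :: "int \<Rightarrow> real fls" where
  "onepl n = fls_shift n (fps_to_fls (Abs_fps (\<lambda>r. of_int (ibinom n r))))"

text \<open>w(n,t,lambda) = what Z t n * e^{xi(t,lambda)}:
  Z(n) (1+lambda)^n = sum_j z_j(n) lambda^{-j} (1+lambda)^n.\<close>
definition what :: "tpdo \<Rightarrow> (nat \<Rightarrow> real) \<Rightarrow> int \<Rightarrow> real fls" where
  "what Z t n = fps_to_fls (Abs_fps (\<lambda>j. Z t (- int j) n)) * onepl n"

text \<open>For an operator sum_{k<=-1} (Delta^* )^k c_k, its action on (1+lambda)^{-n}, using
  (Delta^* )^k o c = sum_r binom(k,r) ((Delta^* )^r c)(n-k+r) (Delta^* )^{k-r}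
  and (Delta^* )(1+lambda)^{-n} = lambda (1+lambda)^{-n}.\<close>
definition adj_act_neg :: "real pdo \<Rightarrow> int \<Rightarrow> real fls" where
  "adj_act_neg C n = fps_to_fls (Abs_fps (\<lambda>m. if m = 0 then 0 else
       (\<Sum>k\<in>{- int m .. -1}. of_int (ibinom k (nat (k + int m))) *
           bdiff (nat (k + int m)) (C k) (n + int m)))) * onepl (- n)"

text \<open>w^*(n,t,lambda) = wstarhat Zi t n * e^{-xi(t,lambda)} with
  w^* = (Z^{-1}(n-1) Delta^{-1})^* (1+lambda)^{-n} e^{-xi}; the adjoint operator is
  sum_j (Delta^* )^{-j-1} zinv_j(n-1).\<close>
definition wstarhat :: "tpdo \<Rightarrow> (nat \<Rightarrow> real) \<Rightarrow> int \<Rightarrow> real fls" where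
  "wstarhat Zi t n = adj_act_neg (\<lambda>k m. if k \<le> -1 then Zi t (k + 1) (m - 1) else 0) n"

text \<open>Squared eigenfunction potential S(f, Delta g) of lambda-dependent functions
  (values in real fls) whose common exponential factor is e^{eps xi(t,lambda)}:
  S = sigma * e^{eps xi}.\<close>
definition sq_pot :: "tpdo \<Rightarrow> real \<Rightarrow> ((nat \<Rightarrow> real) \<Rightarrow> int \<Rightarrow> real fls)
     \<Rightarrow> ((nat \<Rightarrow> real) \<Rightarrow> int \<Rightarrow> real fls) \<Rightarrow> ((nat \<Rightarrow> real) \<Rightarrow> int \<Rightarrow> real fls) \<Rightarrow> bool" where
  "sq_pot L eps f g \<sigma> \<longleftrightarrow>
     (\<forall>n. \<exists>d. \<forall>t k. k < d \<longrightarrow> fls_nth (\<sigma> t n) k = 0) \<and>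
     (\<forall>t n. \<sigma> t (n + 1) - \<sigma> t n = f t n * (g t (n + 1) - g t n)) \<and>
     (\<forall>i\<ge>1. \<forall>t n k. pdiff i (\<lambda>s. fls_nth (\<sigma> s n) k) t \<and>
        pd i (\<lambda>s. fls_nth (\<sigma> s n) k) t + eps * fls_nth (\<sigma> t n) (k + int i) =
          fls_nth (pdo_res (pdo_mult (pdo_mult (pdo_mult (pdo_mult pdo_Gamma pdo_Delta_inv)
                      (pdo_fun (\<lambda>m. g t (m + 1) - g t m)))
                   (pdo_mult (pdo_map fls_const (pdo_pos (pdo_pow (L t) i))) (pdo_fun (f t))))
                 pdo_Delta_inv) n) k)"

text \<open>Formal t'-derivative of F(t') e^{eps xi(t',lambda)} : (d_i F + eps lambda^i F) e^{eps xi}.\<close>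
definition pd_fls :: "nat \<Rightarrow> ((nat \<Rightarrow> real) \<Rightarrow> int \<Rightarrow> real fls) \<Rightarrow> (nat \<Rightarrow> real) \<Rightarrow> int \<Rightarrow> real fls" where
  "pd_fls i F t n = Abs_fls (\<lambda>k. pd i (\<lambda>s. fls_nth (F s n) k) t)"

definition Dtw :: "real \<Rightarrow> nat \<Rightarrow> ((nat \<Rightarrow> real) \<Rightarrow> int \<Rightarrow> real fls) \<Rightarrow> (nat \<Rightarrow> real) \<Rightarrow> int \<Rightarrow> real fls" where
  "Dtw eps i F t n = pd_fls i F t n + fls_const eps * fls_X_inv ^ i * F t n"

primrec Dtw_list :: "real \<Rightarrow> nat list \<Rightarrow> ((nat \<Rightarrow> real) \<Rightarrow> int \<Rightarrow> real fls) \<Rightarrow> (nat \<Rightarrow> real) \<Rightarrow> int \<Rightarrow> real fls" where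
  "Dtw_list eps [] F = F"
| "Dtw_list eps (i # is) F = Dtw eps i (Dtw_list eps is F)"

end

theory Submission
  imports Defs
begin


lemma ibinom_0[simp]: "ibinom k 0 = 1"
  by (simp add: ibinom_def)

lemma ibinom_pascal: "ibinom (k+1) (Suc r) = ibinom k (Suc r) + ibinom k r"
proof (cases "k \<ge> 0")
  case True
  then have "nat (k+1) = Suc (nat k)" by simp
  then show ?thesis using True by (simp add: ibinom_def)
next
  case False
  show ?thesis
  proof (cases "k = -1")
    case True
    then show ?thesis by (simp add: ibinom_def)
  next
    case False2: False
    define m where "m = nat (-k)"
    have m: "k = - int m" "m \<ge> 2" using False False2 by (auto simp: m_def)
    have k1: "k + 1 = - int (m - 1)" using m by simp
    have a: "nat (- (k+1)) = m - 1" using k1 m by simp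
    have b: "nat (-k) = m" using m by simp
    define q where "q = m + r - 1"
    have q: "m + r = Suc q" using m by (simp add: q_def)
    have c: "m - 1 + Suc r - 1 = q" "m + Suc r - 1 = Suc q" "m + r - 1 = q" "m + r - Suc 0 = q" "r + (m - 1) = q"
      using m by (auto simp: q_def)
    have d: "nat (int m - 1) = m - 1" using m by simp
    have f: "int (m + r choose Suc r) = int (q choose r) + int (q choose Suc r)"
      unfolding q by simp
    show ?thesis using False False2 m k1 f
      by (simp add: ibinom_def a b c d algebra_simps)
  qed
qed

lemma ibinom_pascal': "ibinom (1+k) (Suc r) = ibinom k (Suc r) + ibinom k r"
  using ibinom_pascal[of k r] by (simp only: add.commute)

lemma fdiff_0[simp]: "fdiff 0 g n = g n"
  by (simp add: fdiff_def)

lemma fdiff_Suc: "fdiff (Suc r) g m = fdiff r g (m+1) - fdiff r g m"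
proof -
  define A where "A s = (if s = 0 then 0 else of_int ((-1) ^ (Suc r - s) * int (r choose (s - 1))) * g (m + int s))" for s
  define B where "B s = of_int ((-1) ^ (Suc r - s) * int (r choose s)) * g (m + int s)" for s
  have 1: "fdiff (Suc r) g m = (\<Sum>s\<le>Suc r. A s + B s)"
    unfolding fdiff_def
  proof (rule sum.cong[OF refl])
    fix s assume "s \<in> {..Suc r}"
    show "of_int ((-1) ^ (Suc r - s) * int (Suc r choose s)) * g (m + int s) = A s + B s"
    proof (cases s)
      case 0 then show ?thesis by (simp add: A_def B_def)
    next
      case (Suc s') then show ?thesis by (simp add: A_def B_def algebra_simps)
    qed
  qed
  have 2: "(\<Sum>s\<le>Suc r. A s) = fdiff r g (m+1)"
    unfolding fdiff_def by (subst sum.atMost_Suc_shift) (simp add: A_def algebra_simps)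
  have 3: "(\<Sum>s\<le>Suc r. B s) = - fdiff r g m"
  proof -
    have "(\<Sum>s\<le>Suc r. B s) = (\<Sum>s\<le>r. B s)" by (simp add: B_def binomial_eq_0)
    also have "\<dots> = (\<Sum>s\<le>r. - (of_int ((-1) ^ (r - s) * int (r choose s)) * g (m + int s)))"
    proof (rule sum.cong[OF refl])
      fix s assume "s \<in> {..r}"
      then have "Suc r - s = Suc (r - s)" by auto
      then show "B s = - (of_int ((-1) ^ (r - s) * int (r choose s)) * g (m + int s))"
        by (simp add: B_def)
    qed
    finally show ?thesis by (simp add: fdiff_def sum_negf)
  qed
  show ?thesis using 1 2 3 by (simp add: sum.distrib)
qed

definition bnd :: "'a::zero pdo \<Rightarrow> int \<Rightarrow> bool" where
  "bnd A d \<longleftrightarrow> (\<forall>k>d. \<forall>n. A k n = 0)"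

lemma bnd_deg: "bnd A d \<Longrightarrow> bnd A (pdo_deg A)"
  unfolding pdo_deg_def bnd_def by (rule someI)

lemma bnd_mono: "bnd A d \<Longrightarrow> d \<le> d' \<Longrightarrow> bnd A d'"
  unfolding bnd_def by auto

lemma bndD: "bnd A d \<Longrightarrow> k > d \<Longrightarrow> A k n = 0"
  unfolding bnd_def by auto

lemma fdiff_zero[simp]: "fdiff r (\<lambda>_. 0) n = 0"
  by (simp add: fdiff_def)

definition mterm :: "'a::comm_ring_1 pdo \<Rightarrow> 'a pdo \<Rightarrow> int \<Rightarrow> int \<Rightarrow> nat \<Rightarrow> int \<Rightarrow> 'a" where
  "mterm A B j n r i = A i n * of_int (ibinom i r) * fdiff r (B (j - i + int r)) (n + i - int r)"

definition msum :: "'a::comm_ring_1 pdo \<Rightarrow> 'a pdo \<Rightarrow> int \<Rightarrow> int \<Rightarrow> int \<Rightarrow> int \<Rightarrow> 'a" where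
  "msum A B a b j n = (\<Sum>r\<in>{0..nat (a + b - j)}. \<Sum>i\<in>{j + int r - b .. a}. mterm A B j n r i)"

lemma msum_Sigma: "msum A B a b j n = (\<Sum>(r,i)\<in>Sigma {0..nat (a + b - j)} (\<lambda>r. {j + int r - b .. a}). mterm A B j n r i)"
  unfolding msum_def by (rule sum.Sigma) auto

lemma mterm_zero:
  assumes "bnd A a" "bnd B b" "\<not> (i \<le> a \<and> j + int r - b \<le> i)"
  shows "mterm A B j n r i = 0"
proof (cases "i > a")
  case True then show ?thesis using assms(1) by (simp add: mterm_def bndD)
next
  case False
  then have "j - i + int r > b" using assms(3) by auto
  then have "B (j - i + int r) = (\<lambda>_. 0)" using assms(2) by (auto simp: bndD)
  then show ?thesis by (simp add: mterm_def)
qed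

lemma msum_mono:
  assumes "bnd A a" "bnd B b" "a \<le> a'" "b \<le> b'"
  shows "msum A B a' b' j n = msum A B a b j n"
  unfolding msum_Sigma
  apply (rule sum.mono_neutral_right)
    apply simp
  using assms(3,4) apply force
  apply clarify
  subgoal for r i
    using mterm_zero[OF assms(1,2), of i j r n] by (cases "i \<le> a \<and> j + int r - b \<le> i") auto
  done

lemma pdo_mult_msum: "pdo_mult A B j n = msum A B (pdo_deg A) (pdo_deg B) j n"
  unfolding pdo_mult_def msum_def mterm_def ..

lemma pdo_mult_eq:
  assumes "bnd A a" "bnd B b"
  shows "pdo_mult A B j n = msum A B a b j n"
proof -
  have A: "bnd A (pdo_deg A)" and B: "bnd B (pdo_deg B)" using assms bnd_deg by blast+
  have "pdo_mult A B j n = msum A B (max a (pdo_deg A)) (max b (pdo_deg B)) j n"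
    unfolding pdo_mult_msum by (rule msum_mono[OF A B, symmetric]) auto
  also have "\<dots> = msum A B a b j n"
    by (rule msum_mono[OF assms]) auto
  finally show ?thesis .
qed

lemma bnd_mult:
  assumes "bnd A a" "bnd B b"
  shows "bnd (pdo_mult A B) (a + b)"
  unfolding bnd_def
proof (intro allI impI)
  fix k n assume "k > a + b"
  then have "nat (a + b - k) = 0" by simp
  moreover have "{k - b .. a} = {}"
    using \<open>k > a + b\<close> by auto
  ultimately show "pdo_mult A B k n = 0"
    by (simp add: pdo_mult_eq[OF assms] msum_def)
qed

definition mono :: "int \<Rightarrow> 'a::{zero,one} pdo" where
  "mono i k n = (if k = i then 1 else 0)"

lemma pdo_Delta_mono: "pdo_Delta = mono 1"
  by (auto simp: pdo_Delta_def mono_def fun_eq_iff)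
lemma pdo_one_mono: "pdo_one = mono 0"
  by (auto simp: pdo_one_def mono_def fun_eq_iff)
lemma pdo_Delta_inv_mono: "pdo_Delta_inv = mono (-1)"
  by (auto simp: pdo_Delta_inv_def mono_def fun_eq_iff)

lemma bnd_mono_op: "bnd (mono i) i"
  by (simp add: bnd_def mono_def)

lemma fdiff_const: "fdiff r (\<lambda>_. c) n = (if r = 0 then c else 0)"
  by (induction r arbitrary: n) (simp_all add: fdiff_Suc)

lemma fdiff_cong: "(\<And>s. s \<le> r \<Longrightarrow> f (n + int s) = g (n + int s)) \<Longrightarrow> fdiff r f n = fdiff r g n"
  unfolding fdiff_def by (rule sum.cong) auto

lemma ibinom_nonneg: "k \<ge> 0 \<Longrightarrow> ibinom k r = int (nat k choose r)"
  by (simp add: ibinom_def)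

lemma sum_zero_ext:
  assumes "finite A" "finite B" "\<And>x. x \<in> A - B \<Longrightarrow> f x = 0" "\<And>x. x \<in> B - A \<Longrightarrow> f x = 0"
  shows "sum f A = sum f B"
proof -
  have "sum f A = sum f (A \<inter> B)"
    by (rule sum.mono_neutral_right) (use assms in auto)
  also have "\<dots> = sum f B"
    by (rule sum.mono_neutral_left) (use assms in auto)
  finally show ?thesis .
qed

lemma mult_mono_left:
  assumes B: "bnd B b" and N: "int N \<ge> i + b - j"
  shows "pdo_mult (mono i) B j n = (\<Sum>r\<le>N. of_int (ibinom i r) * fdiff r (B (j - i + int r)) (n + i - int r))"
proof -
  define b' where "b' = max b (int N + j - i)"
  have B': "bnd B b'" using B by (rule bnd_mono) (simp add: b'_def)
  have "pdo_mult (mono i) B j n = msum (mono i) B i b' j n"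
    by (rule pdo_mult_eq[OF bnd_mono_op B'])
  also have "\<dots> = (\<Sum>r\<in>{0..nat (i + b' - j)}. of_int (ibinom i r) * fdiff r (B (j - i + int r)) (n + i - int r))"
    unfolding msum_def
  proof (rule sum.cong[OF refl])
    fix r assume r: "r \<in> {0..nat (i + b' - j)}"
    have "i + b' - j \<ge> 0" by (simp add: b'_def)
    then have "{j + int r - b'..i} = insert i {j + int r - b'..i - 1}" using r by auto
    moreover have "(\<Sum>i'\<in>{j + int r - b'..i - 1}. mterm (mono i) B j n r i') = 0"
      by (rule sum.neutral) (auto simp: mterm_def mono_def)
    ultimately show "(\<Sum>i'\<in>{j + int r - b'..i}. mterm (mono i) B j n r i') = of_int (ibinom i r) * fdiff r (B (j - i + int r)) (n + i - int r)"
      by (simp add: mterm_def mono_def)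
  qed
  also have "\<dots> = (\<Sum>r\<le>N. of_int (ibinom i r) * fdiff r (B (j - i + int r)) (n + i - int r))"
  proof (rule sum_zero_ext)
    fix r assume "r \<in> {0..nat (i + b' - j)} - {..N}"
    then have "j - i + int r > b" using N by auto
    then have "B (j - i + int r) = (\<lambda>_. 0)" using B by (auto simp: bndD)
    then show "of_int (ibinom i r) * fdiff r (B (j - i + int r)) (n + i - int r) = 0" by simp
  next
    fix r assume "r \<in> {..N} - {0..nat (i + b' - j)}"
    then have False using N by (auto simp: b'_def)
    then show "of_int (ibinom i r) * fdiff r (B (j - i + int r)) (n + i - int r) = 0" ..
  qed auto
  finally show ?thesis .
qed

lemma bnd_T: "bnd B b \<Longrightarrow> bnd (pdo_mult (mono i) B) (i + b)"
  using bnd_mult[OF bnd_mono_op] by blast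

lemma mult_one_left:
  assumes "bnd B b" shows "pdo_mult (mono 0) B = B"
proof (intro ext)
  fix j n
  have "pdo_mult (mono 0) B j n = (\<Sum>r\<le>nat (b - j). of_int (ibinom 0 r) * fdiff r (B (j - 0 + int r)) (n + 0 - int r))"
    by (rule mult_mono_left[OF assms]) simp
  also have "\<dots> = B j n"
    by (subst sum.atMost_shift) (simp add: ibinom_def)
  finally show "pdo_mult (mono 0) B j n = B j n" .
qed

lemma mult_Delta_left:
  assumes "bnd B b"
  shows "pdo_mult (mono 1) B j n = B (j - 1) (n + 1) + B j (n + 1) - B j n"
proof -
  have "pdo_mult (mono 1) B j n = (\<Sum>r\<le>Suc (nat (1 + b - j)). of_int (ibinom 1 r) * fdiff r (B (j - 1 + int r)) (n + 1 - int r))"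
    by (rule mult_mono_left[OF assms]) simp
  also have "\<dots> = (\<Sum>r\<le>1. of_int (ibinom 1 r) * fdiff r (B (j - 1 + int r)) (n + 1 - int r))"
    by (rule sum.mono_neutral_right) (auto simp: ibinom_def binomial_eq_0)
  also have "\<dots> = B (j - 1) (n + 1) + B j (n + 1) - B j n"
    by (simp add: ibinom_def fdiff_Suc)
  finally show ?thesis .
qed

lemma T_Suc:
  assumes B: "bnd B b"
  shows "pdo_mult (mono 1) (pdo_mult (mono i) B) = pdo_mult (mono (i+1)) B"
proof (intro ext)
  fix j n
  define N where "N = nat (i + b - j + 2)"
  define t where "t r = fdiff r (B (j - (i+1) + int r)) (n + (i+1) - int r)" for r
  have t0: "t r = 0" if "r > N" for r
  proof -
    have "B (j - (i+1) + int r) = (\<lambda>_. 0)" using B that by (auto simp: bndD N_def)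
    then show ?thesis by (simp add: t_def)
  qed
  have e1: "pdo_mult (mono i) B (j - 1) (n + 1) = (\<Sum>r\<le>N. of_int (ibinom i r) * t r)"
    by (subst mult_mono_left[OF B]) (auto simp: N_def t_def algebra_simps)
  have e2: "pdo_mult (mono i) B j m = (\<Sum>r\<le>N. of_int (ibinom i r) * fdiff r (B (j - i + int r)) (m + i - int r))" for m
    by (rule mult_mono_left[OF B]) (simp add: N_def)
  have "pdo_mult (mono i) B j (n + 1) - pdo_mult (mono i) B j n
      = (\<Sum>r\<le>N. of_int (ibinom i r) * t (Suc r))"
    unfolding e2 sum_subtractf[symmetric] 
    by (rule sum.cong) (auto simp: t_def fdiff_Suc algebra_simps)
  also have "\<dots> = (\<Sum>r\<le>Suc N. (if r = 0 then 0 else of_int (ibinom i (r - 1))) * t r)"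
    by (subst sum.atMost_Suc_shift) simp
  finally have e3: "pdo_mult (mono i) B j (n + 1) - pdo_mult (mono i) B j n = \<dots>" .
  have e1': "pdo_mult (mono i) B (j - 1) (n + 1) = (\<Sum>r\<le>Suc N. of_int (ibinom i r) * t r)"
    unfolding e1 by (simp add: t0)
  have "pdo_mult (mono 1) (pdo_mult (mono i) B) j n
     = pdo_mult (mono i) B (j - 1) (n + 1) + (pdo_mult (mono i) B j (n + 1) - pdo_mult (mono i) B j n)"
    by (simp add: mult_Delta_left[OF bnd_T[OF B]])
  also have "\<dots> = (\<Sum>r\<le>Suc N. of_int (ibinom (i+1) r) * t r)"
    unfolding e1' e3 sum.distrib[symmetric]
  proof (rule sum.cong[OF refl])
    fix r show "of_int (ibinom i r) * t r + (if r = 0 then 0 else of_int (ibinom i (r - 1))) * t r = of_int (ibinom (i + 1) r) * t r"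
      by (cases r) (simp_all add: ibinom_pascal ibinom_pascal' algebra_simps)
  qed
  also have "\<dots> = pdo_mult (mono (i+1)) B j n"
    unfolding t_def by (rule mult_mono_left[OF B, symmetric]) (simp add: N_def)
  finally show "pdo_mult (mono 1) (pdo_mult (mono i) B) j n = pdo_mult (mono (i+1)) B j n" .
qed

lemma mult_const_right:
  assumes A: "bnd A a" and B: "bnd B b" and c: "\<And>k n. B k n = c k"
  shows "pdo_mult A B j n = (\<Sum>i\<in>{j - b..a}. A i n * c (j - i))"
proof -
  have Bc: "B = (\<lambda>k n. c k)" by (intro ext) (simp add: c)
  have "pdo_mult A B j n = msum A B a b j n" by (rule pdo_mult_eq[OF A B])
  also have "\<dots> = (\<Sum>r\<in>{0..nat (a + b - j)}. if r = 0 then (\<Sum>i\<in>{j - b..a}. A i n * c (j - i)) else 0)"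
    unfolding msum_def
  proof (rule sum.cong[OF refl])
    fix r assume "r \<in> {0..nat (a + b - j)}"
    have "mterm A B j n r i = (if r = 0 then A i n * c (j - i) else 0)" for i
      unfolding mterm_def Bc fdiff_const by simp
    then show "(\<Sum>i\<in>{j + int r - b..a}. mterm A B j n r i) = (if r = 0 then (\<Sum>i\<in>{j - b..a}. A i n * c (j - i)) else 0)"
      by simp
  qed
  also have "\<dots> = (\<Sum>i\<in>{j - b..a}. A i n * c (j - i))"
  proof (cases "a + b - j \<ge> 0")
    case True
    then have "0 \<in> {0..nat (a + b - j)}" by auto
    then show ?thesis by (simp add: sum.delta)
  next
    case False
    then have "{j - b..a} = {}" by auto
    then show ?thesis by simp
  qed
  finally show ?thesis .
qed

lemma mult_mono_right:
  assumes A: "bnd A a"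
  shows "pdo_mult A (mono m) j n = A (j - m) n"
proof -
  have "pdo_mult A (mono m) j n = (\<Sum>i\<in>{j - m..a}. A i n * (if j - i = m then 1 else 0))"
    by (rule mult_const_right[OF A bnd_mono_op]) (simp add: mono_def)
  also have "\<dots> = (\<Sum>i\<in>{j - m..a}. if i = j - m then A i n else 0)"
    by (rule sum.cong) auto
  also have "\<dots> = (if j - m \<le> a then A (j - m) n else 0)"
    by (simp add: sum.delta)
  also have "\<dots> = A (j - m) n" using A by (auto simp: bndD)
  finally show ?thesis .
qed

lemma mult_one_right: "bnd A a \<Longrightarrow> pdo_mult A (mono 0) = A"
  by (intro ext) (simp add: mult_mono_right)

lemma mono_mult_mono: "pdo_mult (mono i) (mono m) = (mono (i + m) :: 'a::comm_ring_1 pdo)"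
  by (intro ext) (simp add: mult_mono_right[OF bnd_mono_op] mono_def)


definition eco :: "int \<Rightarrow> int \<Rightarrow> int" where
  "eco k p = (if p \<le> k then (-1) ^ nat (k - p) * ibinom k (nat (k - p)) else 0)"

lemma eco_diag[simp]: "eco k k = 1"
  by (simp add: eco_def)

lemma eco_above: "p > k \<Longrightarrow> eco k p = 0"
  by (simp add: eco_def)

lemma eco_pascal: "eco (k+1) p = eco k (p - 1) - eco k p"
proof (cases "p \<le> k")
  case True
  define r where "r = nat (k - p)"
  have r1: "nat (k + 1 - p) = Suc r" "nat (k - (p - 1)) = Suc r" using True by (auto simp: r_def)
  have "eco (k+1) p = (-1) ^ Suc r * ibinom (k+1) (Suc r)" using True by (simp add: eco_def r1)
  moreover have "eco k (p - 1) = (-1) ^ Suc r * ibinom k (Suc r)" using True by (simp add: eco_def r1)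
  moreover have "eco k p = (-1) ^ r * ibinom k r" using True by (simp add: eco_def r_def)
  ultimately show ?thesis by (simp add: ibinom_pascal ibinom_pascal' algebra_simps)
next
  case False
  then show ?thesis by (cases "p = k + 1") (auto simp: eco_def)
qed

lemma eco_pascal': "eco (1+k) p = eco k (p - 1) - eco k p"
  using eco_pascal[of k p] by (simp only: add.commute[of k 1])

lemma eco_0: "eco 0 p = (if p = 0 then 1 else 0)"
  by (auto simp: eco_def ibinom_def)

lemma eco_1: "eco 1 p = (if p = 1 then 1 else if p = 0 then -1 else 0)"
proof -
  have "p < 0 \<Longrightarrow> (Suc 0 choose nat (1 - p)) = 0" by (simp add: binomial_eq_0)
  then show ?thesis by (auto simp: eco_def ibinom_def)
qed

lemma eco_m1: "eco (-1) p = (if p \<le> -1 then 1 else 0)"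
proof -
  have "p \<le> -1 \<Longrightarrow> (-1::int) ^ nat (- 1 - p) * (- 1) ^ nat (- 1 - p) = 1"
    by (simp flip: power_mult_distrib)
  moreover have "p \<le> -1 \<Longrightarrow> Suc (nat (- 1 - p)) - 1 = nat (-1 - p)" by simp
  ultimately show ?thesis by (auto simp: eco_def ibinom_def)
qed

lemma sum_shift_int: "(\<Sum>q\<in>{lo..hi::int}. f q) = (\<Sum>q\<in>{lo - d..hi - d}. f (q + d))"
  by (rule sum.reindex_bij_witness[of _ "\<lambda>q. q + d" "\<lambda>q. q - d"]) auto

definition G :: "'a::comm_ring_1 pdo \<Rightarrow> int \<Rightarrow> int \<Rightarrow> 'a" where
  "G A n p = (\<Sum>k\<in>{p..pdo_deg A}. A k n * of_int (eco k p))"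

lemma G_eq_aux:
  assumes "bnd A d" "d \<le> d'"
  shows "(\<Sum>k\<in>{p..d'}. A k n * of_int (eco k p)) = (\<Sum>k\<in>{p..d}. A k n * of_int (eco k p))"
  by (rule sum.mono_neutral_right) (use assms in \<open>auto simp: bndD\<close>)

lemma G_eq: assumes "bnd A d" shows "G A n p = (\<Sum>k\<in>{p..d}. A k n * of_int (eco k p))"
proof -
  have D: "bnd A (pdo_deg A)" using bnd_deg[OF assms] .
  have "G A n p = (\<Sum>k\<in>{p..max d (pdo_deg A)}. A k n * of_int (eco k p))"
    unfolding G_def by (rule G_eq_aux[OF D, symmetric]) simp
  also have "\<dots> = (\<Sum>k\<in>{p..d}. A k n * of_int (eco k p))"
    by (rule G_eq_aux[OF assms]) simp
  finally show ?thesis .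
qed

definition gbnd :: "(int \<Rightarrow> int \<Rightarrow> 'a::zero) \<Rightarrow> int \<Rightarrow> bool" where
  "gbnd X d \<longleftrightarrow> (\<forall>p>d. \<forall>n. X n p = 0)"

lemma gbndD: "gbnd X d \<Longrightarrow> p > d \<Longrightarrow> X n p = 0"
  by (simp add: gbnd_def)

lemma gbnd_mono: "gbnd X d \<Longrightarrow> d \<le> d' \<Longrightarrow> gbnd X d'"
  by (simp add: gbnd_def)

lemma gbnd_G: "bnd A d \<Longrightarrow> gbnd (G A) d"
  by (simp add: gbnd_def G_eq)

definition gm :: "int \<Rightarrow> int \<Rightarrow> (int \<Rightarrow> int \<Rightarrow> 'a::comm_ring_1) \<Rightarrow> (int \<Rightarrow> int \<Rightarrow> 'a) \<Rightarrow> int \<Rightarrow> int \<Rightarrow> 'a" where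
  "gm a b X Y n p = (\<Sum>q\<in>{p - b..a}. X n q * Y (n + q) (p - q))"

lemma gm_mono:
  assumes "gbnd X a" "gbnd Y b" "a \<le> a'" "b \<le> b'"
  shows "gm a' b' X Y n p = gm a b X Y n p"
  unfolding gm_def
proof (rule sum_zero_ext)
  fix q assume q: "q \<in> {p - b'..a'} - {p - b..a}"
  show "X n q * Y (n + q) (p - q) = 0"
  proof (cases "q > a")
    case True then show ?thesis using assms(1) by (simp add: gbndD)
  next
    case False then have "p - q > b" using q by auto
    then show ?thesis using assms(2) by (simp add: gbndD)
  qed
next
  fix q assume q: "q \<in> {p - b..a} - {p - b'..a'}"
  then show "X n q * Y (n + q) (p - q) = 0" using assms(3,4) by auto
qed auto

lemma gbnd_gm: "gbnd (gm a b X Y) (a + b)"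
  by (auto simp: gbnd_def gm_def)

lemma gm_diff_right: "gm a b X (\<lambda>n p. Y1 n p - Y2 n p) n p = gm a b X Y1 n p - gm a b X Y2 n p"
  by (simp add: gm_def algebra_simps sum_subtractf)

lemma gm_assoc:
  assumes X: "gbnd X a" and Y: "gbnd Y b" and Z: "gbnd Z c"
  shows "gm (a + b) c (gm a b X Y) Z n p = gm a (b + c) X (gm b c Y Z) n p"
proof -
  define F where "F q1 q2 = X n q1 * Y (n + q1) q2 * Z (n + q1 + q2) (p - q1 - q2)" for q1 q2
  define Bx where "Bx = (\<Sum>q1\<in>{p - b - c..a}. \<Sum>q2\<in>{p - a - c..b}. F q1 q2)"
  have "gm (a + b) c (gm a b X Y) Z n p
      = (\<Sum>q\<in>{p - c..a + b}. \<Sum>q1\<in>{q - b..a}. X n q1 * Y (n + q1) (q - q1) * Z (n + q) (p - q))"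
    unfolding gm_def sum_distrib_right by (simp add: mult.assoc)
  also have "\<dots> = (\<Sum>q\<in>{p - c..a + b}. \<Sum>q1\<in>{p - b - c..a}. X n q1 * Y (n + q1) (q - q1) * Z (n + q) (p - q))"
  proof (rule sum.cong[OF refl], rule sum_zero_ext)
    fix q q1 assume "q \<in> {p - c..a + b}" "q1 \<in> {p - b - c..a} - {q - b..a}"
    then have "q - q1 > b" by auto
    then show "X n q1 * Y (n + q1) (q - q1) * Z (n + q) (p - q) = 0" using Y by (simp add: gbndD)
  qed auto
  also have "\<dots> = (\<Sum>q1\<in>{p - b - c..a}. \<Sum>q\<in>{p - c..a + b}. X n q1 * Y (n + q1) (q - q1) * Z (n + q) (p - q))"
    by (rule sum.swap)
  also have "\<dots> = (\<Sum>q1\<in>{p - b - c..a}. \<Sum>q2\<in>{p - c - q1..a + b - q1}. F q1 q2)"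
  proof (rule sum.cong[OF refl])
    fix q1
    show "(\<Sum>q\<in>{p - c..a + b}. X n q1 * Y (n + q1) (q - q1) * Z (n + q) (p - q)) = (\<Sum>q2\<in>{p - c - q1..a + b - q1}. F q1 q2)"
      by (subst sum_shift_int[where d = q1]) (simp add: F_def algebra_simps)
  qed
  also have "\<dots> = Bx"
    unfolding Bx_def
  proof (rule sum.cong[OF refl], rule sum_zero_ext)
    fix q1 q2 assume h: "q1 \<in> {p - b - c..a}" "q2 \<in> {p - c - q1..a + b - q1} - {p - a - c..b}"
    then have "q2 > b" by auto
    then show "F q1 q2 = 0" using Y by (simp add: F_def gbndD)
  next
    fix q1 q2 assume h: "q1 \<in> {p - b - c..a}" "q2 \<in> {p - a - c..b} - {p - c - q1..a + b - q1}"
    then have "p - q1 - q2 > c" by auto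
    then show "F q1 q2 = 0" using Z by (simp add: F_def gbndD)
  qed auto
  finally have L: "gm (a + b) c (gm a b X Y) Z n p = Bx" .
  have "gm a (b + c) X (gm b c Y Z) n p = (\<Sum>q1\<in>{p - (b + c)..a}. \<Sum>q2\<in>{p - q1 - c..b}. F q1 q2)"
    by (simp add: gm_def sum_distrib_left F_def algebra_simps)
  also have "\<dots> = Bx"
    unfolding Bx_def
  proof (rule sum.cong, simp, rule sum_zero_ext)
    fix q1 q2 assume h: "q1 \<in> {p - b - c..a}" "q2 \<in> {p - q1 - c..b} - {p - a - c..b}"
    then show "F q1 q2 = 0" by auto
  next
    fix q1 q2 assume h: "q1 \<in> {p - b - c..a}" "q2 \<in> {p - a - c..b} - {p - q1 - c..b}"
    then have "p - q1 - q2 > c" by auto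
    then show "F q1 q2 = 0" using Z by (simp add: F_def gbndD)
  qed auto
  finally show ?thesis using L by simp
qed

lemma G_mono: "G (mono i :: 'a::comm_ring_1 pdo) n p = of_int (eco i p)"
proof -
  have "G (mono i :: 'a pdo) n p = (\<Sum>k\<in>{p..i}. (if k = i then 1 else 0) * of_int (eco k p))"
    by (simp add: G_eq[OF bnd_mono_op] mono_def)
  also have "\<dots> = (\<Sum>k\<in>{p..i}. if k = i then of_int (eco k p) else 0)"
    by (rule sum.cong) auto
  also have "\<dots> = (if p \<le> i then of_int (eco i p) else 0)"
    by (simp add: sum.delta)
  also have "\<dots> = of_int (eco i p)" by (simp add: eco_above)
  finally show ?thesis .
qed

lemma gm_Delta:
  assumes Y: "gbnd Y d"
  shows "gm 1 d (G (mono 1 :: 'a::comm_ring_1 pdo)) Y n p = Y (n + 1) (p - 1) - Y n p"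
proof -
  have "gm 1 d (G (mono 1 :: 'a pdo)) Y n p = gm 1 (max d p) (G (mono 1 :: 'a pdo)) Y n p"
    by (rule gm_mono[OF gbnd_G[OF bnd_mono_op] Y, symmetric]) auto
  also have "\<dots> = (\<Sum>q\<in>{p - max d p..1}. (if q = 1 then Y (n + 1) (p - 1) else 0) - (if q = 0 then Y n p else 0))"
    unfolding gm_def by (rule sum.cong) (auto simp: G_mono eco_1)
  also have "\<dots> = Y (n + 1) (p - 1) - Y n p"
    by (simp add: sum_subtractf sum.delta)
  finally show ?thesis .
qed

lemma G_Delta_left:
  assumes X: "bnd X d"
  shows "G (pdo_mult (mono 1) X) n p = G X (n + 1) (p - 1) - G X n p"
proof -
  have X1: "bnd (pdo_mult (mono 1) X) (1 + d)" by (rule bnd_T[OF X])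
  have "G (pdo_mult (mono 1) X) n p = (\<Sum>k\<in>{p..1 + d}. (X (k - 1) (n + 1) + X k (n + 1) - X k n) * of_int (eco k p))"
    by (simp add: G_eq[OF X1] mult_Delta_left[OF X])
  also have "\<dots> = (\<Sum>k\<in>{p..1 + d}. X (k - 1) (n + 1) * of_int (eco k p)) + (\<Sum>k\<in>{p..1 + d}. X k (n + 1) * of_int (eco k p))
      - (\<Sum>k\<in>{p..1 + d}. X k n * of_int (eco k p))"
    by (simp add: algebra_simps sum.distrib sum_subtractf)
  also have "(\<Sum>k\<in>{p..1 + d}. X k n * of_int (eco k p)) = G X n p"
    by (rule G_eq[OF bnd_mono[OF X], symmetric]) simp
  also have "(\<Sum>k\<in>{p..1 + d}. X (k - 1) (n + 1) * of_int (eco k p)) = (\<Sum>k\<in>{p - 1..d}. X k (n + 1) * of_int (eco (k + 1) p))"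
    by (subst sum_shift_int[where d = 1]) simp
  also have "(\<Sum>k\<in>{p..1 + d}. X k (n + 1) * of_int (eco k p)) = (\<Sum>k\<in>{p - 1..d}. X k (n + 1) * of_int (eco k p))"
  proof (rule sum_zero_ext)
    fix k assume "k \<in> {p..1 + d} - {p - 1..d}"
    then have "k > d" by auto
    then show "X k (n + 1) * of_int (eco k p) = 0" using X by (simp add: bndD)
  next
    fix k assume "k \<in> {p - 1..d} - {p..1 + d}"
    then have "k < p" by auto
    then show "X k (n + 1) * of_int (eco k p) = 0" by (simp add: eco_above)
  qed auto
  also have "(\<Sum>k\<in>{p - 1..d}. X k (n + 1) * of_int (eco (k + 1) p)) + (\<Sum>k\<in>{p - 1..d}. X k (n + 1) * of_int (eco k p))
      = (\<Sum>k\<in>{p - 1..d}. X k (n + 1) * of_int (eco k (p - 1)))"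
    by (simp add: sum.distrib[symmetric] eco_pascal algebra_simps)
  also have "\<dots> = G X (n + 1) (p - 1)"
    by (rule G_eq[OF X, symmetric])
  finally show ?thesis .
qed

lemma G_diff:
  assumes "bnd A a" "bnd B a"
  shows "G (\<lambda>k n. A k n - B k n) n p = G A n p - G B n p"
proof -
  have "bnd (\<lambda>k n. A k n - B k n) a" using assms by (simp add: bnd_def)
  then show ?thesis by (simp add: G_eq[OF assms(1)] G_eq[OF assms(2)] G_eq algebra_simps sum_subtractf)
qed

lemma G_T:
  assumes B: "bnd B b"
  shows "G (pdo_mult (mono i) B) n p = gm i b (G (mono i :: 'a::comm_ring_1 pdo)) (G B) n p"
proof -
  define D where "D i n p = G (pdo_mult (mono i) B) n p - gm i b (G (mono i :: 'a pdo)) (G B) n p" for i n p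
  have Dbnd: "gbnd (D i) (i + b)" for i
  proof -
    have 1: "gbnd (G (pdo_mult (mono i) B)) (i + b)" by (rule gbnd_G[OF bnd_T[OF B]])
    have 2: "gbnd (gm i b (G (mono i :: 'a pdo)) (G B)) (i + b)" by (rule gbnd_gm)
    show ?thesis using 1 2 unfolding gbnd_def D_def by simp
  qed
  have D0: "D 0 n p = 0" for n p
  proof -
    have "gm 0 b (G (mono 0 :: 'a pdo)) (G B) n p = G B n p"
    proof -
      have "gm 0 b (G (mono 0 :: 'a pdo)) (G B) n p = (\<Sum>q\<in>{p - b..0}. if q = 0 then G B n p else 0)"
        unfolding gm_def G_mono by (rule sum.cong) (auto simp: eco_0)
      also have "\<dots> = G B n p"
        by (cases "p - b \<le> 0") (auto simp: sum.delta gbndD[OF gbnd_G[OF B]])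
      finally show ?thesis .
    qed
    then show ?thesis by (simp add: D_def mult_one_left[OF B])
  qed
  have GS: "G (mono (1 + i) :: 'a pdo) = gm 1 i (G (mono 1 :: 'a pdo)) (G (mono i))" for i
    by (intro ext) (simp add: gm_Delta[OF gbnd_G[OF bnd_mono_op]] G_mono eco_pascal')
  have DS: "D (i + 1) n p = D i (n + 1) (p - 1) - D i n p" for i n p
  proof -
    have "G (pdo_mult (mono (i + 1)) B) n p = G (pdo_mult (mono i) B) (n + 1) (p - 1) - G (pdo_mult (mono i) B) n p"
      by (simp add: T_Suc[OF B, symmetric] G_Delta_left[OF bnd_T[OF B]])
    moreover have "gm (i + 1) b (G (mono (i + 1) :: 'a pdo)) (G B) n p
        = gm i b (G (mono i :: 'a pdo)) (G B) (n + 1) (p - 1) - gm i b (G (mono i :: 'a pdo)) (G B) n p"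
    proof -
      have "gm (i + 1) b (G (mono (i + 1) :: 'a pdo)) (G B) n p = gm (1 + i) b (gm 1 i (G (mono 1 :: 'a pdo)) (G (mono i))) (G B) n p"
        by (simp only: add.commute[of i 1] GS)
      also have "\<dots> = gm 1 (i + b) (G (mono 1 :: 'a pdo)) (gm i b (G (mono i)) (G B)) n p"
        by (rule gm_assoc[OF gbnd_G[OF bnd_mono_op] gbnd_G[OF bnd_mono_op] gbnd_G[OF B]])
      also have "\<dots> = gm i b (G (mono i :: 'a pdo)) (G B) (n + 1) (p - 1) - gm i b (G (mono i :: 'a pdo)) (G B) n p"
        by (rule gm_Delta[OF gbnd_gm])
      finally show ?thesis .
    qed
    ultimately show ?thesis by (simp add: D_def)
  qed
  have down: "D i n p = 0" if h: "\<And>n p. D (i + 1) n p = 0" for i n p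
  proof -
    have step: "D i (n' - 1) (p' + 1) = D i n' p'" for n' p'
      using h[of "n' - 1" "p' + 1"] DS[of i "n' - 1" "p' + 1"] by simp
    have "D i n p = D i (n - int m) (p + int m)" for m
    proof (induction m)
      case (Suc m)
      have "D i (n - int (Suc m)) (p + int (Suc m)) = D i ((n - int m) - 1) ((p + int m) + 1)"
        by (simp add: algebra_simps)
      also have "\<dots> = D i (n - int m) (p + int m)" by (rule step)
      finally show ?case using Suc by simp
    qed simp
    then have "D i n p = D i (n - int (nat (i + b - p + 1))) (p + int (nat (i + b - p + 1)))" .
    also have "\<dots> = 0" using Dbnd[of i] by (rule gbndD) auto
    finally show ?thesis .
  qed
  have "D (int m) n p = 0 \<and> D (- int m) n p = 0" for m n p
  proof (induction m arbitrary: n p)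
    case 0 then show ?case by (simp add: D0)
  next
    case (Suc m)
    have 1: "D (int m + 1) n p = 0" using DS[of "int m"] Suc by simp
    have 2: "D (- int (Suc m)) n p = 0"
      by (rule down) (use Suc in simp)
    show ?case using 1 2 by (simp add: add.commute)
  qed
  then have "D i n p = 0"
  proof (cases i rule: int_cases)
    case (neg m)
    then show ?thesis using \<open>\<And>m n p. D (int m) n p = 0 \<and> D (- int m) n p = 0\<close>[of "Suc m"] by simp
  qed auto
  then show ?thesis by (simp add: D_def)
qed

lemma mult_regroup:
  assumes A: "bnd A a" and B: "bnd B b"
  shows "pdo_mult A B j n = (\<Sum>i\<in>{j - b..a}. A i n * pdo_mult (mono i) B j n)"
proof -
  define N where "N = nat (a + b - j)"
  have "(\<Sum>i\<in>{j - b..a}. A i n * pdo_mult (mono i) B j n) = (\<Sum>i\<in>{j - b..a}. \<Sum>r\<in>{0..N}. mterm A B j n r i)"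
  proof (rule sum.cong[OF refl])
    fix i assume "i \<in> {j - b..a}"
    then have "int N \<ge> i + b - j" by (auto simp: N_def)
    then show "A i n * pdo_mult (mono i) B j n = (\<Sum>r\<in>{0..N}. mterm A B j n r i)"
      by (simp add: mult_mono_left[OF B] sum_distrib_left mterm_def atLeast0AtMost mult.assoc)
  qed
  also have "\<dots> = (\<Sum>r\<in>{0..N}. \<Sum>i\<in>{j - b..a}. mterm A B j n r i)"
    by (rule sum.swap)
  also have "\<dots> = msum A B a b j n"
    unfolding msum_def N_def
  proof (rule sum.cong[OF refl], rule sum_zero_ext)
    fix r i assume "i \<in> {j - b..a} - {j + int r - b..a}"
    then show "mterm A B j n r i = 0" by (intro mterm_zero[OF A B]) auto
  next
    fix r i assume "r \<in> {0..nat (a + b - j)}" "i \<in> {j + int r - b..a} - {j - b..a}"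
    then show "mterm A B j n r i = 0" by auto
  qed auto
  finally show ?thesis by (simp add: pdo_mult_eq[OF A B])
qed

theorem G_mult:
  assumes A: "bnd A a" and B: "bnd B b"
  shows "G (pdo_mult A B) n p = gm a b (G A) (G B) n p"
proof -
  have T: "bnd (pdo_mult (mono i) B) (i + b)" for i by (rule bnd_T[OF B])
  have "G (pdo_mult A B) n p = (\<Sum>k\<in>{p..a + b}. (\<Sum>i\<in>{k - b..a}. A i n * pdo_mult (mono i) B k n) * of_int (eco k p))"
    by (simp add: G_eq[OF bnd_mult[OF A B]] mult_regroup[OF A B])
  also have "\<dots> = (\<Sum>k\<in>{p..a + b}. \<Sum>i\<in>{p - b..a}. A i n * pdo_mult (mono i) B k n * of_int (eco k p))"
  proof (rule sum.cong[OF refl])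
    fix k assume k: "k \<in> {p..a + b}"
    have "(\<Sum>i\<in>{k - b..a}. A i n * pdo_mult (mono i) B k n) = (\<Sum>i\<in>{p - b..a}. A i n * pdo_mult (mono i) B k n)"
    proof (rule sum_zero_ext)
      fix i assume "i \<in> {p - b..a} - {k - b..a}"
      then have "k > i + b" by auto
      then show "A i n * pdo_mult (mono i) B k n = 0" using T[of i] by (simp add: bndD)
    qed (use k in auto)
    then show "(\<Sum>i\<in>{k - b..a}. A i n * pdo_mult (mono i) B k n) * of_int (eco k p) = (\<Sum>i\<in>{p - b..a}. A i n * pdo_mult (mono i) B k n * of_int (eco k p))"
      by (simp add: sum_distrib_right)
  qed
  also have "\<dots> = (\<Sum>i\<in>{p - b..a}. \<Sum>k\<in>{p..a + b}. A i n * pdo_mult (mono i) B k n * of_int (eco k p))"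
    by (rule sum.swap)
  also have "\<dots> = (\<Sum>i\<in>{p - b..a}. A i n * G (pdo_mult (mono i) B) n p)"
  proof (rule sum.cong[OF refl])
    fix i assume "i \<in> {p - b..a}"
    then have "bnd (pdo_mult (mono i) B) (a + b)" by (intro bnd_mono[OF T]) auto
    then show "(\<Sum>k\<in>{p..a + b}. A i n * pdo_mult (mono i) B k n * of_int (eco k p)) = A i n * G (pdo_mult (mono i) B) n p"
      by (simp add: G_eq sum_distrib_left mult.assoc)
  qed
  also have "\<dots> = (\<Sum>i\<in>{p - b..a}. \<Sum>q\<in>{p - b..a}. A i n * of_int (eco i q) * G B (n + q) (p - q))"
  proof (rule sum.cong[OF refl])
    fix i assume i: "i \<in> {p - b..a}"
    have "G (pdo_mult (mono i) B) n p = (\<Sum>q\<in>{p - b..i}. of_int (eco i q) * G B (n + q) (p - q))"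
      by (simp add: G_T[OF B] gm_def G_mono)
    also have "\<dots> = (\<Sum>q\<in>{p - b..a}. of_int (eco i q) * G B (n + q) (p - q))"
      by (rule sum_zero_ext) (use i in \<open>auto simp: eco_above\<close>)
    finally show "A i n * G (pdo_mult (mono i) B) n p = (\<Sum>q\<in>{p - b..a}. A i n * of_int (eco i q) * G B (n + q) (p - q))"
      by (simp add: sum_distrib_left mult.assoc)
  qed
  also have "\<dots> = (\<Sum>q\<in>{p - b..a}. \<Sum>i\<in>{p - b..a}. A i n * of_int (eco i q) * G B (n + q) (p - q))"
    by (rule sum.swap)
  also have "\<dots> = (\<Sum>q\<in>{p - b..a}. G A n q * G B (n + q) (p - q))"
  proof (rule sum.cong[OF refl])
    fix q assume q: "q \<in> {p - b..a}"
    have "G A n q = (\<Sum>i\<in>{p - b..a}. A i n * of_int (eco i q))"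
      unfolding G_eq[OF A] by (rule sum_zero_ext) (use q in \<open>auto simp: eco_above\<close>)
    then show "(\<Sum>i\<in>{p - b..a}. A i n * of_int (eco i q) * G B (n + q) (p - q)) = G A n q * G B (n + q) (p - q)"
      by (simp add: sum_distrib_right)
  qed
  also have "\<dots> = gm a b (G A) (G B) n p" by (simp add: gm_def)
  finally show ?thesis .
qed

lemma G_inj:
  assumes A: "bnd A d" and Z: "\<And>n p. G A n p = 0"
  shows "A k n = 0"
proof (cases "k > d")
  case True then show ?thesis using A by (simp add: bndD)
next
  case False
  have "\<forall>k. nat (d - k) = m \<longrightarrow> (\<forall>n. A k n = 0)" for m
  proof (induction m rule: less_induct)
    case (less m)
    show ?case
    proof (intro allI impI)
      fix k n assume m: "nat (d - k) = m"
      show "A k n = 0"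
      proof (cases "k > d")
        case True then show ?thesis using A by (simp add: bndD)
      next
        case False
        have rest: "A k' n = 0" if "k' \<in> {k + 1..d}" for k'
          using less[of "nat (d - k')"] that m by auto
        have "G A n k = (\<Sum>k'\<in>{k..d}. A k' n * of_int (eco k' k))" by (rule G_eq[OF A])
        also have "{k..d} = insert k {k + 1..d}" using False by auto
        finally have "G A n k = A k n + (\<Sum>k'\<in>{k + 1..d}. A k' n * of_int (eco k' k))" by simp
        also have "(\<Sum>k'\<in>{k + 1..d}. A k' n * of_int (eco k' k)) = 0" using rest by simp
        finally show ?thesis using Z by simp
      qed
    qed
  qed
  then show ?thesis by blast
qed

lemma pdo_eqI_G:
  assumes A: "bnd A a" and B: "bnd B b" and E: "\<And>n p. G A n p = G B n p"
  shows "A = B"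
proof (intro ext)
  fix k n
  define c where "c = max a b"
  have A': "bnd A c" and B': "bnd B c" using A B by (auto intro: bnd_mono simp: c_def)
  have D: "bnd (\<lambda>k n. A k n - B k n) c" using A' B' by (simp add: bnd_def)
  have "A k n - B k n = 0"
    using G_inj[OF D, of k n] G_diff[OF A' B'] E by simp
  then show "A k n = B k n" by simp
qed

theorem mult_assoc:
  assumes A: "bnd A a" and B: "bnd B b" and C: "bnd C c"
  shows "pdo_mult (pdo_mult A B) C = pdo_mult A (pdo_mult B C)"
proof (rule pdo_eqI_G[OF bnd_mult[OF bnd_mult[OF A B] C] bnd_mult[OF A bnd_mult[OF B C]]])
  fix n p
  have "G (pdo_mult (pdo_mult A B) C) n p = gm (a + b) c (G (pdo_mult A B)) (G C) n p"
    by (rule G_mult[OF bnd_mult[OF A B] C])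
  also have "G (pdo_mult A B) = gm a b (G A) (G B)"
    by (intro ext) (rule G_mult[OF A B])
  also have "gm (a + b) c (gm a b (G A) (G B)) (G C) n p = gm a (b + c) (G A) (gm b c (G B) (G C)) n p"
    by (rule gm_assoc[OF gbnd_G[OF A] gbnd_G[OF B] gbnd_G[OF C]])
  also have "gm b c (G B) (G C) = G (pdo_mult B C)"
    by (intro ext) (rule G_mult[OF B C, symmetric])
  also have "gm a (b + c) (G A) (G (pdo_mult B C)) n p = G (pdo_mult A (pdo_mult B C)) n p"
    by (rule G_mult[OF A bnd_mult[OF B C], symmetric])
  finally show "G (pdo_mult (pdo_mult A B) C) n p = G (pdo_mult A (pdo_mult B C)) n p" .
qed

lemma mult_add_left:
  assumes A: "bnd A a" and A': "bnd A' a" and B: "bnd B b"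
  shows "pdo_mult (\<lambda>k n. A k n + A' k n) B j n = pdo_mult A B j n + pdo_mult A' B j n"
proof -
  have S: "bnd (\<lambda>k n. A k n + A' k n) a" using A A' by (simp add: bnd_def)
  show ?thesis
    by (simp add: pdo_mult_eq[OF S B] pdo_mult_eq[OF A B] pdo_mult_eq[OF A' B] msum_def mterm_def
        sum.distrib[symmetric] algebra_simps)
qed

lemma mult_sum_left:
  assumes A: "\<And>x. x \<in> S \<Longrightarrow> bnd (A x) a" and B: "bnd B b" and S: "finite S"
  shows "pdo_mult (\<lambda>k n. \<Sum>x\<in>S. A x k n) B j n = (\<Sum>x\<in>S. pdo_mult (A x) B j n)"
proof -
  have SB: "bnd (\<lambda>k n. \<Sum>x\<in>S. A x k n) a" using A by (auto simp: bnd_def)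
  have "pdo_mult (\<lambda>k n. \<Sum>x\<in>S. A x k n) B j n = (\<Sum>x\<in>S. msum (A x) B a b j n)"
    by (simp add: pdo_mult_eq[OF SB B] msum_def mterm_def sum_distrib_right sum.swap[of _ S])
  also have "\<dots> = (\<Sum>x\<in>S. pdo_mult (A x) B j n)"
    by (rule sum.cong[OF refl]) (simp add: pdo_mult_eq[OF A B])
  finally show ?thesis .
qed


lemma onepl_nth: "fls_nth (onepl m) c = (if c + m \<ge> 0 then of_int (ibinom m (nat (c + m))) else 0)"
  by (simp add: onepl_def)

lemma onepl_0: "onepl 0 = 1"
proof (rule fls_eqI)
  fix c show "fls_nth (onepl 0) c = fls_nth 1 c"
    by (cases "c = 0") (auto simp: onepl_nth ibinom_def)
qed

lemma X_inv_times_nth: "fls_nth (fls_X_inv * (f :: 'a::comm_ring_1 fls)) c = fls_nth f (c + 1)"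
  by (simp add: fls_X_inv_times_conv_shift)

lemma times_X_inv_nth: "fls_nth ((f :: 'a::comm_ring_1 fls) * fls_X_inv) c = fls_nth f (c + 1)"
  by (simp add: fls_X_inv_times_conv_shift)

lemma onepl_Suc: "onepl (n + 1) = (1 + fls_X_inv) * onepl n"
proof (rule fls_eqI)
  fix c
  have R: "fls_nth ((1 + fls_X_inv) * onepl n) c = fls_nth (onepl n) c + fls_nth (onepl n) (c + 1)"
    by (simp add: distrib_right X_inv_times_nth)
  show "fls_nth (onepl (n + 1)) c = fls_nth ((1 + fls_X_inv) * onepl n) c"
  proof (cases "c + n \<ge> 0")
    case True
    define r where "r = nat (c + n)"
    have r: "nat (c + (n + 1)) = Suc r" "nat (c + 1 + n) = Suc r" using True by (auto simp: r_def)
    show ?thesis unfolding R onepl_nth using True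
      by (simp add: r r_def[symmetric] ibinom_pascal)
  next
    case False
    show ?thesis
    proof (cases "c + n = -1")
      case True
      then have "c + (n + 1) = 0" "c + 1 + n = 0" by auto
      then show ?thesis unfolding R onepl_nth using True by (simp add: ibinom_def)
    next
      case False2: False
      then show ?thesis unfolding R onepl_nth using False by auto
    qed
  qed
qed

lemma one_plus_X_inv_nz: "(1 + fls_X_inv :: real fls) \<noteq> 0"
proof
  assume "(1 + fls_X_inv :: real fls) = 0"
  then have "fls_nth (1 + fls_X_inv :: real fls) 0 = 0" by simp
  then show False by simp
qed

lemma onepl_add: "onepl (a + b) = onepl a * (onepl b :: real fls)"
proof (induction b rule: int_induct[where k = 0])
  case base then show ?case by (simp add: onepl_0)
next
  case (step1 i)
  have "onepl (a + (i + 1)) = (1 + fls_X_inv) * onepl (a + i)"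
    using onepl_Suc[of "a + i"] by (simp add: add.assoc)
  also have "\<dots> = onepl a * ((1 + fls_X_inv) * onepl i)" using step1 by (simp add: algebra_simps)
  also have "(1 + fls_X_inv) * onepl i = onepl (i + 1)" by (simp add: onepl_Suc)
  finally show ?case .
next
  case (step2 i)
  have "(1 + fls_X_inv) * onepl (a + (i - 1)) = onepl (a + i)"
    using onepl_Suc[of "a + (i - 1)"] by simp
  also have "\<dots> = onepl a * onepl i" by (rule step2)
  also have "onepl i = (1 + fls_X_inv) * onepl (i - 1)"
    using onepl_Suc[of "i - 1"] by simp
  finally have "(1 + fls_X_inv) * onepl (a + (i - 1)) = (1 + fls_X_inv) * (onepl a * onepl (i - 1))"
    by (simp add: algebra_simps)
  then show ?case using one_plus_X_inv_nz by simp
qed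

lemma onepl_order: "c < - m \<Longrightarrow> fls_nth (onepl m) c = 0"
  by (simp add: onepl_nth)

lemma onepl_lead: "fls_nth (onepl m) (- m) = 1"
  by (simp add: onepl_nth)

lemma ibinom_neg_symm:
  assumes "k = int r - m - 1"
  shows "ibinom m r = (-1) ^ r * ibinom k r"
proof (cases "m \<ge> 0")
  case True
  show ?thesis
  proof (cases "int r \<le> m")
    case True2: True
    then have "k < 0" using assms by simp
    have "nat (- k) + r - 1 = nat m" using assms True2 by auto
    then show ?thesis using True \<open>k < 0\<close> by (simp add: ibinom_def flip: power_mult_distrib)
  next
    case False
    then have "k \<ge> 0" using assms True by simp
    have "nat m < r" "nat k < r" using False assms True by auto
    then show ?thesis using True \<open>k \<ge> 0\<close> by (simp add: ibinom_def binomial_eq_0)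
  qed
next
  case False
  then have "k \<ge> 0" using assms by simp
  have "nat k = nat (- m) + r - 1" using assms False by auto
  then show ?thesis using False \<open>k \<ge> 0\<close> by (simp add: ibinom_def flip: power_mult_distrib)
qed

lemma onepl_eco: "fls_nth (onepl m) (1 + k) = (of_int (eco k (-1 - m)) :: real)"
proof (cases "1 + k + m \<ge> 0")
  case True
  define r where "r = nat (1 + k + m)"
  have r: "int r = 1 + k + m" using True by (simp add: r_def)
  have "ibinom m r = (-1) ^ r * ibinom k r" by (rule ibinom_neg_symm) (use r in simp)
  moreover have "nat (1 + k + m) = r" "nat (k - (-1 - m)) = r" using r by auto
  ultimately show ?thesis using True by (simp add: onepl_nth eco_def algebra_simps)
next
  case False
  then show ?thesis by (simp add: onepl_nth eco_def algebra_simps)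
qed

lemma fls_mult_nth_bnd:
  fixes f g :: "'a::comm_ring_1 fls"
  assumes f: "\<And>x. x < a \<Longrightarrow> fls_nth f x = 0" and g: "\<And>x. x < b \<Longrightarrow> fls_nth g x = 0"
  shows "fls_nth (f * g) c = (\<Sum>x\<in>{a..c - b}. fls_nth f x * fls_nth g (c - x))"
proof (cases "f = 0 \<or> g = 0")
  case True then show ?thesis by auto
next
  case False
  then have fa: "fls_subdegree f \<ge> a" and gb: "fls_subdegree g \<ge> b"
    using f g by (auto intro: fls_subdegree_geI)
  have "fls_nth (f * g) c = (\<Sum>x\<in>{fls_subdegree f..c - fls_subdegree g}. fls_nth f x * fls_nth g (c - x))"
    by (rule fls_times_nth(2))
  also have "\<dots> = (\<Sum>x\<in>{a..c - b}. fls_nth f x * fls_nth g (c - x))"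
  proof (rule sum_zero_ext)
    fix x assume "x \<in> {a..c - b} - {fls_subdegree f..c - fls_subdegree g}"
    then have "x < fls_subdegree f \<or> c - x < fls_subdegree g" by auto
    then show "fls_nth f x * fls_nth g (c - x) = 0" by (auto simp: fls_eq0_below_subdegree)
  qed (use fa gb in auto)
  finally show ?thesis .
qed

definition symb :: "'a::comm_ring_1 pdo \<Rightarrow> int \<Rightarrow> 'a fls" where
  "symb A n = Abs_fls (\<lambda>c. A (- c) n)"

lemma symb_nth: "bnd A d \<Longrightarrow> fls_nth (symb A n) c = A (- c) n"
  unfolding symb_def
  by (rule nth_Abs_fls_lower_bound[where N = "- d"]) (auto simp: bndD)

definition act :: "real pdo \<Rightarrow> int \<Rightarrow> real fls" where
  "act A n = symb A n * onepl n"

lemma what_act: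
  assumes "\<And>k n. k > 0 \<Longrightarrow> Z t k n = 0"
  shows "what Z t n = act (Z t) n"
proof -
  have B: "bnd (Z t) 0" using assms by (simp add: bnd_def)
  have "fps_to_fls (Abs_fps (\<lambda>j. Z t (- int j) n)) = symb (Z t) n"
  proof (rule fls_eqI)
    fix c show "fls_nth (fps_to_fls (Abs_fps (\<lambda>j. Z t (- int j) n))) c = fls_nth (symb (Z t) n) c"
      using assms[of "- c" n] by (simp add: symb_nth[OF B])
  qed
  then show ?thesis by (simp add: what_def act_def)
qed

lemma act_Delta:
  assumes B: "bnd B b"
  shows "act (pdo_mult (mono 1) B) n = act B (n + 1) - act B n"
proof -
  have "symb (pdo_mult (mono 1) B) n = fls_X_inv * symb B (n + 1) + symb B (n + 1) - symb B n"
  proof (rule fls_eqI)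
    fix c
    show "fls_nth (symb (pdo_mult (mono 1) B) n) c = fls_nth (fls_X_inv * symb B (n + 1) + symb B (n + 1) - symb B n) c"
    proof -
      have e: "- (c + 1) = - c - 1" by simp
      show ?thesis
        by (simp add: symb_nth[OF bnd_T[OF B]] symb_nth[OF B] X_inv_times_nth mult_Delta_left[OF B] e)
    qed
  qed
  then have "act (pdo_mult (mono 1) B) n = (fls_X_inv * symb B (n + 1) + symb B (n + 1) - symb B n) * onepl n"
    by (simp only: act_def)
  also have "\<dots> = symb B (n + 1) * ((1 + fls_X_inv) * onepl n) - symb B n * onepl n"
    by (simp add: algebra_simps)
  also have "\<dots> = act B (n + 1) - act B n"
    by (simp only: act_def onepl_Suc)
  finally show ?thesis .
qed

lemma act_T:
  assumes B: "bnd B b"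
  shows "act (pdo_mult (mono (int i)) B) n = fdiff i (act B) n"
proof (induction i arbitrary: n)
  case 0 then show ?case by (simp add: mult_one_left[OF B])
next
  case (Suc i)
  have "pdo_mult (mono (int (Suc i))) B = pdo_mult (mono 1) (pdo_mult (mono (int i)) B)"
    using T_Suc[OF B, of "int i"] by (simp add: algebra_simps)
  then have "act (pdo_mult (mono (int (Suc i))) B) n = act (pdo_mult (mono (int i)) B) (n + 1) - act (pdo_mult (mono (int i)) B) n"
    by (simp add: act_Delta[OF bnd_T[OF B]])
  then show ?case by (simp add: Suc fdiff_Suc)
qed

lemma mult_regroup_nat:
  assumes A: "bnd A a" and An: "\<And>k n. k < 0 \<Longrightarrow> A k n = 0" and B: "bnd B b" and a: "0 \<le> a"
  shows "pdo_mult A B j n = (\<Sum>i\<in>{0..nat a}. A (int i) n * pdo_mult (mono (int i)) B j n)"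
proof -
  have "pdo_mult A B j n = (\<Sum>i\<in>{j - b..a}. A i n * pdo_mult (mono i) B j n)"
    by (rule mult_regroup[OF A B])
  also have "\<dots> = (\<Sum>i\<in>{0..a}. A i n * pdo_mult (mono i) B j n)"
  proof (rule sum_zero_ext)
    fix i assume "i \<in> {j - b..a} - {0..a}"
    then show "A i n * pdo_mult (mono i) B j n = 0" using An by auto
  next
    fix i assume "i \<in> {0..a} - {j - b..a}"
    then have "j > i + b" by auto
    then show "A i n * pdo_mult (mono i) B j n = 0" using bnd_T[OF B, of i] by (simp add: bndD)
  qed auto
  also have "\<dots> = (\<Sum>i\<in>int ` {0..nat a}. A i n * pdo_mult (mono i) B j n)"
  proof -
    have "int ` {0..nat a} = {0..a}"
    proof
      show "int ` {0..nat a} \<subseteq> {0..a}" using a by auto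
      show "{0..a} \<subseteq> int ` {0..nat a}"
      proof
        fix x assume "x \<in> {0..a}"
        then have "x = int (nat x)" "nat x \<in> {0..nat a}" by auto
        then show "x \<in> int ` {0..nat a}" by blast
      qed
    qed
    then show ?thesis by simp
  qed
  also have "\<dots> = (\<Sum>i\<in>{0..nat a}. A (int i) n * pdo_mult (mono (int i)) B j n)"
    by (subst sum.reindex) (auto simp: inj_on_def)
  finally show ?thesis .
qed

lemma pdo_apply_eq:
  assumes A: "bnd A d"
  shows "pdo_apply A f n = (\<Sum>k\<in>{0..nat d}. A (int k) n * fdiff k f n)"
proof -
  have D: "bnd A (pdo_deg A)" using bnd_deg[OF A] .
  have z: "A (int k) n * fdiff k f n = 0" if "bnd A e" "int k > e" for e k
    using that by (simp add: bndD)
  show ?thesis unfolding pdo_apply_def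
    by (rule sum_zero_ext) (use z[OF D] z[OF A] in auto)
qed

lemma bnd_map: "bnd A d \<Longrightarrow> bnd (pdo_map fls_const A) d"
  by (simp add: bnd_def pdo_map_def)

theorem act_diffop:
  assumes A: "bnd A a" and An: "\<And>k n. k < 0 \<Longrightarrow> A k n = 0" and B: "bnd B b" and a: "0 \<le> a"
  shows "act (pdo_mult A B) n = pdo_apply (pdo_map fls_const A) (act B) n"
proof -
  have AB: "bnd (pdo_mult A B) (a + b)" by (rule bnd_mult[OF A B])
  have "symb (pdo_mult A B) n = (\<Sum>i\<in>{0..nat a}. fls_const (A (int i) n) * symb (pdo_mult (mono (int i)) B) n)"
  proof (rule fls_eqI)
    fix c
    show "fls_nth (symb (pdo_mult A B) n) c = fls_nth (\<Sum>i\<in>{0..nat a}. fls_const (A (int i) n) * symb (pdo_mult (mono (int i)) B) n) c"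
      by (simp add: symb_nth[OF AB] fls_nth_sum symb_nth[OF bnd_T[OF B]] mult_regroup_nat[OF A An B a])
  qed
  then have "act (pdo_mult A B) n = (\<Sum>i\<in>{0..nat a}. fls_const (A (int i) n) * act (pdo_mult (mono (int i)) B) n)"
    by (simp add: act_def sum_distrib_right mult.assoc)
  also have "\<dots> = (\<Sum>i\<in>{0..nat a}. fls_const (A (int i) n) * fdiff i (act B) n)"
    by (simp add: act_T[OF B])
  also have "\<dots> = pdo_apply (pdo_map fls_const A) (act B) n"
    by (simp add: pdo_apply_eq[OF bnd_map[OF A]] pdo_map_def)
  finally show ?thesis .
qed

lemma bdiff_fdiff: "bdiff r g x = fdiff r (\<lambda>y. g (- y)) (- x)"
  unfolding bdiff_def fdiff_def by (rule sum.cong) auto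

lemma bdiff_0[simp]: "bdiff 0 g x = g x"
  by (simp add: bdiff_def)

lemma bdiff_Suc: "bdiff (Suc r) g x = bdiff r g (x - 1) - bdiff r g x"
  by (simp add: bdiff_fdiff fdiff_Suc)

definition Yf :: "int \<Rightarrow> (int \<Rightarrow> real) \<Rightarrow> int \<Rightarrow> real fls" where
  "Yf k g n = Abs_fls (\<lambda>m. if 0 \<le> m \<and> 0 \<le> k + m then of_int (ibinom k (nat (k + m))) * bdiff (nat (k + m)) g (n + m) else 0)"

lemma Yf_nth: "fls_nth (Yf k g n) m = (if 0 \<le> m \<and> 0 \<le> k + m then of_int (ibinom k (nat (k + m))) * bdiff (nat (k + m)) g (n + m) else 0)"
  unfolding Yf_def by (rule nth_Abs_fls_lower_bound[where N = 0]) auto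

definition Vf :: "int \<Rightarrow> (int \<Rightarrow> real) \<Rightarrow> int \<Rightarrow> real fls" where
  "Vf k g n = Yf k g n * onepl (- n)"

definition Uf :: "int \<Rightarrow> (int \<Rightarrow> real) \<Rightarrow> int \<Rightarrow> real fls" where
  "Uf k g n = Abs_fls (\<lambda>c. \<Sum>l\<in>{n - k..c}. g l * of_int (eco k (n - l)) * fls_nth (onepl (- l)) c)"

lemma Uf_nth: "fls_nth (Uf k g n) c = (\<Sum>l\<in>{n - k..c}. g l * of_int (eco k (n - l)) * fls_nth (onepl (- l)) c)"
  unfolding Uf_def by (rule nth_Abs_fls_lower_bound[where N = "n - k"]) auto

lemma Yf_rec:
  assumes k: "k \<le> -1"
  shows "Yf (k + 1) g n = Yf k g (n - 1) * (1 + fls_X_inv) - Yf k g n"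
proof (rule fls_eqI)
  fix m
  have R: "fls_nth (Yf k g (n - 1) * (1 + fls_X_inv) - Yf k g n) m
      = fls_nth (Yf k g (n - 1)) m + fls_nth (Yf k g (n - 1)) (m + 1) - fls_nth (Yf k g n) m"
    by (simp add: distrib_left times_X_inv_nth)
  have M: "fls_nth (Yf (k + 1) g n) m = fls_nth (Yf k g (n - 1)) m + fls_nth (Yf k g (n - 1)) (m + 1) - fls_nth (Yf k g n) m"
  proof (cases "m < 0")
    case True then show ?thesis using k by (auto simp: Yf_nth)
  next
    case False
    show ?thesis
    proof (cases "k + m + 1 < 0")
      case True then show ?thesis using False by (auto simp: Yf_nth)
    next
      case False2: False
      show ?thesis
      proof (cases "k + m + 1 = 0")
        case True
        then have "k + 1 + m = 0" "k + (m + 1) = 0" "n - 1 + (m + 1) = n + m" by auto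
        then show ?thesis using False True by (simp add: Yf_nth)
      next
        case False3: False
        define r where "r = nat (k + m)"
        have r: "nat (k + 1 + m) = Suc r" "nat (k + (m + 1)) = Suc r" "0 \<le> k + m"
          using False2 False3 by (auto simp: r_def)
        have e: "n - 1 + (m + 1) = n + m" "n - 1 + m = n + m - 1" by auto
        show ?thesis using False r
          by (simp add: Yf_nth e r_def[symmetric] bdiff_Suc ibinom_pascal ibinom_pascal' algebra_simps)
      qed
    qed
  qed
  show "fls_nth (Yf (k + 1) g n) m = fls_nth (Yf k g (n - 1) * (1 + fls_X_inv) - Yf k g n) m"
    using M R by simp
qed

lemma Vf_rec:
  assumes k: "k \<le> -1"
  shows "Vf (k + 1) g n = Vf k g (n - 1) - Vf k g n"
proof -
  have e: "onepl (- (n - 1)) = (1 + fls_X_inv) * onepl (- n)"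
    using onepl_Suc[of "- n"] by simp
  have "Vf (k + 1) g n = (Yf k g (n - 1) * (1 + fls_X_inv) - Yf k g n) * onepl (- n)"
    by (simp only: Vf_def Yf_rec[OF k])
  also have "\<dots> = Yf k g (n - 1) * ((1 + fls_X_inv) * onepl (- n)) - Yf k g n * onepl (- n)"
    by (simp add: algebra_simps)
  also have "\<dots> = Vf k g (n - 1) - Vf k g n"
    by (simp only: Vf_def e)
  finally show ?thesis .
qed

lemma Uf_rec: "Uf (k + 1) g n = Uf k g (n - 1) - Uf k g n"
proof (rule fls_eqI)
  fix c
  have 1: "fls_nth (Uf k g n) c = (\<Sum>l\<in>{n - k - 1..c}. g l * of_int (eco k (n - l)) * fls_nth (onepl (- l)) c)"
    unfolding Uf_nth by (rule sum_zero_ext) (auto simp: eco_above)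
  have 2: "fls_nth (Uf k g (n - 1)) c = (\<Sum>l\<in>{n - k - 1..c}. g l * of_int (eco k (n - l - 1)) * fls_nth (onepl (- l)) c)"
    unfolding Uf_nth by (rule sum.cong) (auto simp: algebra_simps)
  have 3: "fls_nth (Uf (k + 1) g n) c = (\<Sum>l\<in>{n - k - 1..c}. g l * of_int (eco k (n - l - 1) - eco k (n - l)) * fls_nth (onepl (- l)) c)"
    unfolding Uf_nth eco_pascal by (rule sum.cong) auto
  show "fls_nth (Uf (k + 1) g n) c = fls_nth (Uf k g (n - 1) - Uf k g n) c"
    unfolding fls_minus_nth 1 2 3 sum_subtractf[symmetric]
    by (rule sum.cong) (auto simp: algebra_simps)
qed

lemma Yf_0: "Yf 0 g n = fls_const (g n)"
proof (rule fls_eqI)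
  fix m show "fls_nth (Yf 0 g n) m = fls_nth (fls_const (g n)) m"
    by (cases "m = 0") (auto simp: Yf_nth ibinom_def)
qed

lemma Vf_Uf_0: "Vf 0 g n = Uf 0 g n"
proof (rule fls_eqI)
  fix c
  have "fls_nth (Uf 0 g n) c = (\<Sum>l\<in>{n..c}. if l = n then g n * fls_nth (onepl (- n)) c else 0)"
    unfolding Uf_nth by (rule sum.cong) (auto simp: eco_0)
  also have "\<dots> = g n * fls_nth (onepl (- n)) c"
    by (cases "n \<le> c") (auto simp: sum.delta onepl_nth)
  finally show "fls_nth (Vf 0 g n) c = fls_nth (Uf 0 g n) c"
    by (simp add: Vf_def Yf_0)
qed

lemma Vf_order:
  assumes "k \<le> 0" "c < n - k"
  shows "fls_nth (Vf k g n) c = 0"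
proof -
  have "fls_nth (Vf k g n) c = (\<Sum>x\<in>{- k..c - n}. fls_nth (Yf k g n) x * fls_nth (onepl (- n)) (c - x))"
    unfolding Vf_def by (rule fls_mult_nth_bnd) (auto simp: Yf_nth onepl_nth)
  also have "\<dots> = 0" using assms by simp
  finally show ?thesis .
qed

lemma Uf_order: "c < n - k \<Longrightarrow> fls_nth (Uf k g n) c = 0"
  by (simp add: Uf_nth)

lemma Vf_Uf: "k \<le> 0 \<Longrightarrow> Vf k g n = Uf k g n"
proof -
  have "\<forall>n. Vf (- int m) g n = Uf (- int m) g n" for m
  proof (induction m)
    case 0 then show ?case using Vf_Uf_0 by simp
  next
    case (Suc m)
    define k where "k = - int (Suc m)"
    have k1: "k + 1 = - int m" "k \<le> -1" by (auto simp: k_def)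
    define D where "D n = Vf k g n - Uf k g n" for n
    have step: "D (n - 1) = D n" for n
    proof -
      have "Vf (k + 1) g n = Uf (k + 1) g n" using Suc k1 by simp
      then have "Vf k g (n - 1) - Vf k g n = Uf k g (n - 1) - Uf k g n"
        by (simp add: Vf_rec[OF k1(2)] Uf_rec)
      then show ?thesis by (simp add: D_def algebra_simps)
    qed
    have shift: "D n = D (n + int j)" for n j
    proof (induction j)
      case (Suc j)
      have "D (n + int (Suc j)) = D (n + int (Suc j) - 1)" using step[of "n + int (Suc j)"] by simp
      then show ?case using Suc by simp
    qed simp
    have "D n = 0" for n
    proof (rule fls_eqI)
      fix c
      define j where "j = nat (c - n + k + 1)"
      have "c < (n + int j) - k" by (simp add: j_def)
      then have "fls_nth (D (n + int j)) c = 0"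
        using k1 by (simp add: D_def Vf_order Uf_order)
      then show "fls_nth (D n) c = fls_nth 0 c" using shift[of n j] by simp
    qed
    then show ?case by (simp add: D_def k_def)
  qed
  moreover assume "k \<le> 0"
  then have "k = - int (nat (- k))" by simp
  ultimately show ?thesis by metis
qed

lemma adj_fps_nth:
  "fls_nth (fps_to_fls (Abs_fps (\<lambda>m. if m = 0 then 0 else
       (\<Sum>k\<in>{- int m .. -1}. of_int (ibinom k (nat (k + int m))) *
           bdiff (nat (k + int m)) (C k) (n + int m))))) x
   = (if x \<le> 0 then 0 else (\<Sum>k\<in>{- x .. -1}. of_int (ibinom k (nat (k + x))) * bdiff (nat (k + x)) (C k) (n + x)))"
  by auto

lemma adj_V: "fls_nth (adj_act_neg C n) c = (\<Sum>k\<in>{n - c..-1}. fls_nth (Vf k (C k) n) c)"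
proof -
  define F where "F = fps_to_fls (Abs_fps (\<lambda>m. if m = 0 then 0 else
       (\<Sum>k\<in>{- int m .. -1}. of_int (ibinom k (nat (k + int m))) *
           bdiff (nat (k + int m)) (C k) (n + int m))))"
  have adj: "adj_act_neg C n = F * onepl (- n)" by (simp add: adj_act_neg_def F_def)
  have Fnth: "fls_nth F x = (if x \<le> 0 then 0 else (\<Sum>k\<in>{- x .. -1}. of_int (ibinom k (nat (k + x))) * bdiff (nat (k + x)) (C k) (n + x)))" for x
    unfolding F_def by (rule adj_fps_nth)
  have "fls_nth (adj_act_neg C n) c = (\<Sum>x\<in>{0..c - n}. fls_nth F x * fls_nth (onepl (- n)) (c - x))"
    unfolding adj by (rule fls_mult_nth_bnd) (auto simp: Fnth onepl_nth)
  also have "\<dots> = (\<Sum>x\<in>{0..c - n}. \<Sum>k\<in>{n - c..-1}. fls_nth (Yf k (C k) n) x * fls_nth (onepl (- n)) (c - x))"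
  proof (rule sum.cong[OF refl])
    fix x assume x: "x \<in> {0..c - n}"
    have "fls_nth F x = (\<Sum>k\<in>{n - c..-1}. fls_nth (Yf k (C k) n) x)"
    proof (cases "x \<le> 0")
      case True then show ?thesis by (simp add: Fnth Yf_nth)
    next
      case False
      have "fls_nth F x = (\<Sum>k\<in>{- x .. -1}. of_int (ibinom k (nat (k + x))) * bdiff (nat (k + x)) (C k) (n + x))"
        using False by (simp add: Fnth)
      also have "\<dots> = (\<Sum>k\<in>{- x .. -1}. fls_nth (Yf k (C k) n) x)"
        using False by (intro sum.cong) (auto simp: Yf_nth)
      also have "\<dots> = (\<Sum>k\<in>{n - c..-1}. fls_nth (Yf k (C k) n) x)"
        by (rule sum_zero_ext) (use x in \<open>auto simp: Yf_nth\<close>)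
      finally show ?thesis .
    qed
    then show "fls_nth F x * fls_nth (onepl (- n)) (c - x) = (\<Sum>k\<in>{n - c..-1}. fls_nth (Yf k (C k) n) x * fls_nth (onepl (- n)) (c - x))"
      by (simp add: sum_distrib_right)
  qed
  also have "\<dots> = (\<Sum>k\<in>{n - c..-1}. \<Sum>x\<in>{0..c - n}. fls_nth (Yf k (C k) n) x * fls_nth (onepl (- n)) (c - x))"
    by (rule sum.swap)
  also have "\<dots> = (\<Sum>k\<in>{n - c..-1}. fls_nth (Vf k (C k) n) c)"
  proof (rule sum.cong[OF refl])
    fix k
    show "(\<Sum>x\<in>{0..c - n}. fls_nth (Yf k (C k) n) x * fls_nth (onepl (- n)) (c - x)) = fls_nth (Vf k (C k) n) c"
      unfolding Vf_def by (rule fls_mult_nth_bnd[symmetric]) (auto simp: Yf_nth onepl_nth)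
  qed
  finally show ?thesis .
qed

lemma adj_G:
  assumes C: "bnd C (-1)"
  shows "fls_nth (adj_act_neg C n) c = (\<Sum>l\<in>{n + 1..c}. G C l (n - l) * fls_nth (onepl (- l)) c)"
proof -
  have "fls_nth (adj_act_neg C n) c = (\<Sum>k\<in>{n - c..-1}. fls_nth (Uf k (C k) n) c)"
    unfolding adj_V by (rule sum.cong[OF refl]) (simp add: Vf_Uf)
  also have "\<dots> = (\<Sum>k\<in>{n - c..-1}. \<Sum>l\<in>{n + 1..c}. C k l * of_int (eco k (n - l)) * fls_nth (onepl (- l)) c)"
    unfolding Uf_nth
  proof (rule sum.cong[OF refl], rule sum_zero_ext)
    fix k l assume "k \<in> {n - c..-1}" "l \<in> {n + 1..c} - {n - k..c}"
    then show "C k l * of_int (eco k (n - l)) * fls_nth (onepl (- l)) c = 0" by (auto simp: eco_above)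
  qed auto
  also have "\<dots> = (\<Sum>l\<in>{n + 1..c}. \<Sum>k\<in>{n - c..-1}. C k l * of_int (eco k (n - l)) * fls_nth (onepl (- l)) c)"
    by (rule sum.swap)
  also have "\<dots> = (\<Sum>l\<in>{n + 1..c}. G C l (n - l) * fls_nth (onepl (- l)) c)"
  proof (rule sum.cong[OF refl])
    fix l assume l: "l \<in> {n + 1..c}"
    have "G C l (n - l) = (\<Sum>k\<in>{n - c..-1}. C k l * of_int (eco k (n - l)))"
      unfolding G_eq[OF C] by (rule sum_zero_ext) (use l in \<open>auto simp: eco_above\<close>)
    then show "(\<Sum>k\<in>{n - c..-1}. C k l * of_int (eco k (n - l)) * fls_nth (onepl (- l)) c) = G C l (n - l) * fls_nth (onepl (- l)) c"
      by (simp add: sum_distrib_right)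
  qed
  finally show ?thesis .
qed

lemma adj_order:
  assumes C: "bnd C (-1)" and c: "c < n + 1"
  shows "fls_nth (adj_act_neg C n) c = 0"
  using c by (simp add: adj_G[OF C])

lemma act_order:
  assumes Z: "bnd Z 0" and c: "c < - a"
  shows "fls_nth (act Z a) c = 0"
proof -
  have "fls_nth (act Z a) c = (\<Sum>x\<in>{0..c - - a}. fls_nth (symb Z a) x * fls_nth (onepl a) (c - x))"
    unfolding act_def by (rule fls_mult_nth_bnd) (auto simp: symb_nth[OF Z] bndD[OF Z] onepl_nth)
  then show ?thesis using c by simp
qed

lemma act_res_onepl:
  assumes Z: "bnd Z 0"
  shows "fls_nth (act Z a * onepl (- l)) 1 = G Z a (l - 1 - a)"
proof -
  have "act Z a * onepl (- l) = symb Z a * onepl (a - l)"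
    by (simp add: act_def mult.assoc onepl_add[symmetric])
  then have "fls_nth (act Z a * onepl (- l)) 1 = (\<Sum>y\<in>{0..1 - (l - a)}. fls_nth (symb Z a) y * fls_nth (onepl (a - l)) (1 - y))"
    by (simp, intro fls_mult_nth_bnd) (auto simp: symb_nth[OF Z] bndD[OF Z] onepl_nth)
  also have "\<dots> = (\<Sum>y\<in>{0..1 - (l - a)}. Z (- y) a * of_int (eco (- y) (l - 1 - a)))"
  proof (rule sum.cong[OF refl])
    fix y
    have "fls_nth (onepl (a - l)) (1 + - y) = of_int (eco (- y) (-1 - (a - l)))" by (rule onepl_eco)
    then show "fls_nth (symb Z a) y * fls_nth (onepl (a - l)) (1 - y) = Z (- y) a * of_int (eco (- y) (l - 1 - a))"
      by (simp add: symb_nth[OF Z] algebra_simps)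
  qed
  also have "\<dots> = (\<Sum>k\<in>{l - 1 - a..0}. Z k a * of_int (eco k (l - 1 - a)))"
    by (rule sum.reindex_bij_witness[of _ "\<lambda>k. - k" "\<lambda>y. - y"]) auto
  also have "\<dots> = G Z a (l - 1 - a)" by (rule G_eq[OF Z, symmetric])
  finally show ?thesis .
qed

theorem bilinear:
  assumes Z: "bnd Z 0" and Zi: "bnd Zi 0" and ZZi: "pdo_mult Z Zi = mono 0"
  shows "fls_nth (act Z a * adj_act_neg (\<lambda>k m. if k \<le> -1 then Zi (k + 1) (m - 1) else 0) b) 1
         = (if b \<le> a then 1 else 0)"
proof -
  define C where "C = (\<lambda>k m. if k \<le> -1 then Zi (k + 1) (m - 1) else (0::real))"
  define ZiD where "ZiD = pdo_mult Zi (mono (-1) :: real pdo)"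
  have ZiD: "bnd ZiD (-1)" unfolding ZiD_def using bnd_mult[OF Zi bnd_mono_op, of "-1"] by simp
  have C: "bnd C (-1)" by (simp add: bnd_def C_def)
  have Ceq: "C k m = ZiD k (m - 1)" for k m
    using bndD[OF Zi, of "k + 1" "m - 1"] by (auto simp: C_def ZiD_def mult_mono_right[OF Zi])
  have GC: "G C l p = G ZiD (l - 1) p" for l p
    by (simp add: G_eq[OF C] G_eq[OF ZiD] Ceq)
  have "fls_nth (act Z a * adj_act_neg C b) 1 = (\<Sum>x\<in>{- a..1 - (b + 1)}. fls_nth (act Z a) x * fls_nth (adj_act_neg C b) (1 - x))"
    by (rule fls_mult_nth_bnd) (auto simp: act_order[OF Z] adj_order[OF C])
  also have "\<dots> = (\<Sum>x\<in>{- a..- b}. \<Sum>l\<in>{b + 1..a + 1}. fls_nth (act Z a) x * (G C l (b - l) * fls_nth (onepl (- l)) (1 - x)))"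
  proof (rule sum.cong, simp)
    fix x assume x: "x \<in> {- a..- b}"
    have "fls_nth (adj_act_neg C b) (1 - x) = (\<Sum>l\<in>{b + 1..a + 1}. G C l (b - l) * fls_nth (onepl (- l)) (1 - x))"
      unfolding adj_G[OF C] by (rule sum_zero_ext) (use x in \<open>auto simp: onepl_nth\<close>)
    then show "fls_nth (act Z a) x * fls_nth (adj_act_neg C b) (1 - x) = (\<Sum>l\<in>{b + 1..a + 1}. fls_nth (act Z a) x * (G C l (b - l) * fls_nth (onepl (- l)) (1 - x)))"
      by (simp add: sum_distrib_left)
  qed
  also have "\<dots> = (\<Sum>l\<in>{b + 1..a + 1}. \<Sum>x\<in>{- a..- b}. fls_nth (act Z a) x * (G C l (b - l) * fls_nth (onepl (- l)) (1 - x)))"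
    by (rule sum.swap)
  also have "\<dots> = (\<Sum>l\<in>{b + 1..a + 1}. G C l (b - l) * G Z a (l - 1 - a))"
  proof (rule sum.cong[OF refl])
    fix l assume l: "l \<in> {b + 1..a + 1}"
    have "fls_nth (act Z a * onepl (- l)) 1 = (\<Sum>x\<in>{- a..1 - l}. fls_nth (act Z a) x * fls_nth (onepl (- l)) (1 - x))"
      by (rule fls_mult_nth_bnd) (auto simp: act_order[OF Z] onepl_nth)
    also have "\<dots> = (\<Sum>x\<in>{- a..- b}. fls_nth (act Z a) x * fls_nth (onepl (- l)) (1 - x))"
      by (rule sum_zero_ext) (use l in \<open>auto simp: onepl_nth\<close>)
    finally have E: "(\<Sum>x\<in>{- a..- b}. fls_nth (act Z a) x * fls_nth (onepl (- l)) (1 - x)) = G Z a (l - 1 - a)"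
      using act_res_onepl[OF Z] by simp
    have "(\<Sum>x\<in>{- a..- b}. fls_nth (act Z a) x * (G C l (b - l) * fls_nth (onepl (- l)) (1 - x)))
        = G C l (b - l) * (\<Sum>x\<in>{- a..- b}. fls_nth (act Z a) x * fls_nth (onepl (- l)) (1 - x))"
      by (simp add: sum_distrib_left mult.left_commute)
    then show "(\<Sum>x\<in>{- a..- b}. fls_nth (act Z a) x * (G C l (b - l) * fls_nth (onepl (- l)) (1 - x))) = G C l (b - l) * G Z a (l - 1 - a)"
      by (simp only: E)
  qed
  also have "\<dots> = gm 0 (-1) (G Z) (G ZiD) a (b - 1 - a)"
    unfolding gm_def GC
    by (subst sum_shift_int[where d = "a + 1"]) (simp add: algebra_simps)
  also have "\<dots> = G (pdo_mult Z ZiD) a (b - 1 - a)"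
    using G_mult[OF Z ZiD] by simp
  also have "pdo_mult Z ZiD = mono (-1)"
    unfolding ZiD_def by (simp add: mult_assoc[OF Z Zi bnd_mono_op, symmetric] ZZi mono_mult_mono)
  also have "G (mono (-1) :: real pdo) a (b - 1 - a) = (if b \<le> a then 1 else 0)"
    by (simp add: G_mono eco_m1)
  finally show ?thesis by (simp add: C_def)
qed


definition hpd :: "nat \<Rightarrow> ((nat \<Rightarrow> real) \<Rightarrow> real) \<Rightarrow> (nat \<Rightarrow> real) \<Rightarrow> real \<Rightarrow> bool" where
  "hpd i f t D \<longleftrightarrow> ((\<lambda>s. f (t(i := s))) has_real_derivative D) (at (t i))"

lemma hpd_pd: assumes "hpd i f t D" shows "pdiff i f t" "pd i f t = D"
proof -
  have d: "deriv (\<lambda>s. f (t(i := s))) (t i) = D"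
    using assms unfolding hpd_def by (rule DERIV_imp_deriv)
  then show "pd i f t = D" by (simp add: pd_def)
  have "((\<lambda>s. f (t(i := s))) has_real_derivative deriv (\<lambda>s. f (t(i := s))) (t i)) (at (t i))"
    using assms d unfolding hpd_def by simp
  then show "pdiff i f t" unfolding pdiff_def by (simp add: DERIV_deriv_iff_real_differentiable)
qed

lemma pdiff_hpd: "pdiff i f t \<Longrightarrow> hpd i f t (pd i f t)"
  unfolding pdiff_def hpd_def pd_def by (simp add: DERIV_deriv_iff_real_differentiable)

lemma hpd_const: "hpd i (\<lambda>t. c) t 0"
  by (simp add: hpd_def)

lemma pd_const: "pd i (\<lambda>t. c) t = 0"
  using hpd_pd(2)[OF hpd_const] .

lemma hpd_add: "hpd i f t Df \<Longrightarrow> hpd i g t Dg \<Longrightarrow> hpd i (\<lambda>t. f t + g t) t (Df + Dg)"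
  unfolding hpd_def by (rule DERIV_add)

lemma hpd_diff: "hpd i f t Df \<Longrightarrow> hpd i g t Dg \<Longrightarrow> hpd i (\<lambda>t. f t - g t) t (Df - Dg)"
  unfolding hpd_def by (rule DERIV_diff)

lemma hpd_mult: assumes "hpd i f t Df" "hpd i g t Dg" shows "hpd i (\<lambda>t. f t * g t) t (Df * g t + f t * Dg)"
  using DERIV_mult[OF assms[unfolded hpd_def]] by (simp add: hpd_def algebra_simps)

lemma hpd_sum: "finite S \<Longrightarrow> (\<And>x. x \<in> S \<Longrightarrow> hpd i (f x) t (D x)) \<Longrightarrow> hpd i (\<lambda>t. \<Sum>x\<in>S. f x t) t (\<Sum>x\<in>S. D x)"
  unfolding hpd_def by (rule DERIV_sum)

lemma hpd_inverse: "hpd i f t Df \<Longrightarrow> f t \<noteq> 0 \<Longrightarrow> hpd i (\<lambda>t. inverse (f t)) t (- (Df * inverse (f t) ^ 2))"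
  unfolding hpd_def using DERIV_inverse_fun[of "\<lambda>s. f (t(i := s))" Df "t i" UNIV] by (simp add: power2_eq_square)

lemma pd_cong: "(\<And>s. f s = g s) \<Longrightarrow> pd i f t = pd i g t"
proof -
  assume "\<And>s. f s = g s" then have "f = g" by blast
  then show ?thesis by simp
qed

lemma pd_zero: "(\<And>s. f s = 0) \<Longrightarrow> pd i f t = 0"
  using pd_cong[of f "\<lambda>_. 0"] pd_const by simp

lemma fdiff_delta:
  "fdiff r (\<lambda>m. if m = y then c else 0) x
     = (if x \<le> y \<and> y \<le> x + int r then of_int ((-1) ^ (r - nat (y - x)) * int (r choose nat (y - x))) * c else 0)"
proof -
  have "fdiff r (\<lambda>m. if m = y then c else 0) x = (\<Sum>s\<le>r. if s = nat (y - x) \<and> x \<le> y then of_int ((-1) ^ (r - s) * int (r choose s)) * c else 0)"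
    unfolding fdiff_def by (rule sum.cong) auto
  also have "\<dots> = (if x \<le> y \<and> y \<le> x + int r then of_int ((-1) ^ (r - nat (y - x)) * int (r choose nat (y - x))) * c else 0)"
    by (cases "x \<le> y") (auto simp: sum.delta)
  finally show ?thesis .
qed

lemma fdiff_diff_fun: "fdiff r (\<lambda>m. f (m + 1) - f m) x = fdiff r f (x + 1) - fdiff r f x"
  unfolding fdiff_def by (simp add: sum_subtractf algebra_simps)

lemma fdiff_cmult: "fdiff r (\<lambda>m. c * f m) x = c * fdiff r f x"
  unfolding fdiff_def by (simp add: sum_distrib_left algebra_simps)

lemma adj_conj_apply_eq:
  assumes A: "bnd A d"
  shows "adj_conj_apply A f n = (\<Sum>k\<in>{1..nat d}. (-1) ^ k * fdiff (k - 1) (\<lambda>m. A (int k) m * (f (m + 1) - f m)) (n - int k))"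
proof -
  have D: "bnd A (pdo_deg A)" using bnd_deg[OF A] .
  have z: "(-1) ^ k * fdiff (k - 1) (\<lambda>m. A (int k) m * (f (m + 1) - f m)) (n - int k) = 0" if "bnd A e" "int k > e" for e k
  proof -
    have "(\<lambda>m. A (int k) m * (f (m + 1) - f m)) = (\<lambda>_. 0)" using that by (auto simp: bndD)
    then show ?thesis by simp
  qed
  show ?thesis unfolding adj_conj_apply_def
    by (rule sum_zero_ext) (use z[OF D] z[OF A] in auto)
qed

lemma KI_term:
  assumes k: "k \<ge> 1"
  shows "(-1) ^ k * fdiff (k - 1) (\<lambda>m. c m * ((if m + 1 \<le> a then 1 else 0) - (if m \<le> a then 1 else 0))) (b - int k)
       = c a * fdiff k (\<lambda>m. if b \<le> m then 1 else (0::real)) a"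
proof -
  have L: "(\<lambda>m. c m * ((if m + 1 \<le> a then 1 else 0) - (if m \<le> a then 1 else (0::real)))) = (\<lambda>m. if m = a then - c a else 0)"
    by (auto simp: fun_eq_iff)
  have R0: "(\<lambda>m. (if b \<le> m + 1 then 1 else 0) - (if b \<le> m then 1 else (0::real))) = (\<lambda>m. if m = b - 1 then 1 else 0)"
    by (auto simp: fun_eq_iff)
  obtain k' where k': "k = Suc k'" using k by (cases k) auto
  have R: "fdiff k (\<lambda>m. if b \<le> m then 1 else (0::real)) a = fdiff k' (\<lambda>m. if m = b - 1 then 1 else 0) a"
    unfolding k' fdiff_Suc fdiff_diff_fun[symmetric] R0 ..
  show ?thesis
  proof (cases "a \<le> b - 1 \<and> b - 1 \<le> a + int k'")
    case True
    define u where "u = nat (b - 1 - a)"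
    have u: "u \<le> k'" "nat (a - (b - int k)) = k' - u" using True k' by (auto simp: u_def)
    have s: "(k' choose (k' - u)) = (k' choose u)" using u by (simp add: binomial_symmetric[symmetric])
    have sg: "(-1::real) ^ Suc k' * - ((-1) ^ (k' - (k' - u))) = (-1) ^ (k' - u)"
    proof -
      have "k' - (k' - u) = u" using u by simp
      moreover have "(-1::real) ^ Suc k' * - ((-1) ^ u) = (-1) ^ (k' - u)"
      proof -
        have "(-1::real) ^ Suc k' * - ((-1) ^ u) = (-1) ^ (k' + u)" by (simp add: power_add)
        also have "k' + u = (k' - u) + 2 * u" using u by simp
        also have "(-1::real) ^ ((k' - u) + 2 * u) = (-1) ^ (k' - u)" by (simp add: power_add power_mult)
        finally show ?thesis .
      qed
      ultimately show ?thesis by simp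
    qed
    have T2: "b - int k \<le> a \<and> a \<le> b - int k + int k'" using True k' by auto
    have u2: "nat (b - (1 + a)) = u" by (simp add: u_def)
    show ?thesis unfolding L R fdiff_delta using True T2 u s sg k'
      by (simp add: u_def[symmetric] u2 algebra_simps)
  next
    case False
    then have "\<not> (b - int k \<le> a \<and> a \<le> b - int k + int k')" using k' by auto
    have F2: "\<not> (a \<le> b - 1 \<and> b - 1 \<le> a + int k')" using False by simp
    show ?thesis unfolding L R fdiff_delta
      by (subst if_not_P[OF F2], subst if_not_P) (use \<open>\<not> (b - int k \<le> a \<and> a \<le> b - int k + int k')\<close> k' in auto)
  qed
qed

theorem KI:
  assumes A: "bnd A d" and A0: "\<And>k n. k \<le> 0 \<Longrightarrow> A k n = 0"
  shows "adj_conj_apply A (\<lambda>m. if m \<le> a then 1 else 0) b = pdo_apply A (\<lambda>m. if b \<le> m then 1 else (0::real)) a"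
proof -
  have "adj_conj_apply A (\<lambda>m. if m \<le> a then 1 else 0) b
      = (\<Sum>k\<in>{1..nat d}. A (int k) a * fdiff k (\<lambda>m. if b \<le> m then 1 else (0::real)) a)"
    unfolding adj_conj_apply_eq[OF A]
    by (rule sum.cong[OF refl]) (rule KI_term, simp)
  also have "\<dots> = pdo_apply A (\<lambda>m. if b \<le> m then 1 else (0::real)) a"
    unfolding pdo_apply_eq[OF A]
    by (rule sum_zero_ext) (use A0 in auto)
  finally show ?thesis .
qed

section \<open>Orders\<close>

definition ordge :: "real fls \<Rightarrow> int \<Rightarrow> bool" where
  "ordge f b \<longleftrightarrow> (\<forall>c<b. fls_nth f c = 0)"

lemma ordgeD: "ordge f b \<Longrightarrow> c < b \<Longrightarrow> fls_nth f c = 0"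
  by (simp add: ordge_def)

lemma ordge_mult: assumes "ordge f a" "ordge g b" shows "ordge (f * g) (a + b)"
  unfolding ordge_def
proof (intro allI impI)
  fix c assume c: "c < a + b"
  have "fls_nth (f * g) c = (\<Sum>x\<in>{a..c - b}. fls_nth f x * fls_nth g (c - x))"
    by (rule fls_mult_nth_bnd) (use assms in \<open>auto simp: ordge_def\<close>)
  also have "{a..c - b} = {}" using c by auto
  finally show "fls_nth (f * g) c = 0" by simp
qed

lemma ordge_mono: "ordge f a \<Longrightarrow> b \<le> a \<Longrightarrow> ordge f b"
  by (simp add: ordge_def)

lemma ordge_add: "ordge f a \<Longrightarrow> ordge g a \<Longrightarrow> ordge (f + g) a"
  by (simp add: ordge_def)

lemma ordge_diff: "ordge f a \<Longrightarrow> ordge g a \<Longrightarrow> ordge (f - g) a"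
  by (simp add: ordge_def)

lemma ordge_sum: "(\<And>x. x \<in> S \<Longrightarrow> ordge (f x) a) \<Longrightarrow> ordge (\<Sum>x\<in>S. f x) a"
  by (simp add: ordge_def fls_nth_sum)

lemma ordge_of_int_mult: "ordge f a \<Longrightarrow> ordge (of_int z * f) a"
  by (simp add: ordge_def fls_of_int)

lemma ordge_zero: "ordge 0 a"
  by (simp add: ordge_def)

lemma ordge_fls_const: "ordge (fls_const x) 0"
  by (simp add: ordge_def)

lemma ordge_fdiff: "(\<And>s. s \<le> r \<Longrightarrow> ordge (g (x + int s)) b) \<Longrightarrow> ordge (fdiff r g x) b"
  unfolding fdiff_def by (intro ordge_sum ordge_of_int_mult) auto

lemma ordge_pdo_mult:
  assumes A: "bnd A a" and B: "bnd B b"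
    and oA: "\<And>i. ordge (A i n) (oA i)" and oB: "\<And>k m. ordge (B k m) (oB k m)"
    and cond: "\<And>i r s. i \<le> a \<Longrightarrow> j + int r - b \<le> i \<Longrightarrow> s \<le> r \<Longrightarrow> g \<le> oA i + oB (j - i + int r) (n + i - int r + int s)"
  shows "ordge (pdo_mult A B j n) g"
  unfolding pdo_mult_eq[OF A B] msum_def mterm_def
proof (intro ordge_sum)
  fix r i assume r: "r \<in> {0..nat (a + b - j)}" and i: "i \<in> {j + int r - b..a}"
  have "ordge (A i n * (of_int (ibinom i r) * fdiff r (B (j - i + int r)) (n + i - int r))) (oA i + (g - oA i))"
  proof (rule ordge_mult[OF oA], rule ordge_of_int_mult, rule ordge_fdiff)
    fix s assume "s \<le> r"
    then show "ordge (B (j - i + int r) (n + i - int r + int s)) (g - oA i)"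
      by (intro ordge_mono[OF oB]) (use cond[of i r s] i in auto)
  qed
  then show "ordge (A i n * of_int (ibinom i r) * fdiff r (B (j - i + int r)) (n + i - int r)) g"
    by (simp add: mult.assoc)
qed

section \<open>Derivatives of Laurent-series families\<close>

definition pdF :: "nat \<Rightarrow> ((nat \<Rightarrow> real) \<Rightarrow> real fls) \<Rightarrow> (nat \<Rightarrow> real) \<Rightarrow> real fls" where
  "pdF j W t = Abs_fls (\<lambda>c. pd j (\<lambda>s. fls_nth (W s) c) t)"

lemma pdF_nth:
  assumes "\<And>s c. c < d \<Longrightarrow> fls_nth (W s) c = 0"
  shows "fls_nth (pdF j W t) c = pd j (\<lambda>s. fls_nth (W s) c) t"
  unfolding pdF_def
  by (rule nth_Abs_fls_lower_bound[where N = d]) (use assms in \<open>auto intro: pd_zero\<close>)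

lemma pdF_order:
  assumes "\<And>s c. c < d \<Longrightarrow> fls_nth (W s) c = 0" "c < d"
  shows "fls_nth (pdF j W t) c = 0"
  using assms by (simp add: pdF_nth[OF assms(1)] pd_zero)

lemma hpd_cong: "(\<And>s. f s = g s) \<Longrightarrow> hpd i g t D \<Longrightarrow> hpd i f t D"
proof -
  assume "\<And>s. f s = g s" then have "f = g" by blast
  then show "hpd i g t D \<Longrightarrow> hpd i f t D" by simp
qed

lemma PR:
  assumes W: "\<And>s c. c < dW \<Longrightarrow> fls_nth (W s) c = 0" and V: "\<And>s c. c < dV \<Longrightarrow> fls_nth (V s) c = 0"
    and dW: "\<And>c. pdiff j (\<lambda>s. fls_nth (W s) c) t" and dV: "\<And>c. pdiff j (\<lambda>s. fls_nth (V s) c) t"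
  shows "hpd j (\<lambda>s. fls_nth (W s * V s) c) t (fls_nth (pdF j W t * V t) c + fls_nth (W t * pdF j V t) c)"
proof -
  have e: "fls_nth (W s * V s) c = (\<Sum>x\<in>{dW..c - dV}. fls_nth (W s) x * fls_nth (V s) (c - x))" for s
    by (rule fls_mult_nth_bnd) (auto simp: W V)
  have "hpd j (\<lambda>s. \<Sum>x\<in>{dW..c - dV}. fls_nth (W s) x * fls_nth (V s) (c - x)) t
      (\<Sum>x\<in>{dW..c - dV}. pd j (\<lambda>s. fls_nth (W s) x) t * fls_nth (V t) (c - x) + fls_nth (W t) x * pd j (\<lambda>s. fls_nth (V s) (c - x)) t)"
    by (intro hpd_sum hpd_mult pdiff_hpd dW dV) auto
  moreover have "fls_nth (pdF j W t * V t) c = (\<Sum>x\<in>{dW..c - dV}. pd j (\<lambda>s. fls_nth (W s) x) t * fls_nth (V t) (c - x))"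
    by (subst fls_mult_nth_bnd[where a = dW and b = dV]) (auto simp: pdF_order[OF W] pdF_nth[OF W] V)
  moreover have "fls_nth (W t * pdF j V t) c = (\<Sum>x\<in>{dW..c - dV}. fls_nth (W t) x * pd j (\<lambda>s. fls_nth (V s) (c - x)) t)"
    by (subst fls_mult_nth_bnd[where a = dW and b = dV]) (auto simp: pdF_order[OF V] pdF_nth[OF V] W)
  ultimately show ?thesis
    by (intro hpd_cong[OF e]) (simp add: sum.distrib)
qed

lemma pd_fls_pdF: "pd_fls i F t n = pdF i (\<lambda>s. F s n) t"
  by (simp add: pd_fls_def pdF_def)

lemma Dtw_nth:
  assumes "\<And>s c. c < d \<Longrightarrow> fls_nth (F s n) c = 0"
  shows "fls_nth (Dtw e j F t n) c = pd j (\<lambda>s. fls_nth (F s n) c) t + e * fls_nth (F t n) (c + int j)"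
proof -
  have "fls_nth (fls_X_inv ^ j * F t n) c = fls_nth (F t n) (c + int j)"
    by (simp add: fls_X_inv_power_times_conv_shift)
  then show ?thesis
    by (simp add: Dtw_def pd_fls_pdF pdF_nth[where d = d] assms mult.assoc)
qed

lemma Dtw_order:
  assumes "\<And>s c. c < d \<Longrightarrow> fls_nth (F s n) c = 0" "c < d - int j"
  shows "fls_nth (Dtw e j F t n) c = 0"
  using assms by (simp add: Dtw_nth[of d F n, OF assms(1)] pd_zero)

lemma Dtw_PR:
  assumes W: "\<And>s c. c < dW \<Longrightarrow> fls_nth (W s a) c = 0" and V: "\<And>s c. c < dV \<Longrightarrow> fls_nth (V s n) c = 0"
    and dW: "\<And>c. pdiff j (\<lambda>s. fls_nth (W s a) c) t" and dV: "\<And>c. pdiff j (\<lambda>s. fls_nth (V s n) c) t"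
  shows "hpd j (\<lambda>s. fls_nth (W s a * V s n) c) t
           (fls_nth (Dtw e j W t a * V t n) c + fls_nth (W t a * Dtw (- e) j V t n) c)"
proof -
  have "fls_nth (Dtw e j W t a * V t n) c + fls_nth (W t a * Dtw (- e) j V t n) c
      = fls_nth (pdF j (\<lambda>s. W s a) t * V t n) c + fls_nth (W t a * pdF j (\<lambda>s. V s n) t) c"
  proof -
    have "Dtw e j W t a * V t n + W t a * Dtw (- e) j V t n
        = pdF j (\<lambda>s. W s a) t * V t n + W t a * pdF j (\<lambda>s. V s n) t"
      by (simp add: Dtw_def pd_fls_pdF algebra_simps fls_const_uminus)
    then show ?thesis by (metis fls_plus_nth)
  qed
  then show ?thesis using PR[of dW "\<lambda>s. W s a" dV "\<lambda>s. V s n", OF W V dW dV] by simp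
qed


lemma bnd_pow: "bnd A a \<Longrightarrow> 0 \<le> a \<Longrightarrow> bnd (pdo_pow A j) (int j * a)"
proof (induction j)
  case 0 then show ?case by (simp add: pdo_one_mono bnd_mono_op)
next
  case (Suc j)
  then have "bnd (pdo_mult (pdo_pow A j) A) (int j * a + a)" by (intro bnd_mult) auto
  then show ?case by (simp add: algebra_simps)
qed

lemma bnd_pos: "bnd A a \<Longrightarrow> bnd (pdo_pos A) a"
  by (simp add: bnd_def pdo_pos_def)

lemma bnd_nonpos: "bnd (pdo_nonpos A) 0"
  by (simp add: bnd_def pdo_nonpos_def)

lemma pos_nonpos: "(\<lambda>k n. pdo_pos A k n + pdo_nonpos A k n) = (A :: 'a::comm_ring_1 pdo)"
  by (auto simp: pdo_pos_def pdo_nonpos_def fun_eq_iff)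

lemma symb_add:
  assumes "bnd A a" "bnd B a"
  shows "symb (\<lambda>k n. A k n + B k n) n = symb A n + symb B n"
proof -
  have S: "bnd (\<lambda>k n. A k n + B k n) a" using assms by (simp add: bnd_def)
  show ?thesis by (rule fls_eqI) (simp add: symb_nth[OF S] symb_nth[OF assms(1)] symb_nth[OF assms(2)])
qed

lemma act_add:
  assumes "bnd A a" "bnd B a"
  shows "act (\<lambda>k n. A k n + B k n) n = act A n + act B n"
  by (simp add: act_def symb_add[OF assms] algebra_simps)

lemma act_mono_right:
  assumes Z: "bnd Z a"
  shows "act (pdo_mult Z (mono (int j))) n = fls_X_inv ^ j * act Z n"
proof -
  have ZD: "bnd (pdo_mult Z (mono (int j))) (a + int j)" by (rule bnd_mult[OF Z bnd_mono_op])
  have "symb (pdo_mult Z (mono (int j))) n = fls_X_inv ^ j * symb Z n"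
  proof (rule fls_eqI)
    fix c show "fls_nth (symb (pdo_mult Z (mono (int j))) n) c = fls_nth (fls_X_inv ^ j * symb Z n) c"
      by (simp add: symb_nth[OF ZD] symb_nth[OF Z] mult_mono_right[OF Z] fls_X_inv_power_times_conv_shift algebra_simps)
  qed
  then show ?thesis by (simp add: act_def mult.assoc)
qed

locale dm =
  fixes Z Zi :: tpdo
    and \<phi> \<psi> :: "(nat \<Rightarrow> real) \<Rightarrow> int \<Rightarrow> real"
    and \<sigma> \<rho> :: "(nat \<Rightarrow> real) \<Rightarrow> int \<Rightarrow> real fls"
  assumes dress: "dmKP_dressing Z Zi"
    and eig: "eigenfunction (Lax Z Zi) \<phi>"
    and adj: "adjoint_eigenfunction (Lax Z Zi) \<psi>"
    and S1: "sq_pot (Lax Z Zi) (-1) (\<lambda>t n. fls_const (\<phi> t n)) (wstarhat Zi) \<sigma>"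
    and S2: "sq_pot (Lax Z Zi) 1 (what Z) (\<lambda>t n. fls_const (\<psi> t n)) \<rho>"
begin

abbreviation L :: "(nat \<Rightarrow> real) \<Rightarrow> real pdo" where "L t \<equiv> Lax Z Zi t"
abbreviation Lpos :: "nat \<Rightarrow> (nat \<Rightarrow> real) \<Rightarrow> real pdo" where "Lpos j t \<equiv> pdo_pos (pdo_pow (L t) j)"
abbreviation Lneg :: "nat \<Rightarrow> (nat \<Rightarrow> real) \<Rightarrow> real pdo" where "Lneg j t \<equiv> pdo_nonpos (pdo_pow (L t) j)"

lemma Zpos: "k > 0 \<Longrightarrow> Z t k n = 0" and Zipos: "k > 0 \<Longrightarrow> Zi t k n = 0"
  using dress by (auto simp: dmKP_dressing_def)

lemma bZ: "bnd (Z t) 0" and bZi: "bnd (Zi t) 0"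
  using Zpos Zipos by (auto simp: bnd_def)

lemma ZZi: "pdo_mult (Z t) (Zi t) = mono 0" and ZiZ: "pdo_mult (Zi t) (Z t) = mono 0"
  using dress by (auto simp: dmKP_dressing_def pdo_one_mono)

lemma L_def': "L t = pdo_mult (pdo_mult (Z t) (mono 1)) (Zi t)"
  by (simp add: Lax_def pdo_Delta_mono)

lemma bL: "bnd (L t) 1"
  unfolding L_def' using bnd_mult[OF bnd_mult[OF bZ bnd_mono_op] bZi] by simp

lemma bpow: "bnd (pdo_pow (L t) j) (int j)"
  using bnd_pow[OF bL, where j = j] by simp

lemma bLp: "bnd (Lpos j t) (int j)"
  by (rule bnd_pos[OF bpow])

lemma Lp_neg: "k \<le> 0 \<Longrightarrow> Lpos j t k n = 0"
  by (simp add: pdo_pos_def)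

lemma bLn: "bnd (Lneg j t) 0"
  by (rule bnd_nonpos)

lemma z0: "Zi t 0 n * Z t 0 n = 1"
proof -
  have "pdo_mult (Zi t) (Z t) 0 n = 1" using ZiZ by (simp add: mono_def)
  moreover have "pdo_mult (Zi t) (Z t) 0 n = Zi t 0 n * Z t 0 n"
    by (simp add: pdo_mult_eq[OF bZi bZ] msum_def mterm_def)
  ultimately show ?thesis by simp
qed

lemma z0_nz: "Z t 0 n \<noteq> 0"
  using z0[of t n] by auto

lemma powLZ: "pdo_mult (pdo_pow (L t) j) (Z t) = pdo_mult (Z t) (mono (int j))"
proof (induction j)
  case 0 then show ?case by (simp add: pdo_one_mono mult_one_left[OF bZ] mult_one_right[OF bZ])
next
  case (Suc j)
  have LZ: "pdo_mult (L t) (Z t) = pdo_mult (Z t) (mono 1)"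
  proof -
    have "pdo_mult (L t) (Z t) = pdo_mult (pdo_mult (Z t) (mono 1)) (pdo_mult (Zi t) (Z t))"
      unfolding L_def' by (rule mult_assoc[OF bnd_mult[OF bZ bnd_mono_op] bZi bZ])
    also have "\<dots> = pdo_mult (Z t) (mono 1)"
      by (simp add: ZiZ mult_one_right[OF bnd_mult[OF bZ bnd_mono_op]])
    finally show ?thesis .
  qed
  have "pdo_mult (pdo_pow (L t) (Suc j)) (Z t) = pdo_mult (pdo_pow (L t) j) (pdo_mult (L t) (Z t))"
    by (simp add: mult_assoc[OF bpow bL bZ])
  also have "\<dots> = pdo_mult (pdo_mult (pdo_pow (L t) j) (Z t)) (mono 1)"
    unfolding LZ by (rule mult_assoc[OF bpow bZ bnd_mono_op, symmetric])
  also have "\<dots> = pdo_mult (Z t) (pdo_mult (mono (int j)) (mono 1))"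
    unfolding Suc by (rule mult_assoc[OF bZ bnd_mono_op bnd_mono_op])
  also have "\<dots> = pdo_mult (Z t) (mono (int (Suc j)))"
    by (simp add: mono_mult_mono algebra_simps)
  finally show ?case .
qed

lemma what_act': "what Z t n = act (Z t) n"
  by (rule what_act) (rule Zpos)

lemma what_nth: "fls_nth (what Z s a) c = (\<Sum>x\<in>{0..c + a}. Z s (- x) a * fls_nth (onepl a) (c - x))"
proof -
  have "fls_nth (what Z s a) c = (\<Sum>x\<in>{0..c - - a}. fls_nth (symb (Z s) a) x * fls_nth (onepl a) (c - x))"
    unfolding what_act' act_def by (rule fls_mult_nth_bnd) (auto simp: symb_nth[OF bZ] Zpos onepl_nth)
  then show ?thesis by (simp add: symb_nth[OF bZ])
qed

lemma what_order: "c < - a \<Longrightarrow> fls_nth (what Z s a) c = 0"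
  by (simp add: what_act' act_order[OF bZ])

lemma what_lead: "fls_nth (what Z s a) (- a) = Z s 0 a"
  by (simp add: what_nth onepl_nth)

lemma Z_hpd: "1 \<le> j \<Longrightarrow> hpd j (\<lambda>s. Z s k n) t (- pdo_mult (Lneg j t) (Z t) k n)"
proof -
  assume j: "1 \<le> j"
  have "pdiff j (\<lambda>s. Z s k n) t" and "pd j (\<lambda>s. Z s k n) t = - pdo_mult (Lneg j t) (Z t) k n"
    using dress j by (auto simp: dmKP_dressing_def)
  then show ?thesis using pdiff_hpd by fastforce
qed

theorem what_D:
  assumes j: "1 \<le> j"
  shows "Dtw 1 j (what Z) t a = pdo_apply (pdo_map fls_const (Lpos j t)) (what Z t) a"
proof -
  have LnZ: "bnd (pdo_mult (Lneg j t) (Z t)) 0" using bnd_mult[OF bLn bZ] by simp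
  have hp: "hpd j (\<lambda>s. fls_nth (what Z s a) c) t (fls_nth (- act (pdo_mult (Lneg j t) (Z t)) a) c)" for c
  proof -
    have "hpd j (\<lambda>s. \<Sum>x\<in>{0..c + a}. Z s (- x) a * fls_nth (onepl a) (c - x)) t
        (\<Sum>x\<in>{0..c + a}. - pdo_mult (Lneg j t) (Z t) (- x) a * fls_nth (onepl a) (c - x) + Z t (- x) a * 0)"
      by (intro hpd_sum hpd_mult Z_hpd[OF j] hpd_const) auto
    moreover have "fls_nth (act (pdo_mult (Lneg j t) (Z t)) a) c = (\<Sum>x\<in>{0..c + a}. pdo_mult (Lneg j t) (Z t) (- x) a * fls_nth (onepl a) (c - x))"
    proof -
      have "fls_nth (act (pdo_mult (Lneg j t) (Z t)) a) c = (\<Sum>x\<in>{0..c - - a}. fls_nth (symb (pdo_mult (Lneg j t) (Z t)) a) x * fls_nth (onepl a) (c - x))"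
        unfolding act_def by (rule fls_mult_nth_bnd) (auto simp: symb_nth[OF LnZ] bndD[OF LnZ] onepl_nth)
      then show ?thesis by (simp add: symb_nth[OF LnZ])
    qed
    ultimately show ?thesis
      by (intro hpd_cong[OF what_nth]) (simp add: sum_negf)
  qed
  have pdw: "pd_fls j (what Z) t a = - act (pdo_mult (Lneg j t) (Z t)) a"
  proof (rule fls_eqI)
    fix c
    show "fls_nth (pd_fls j (what Z) t a) c = fls_nth (- act (pdo_mult (Lneg j t) (Z t)) a) c"
      unfolding pd_fls_pdF by (simp add: pdF_nth[where d = "- a"] what_order hpd_pd(2)[OF hp])
  qed
  have split: "pdo_mult (pdo_pow (L t) j) (Z t) = (\<lambda>k n. pdo_mult (Lpos j t) (Z t) k n + pdo_mult (Lneg j t) (Z t) k n)"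
  proof (intro ext)
    fix k n
    have "pdo_mult (pdo_pow (L t) j) (Z t) k n = pdo_mult (\<lambda>k n. Lpos j t k n + Lneg j t k n) (Z t) k n"
      by (simp only: pos_nonpos)
    also have "\<dots> = pdo_mult (Lpos j t) (Z t) k n + pdo_mult (Lneg j t) (Z t) k n"
      by (rule mult_add_left[OF bLp bnd_mono[OF bLn] bZ]) simp
    finally show "pdo_mult (pdo_pow (L t) j) (Z t) k n = pdo_mult (Lpos j t) (Z t) k n + pdo_mult (Lneg j t) (Z t) k n" .
  qed
  have LpZ: "bnd (pdo_mult (Lpos j t) (Z t)) (int j)" using bnd_mult[OF bLp bZ] by simp
  have "Dtw 1 j (what Z) t a = - act (pdo_mult (Lneg j t) (Z t)) a + fls_X_inv ^ j * act (Z t) a"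
    by (simp add: Dtw_def pdw what_act')
  also have "fls_X_inv ^ j * act (Z t) a = act (pdo_mult (pdo_pow (L t) j) (Z t)) a"
    by (simp add: powLZ act_mono_right[OF bZ])
  also have "\<dots> = act (pdo_mult (Lpos j t) (Z t)) a + act (pdo_mult (Lneg j t) (Z t)) a"
    unfolding split by (rule act_add[OF LpZ bnd_mono[OF LnZ]]) simp
  finally have "Dtw 1 j (what Z) t a = act (pdo_mult (Lpos j t) (Z t)) a" by simp
  also have "\<dots> = pdo_apply (pdo_map fls_const (Lpos j t)) (act (Z t)) a"
    by (rule act_diffop[OF bLp _ bZ]) (auto simp: Lp_neg)
  finally show ?thesis by (simp add: what_act'[abs_def])
qed


section \<open>Good functions\<close>

inductive good :: "((nat \<Rightarrow> real) \<Rightarrow> real) \<Rightarrow> bool" where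
  gZ: "good (\<lambda>t. Z t k n)"
| gZinv: "good (\<lambda>t. inverse (Z t 0 n))"
| gphi: "good (\<lambda>t. \<phi> t n)"
| gpsi: "good (\<lambda>t. \<psi> t n)"
| gsig: "good (\<lambda>t. fls_nth (\<sigma> t n) c)"
| grho: "good (\<lambda>t. fls_nth (\<rho> t n) c)"
| gconst: "good (\<lambda>t. c)"
| gadd: "good f \<Longrightarrow> good g \<Longrightarrow> good (\<lambda>t. f t + g t)"
| gmult: "good f \<Longrightarrow> good g \<Longrightarrow> good (\<lambda>t. f t * g t)"

lemma good_neg: "good f \<Longrightarrow> good (\<lambda>t. - f t)"
  using gmult[OF gconst[of "-1"]] by simp

lemma good_diff: "good f \<Longrightarrow> good g \<Longrightarrow> good (\<lambda>t. f t - g t)"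
  using gadd[OF _ good_neg] by simp

lemma good_sum: "finite S \<Longrightarrow> (\<And>x. x \<in> S \<Longrightarrow> good (f x)) \<Longrightarrow> good (\<lambda>t. \<Sum>x\<in>S. f x t)"
proof (induction S rule: finite_induct)
  case empty then show ?case by (simp add: gconst)
next
  case (insert x S) then show ?case by (simp add: gadd)
qed

lemma good_fdiff: "(\<And>m. good (\<lambda>t. g t m)) \<Longrightarrow> good (\<lambda>t. fdiff r (g t) x)"
  unfolding fdiff_def by (intro good_sum gmult gconst) auto

lemma good_bdiff: "(\<And>m. good (\<lambda>t. g t m)) \<Longrightarrow> good (\<lambda>t. bdiff r (g t) x)"
  unfolding bdiff_def by (intro good_sum gmult gconst) auto

definition gpdo :: "((nat \<Rightarrow> real) \<Rightarrow> real pdo) \<Rightarrow> int \<Rightarrow> bool" where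
  "gpdo A d \<longleftrightarrow> (\<forall>t. bnd (A t) d) \<and> (\<forall>k n. good (\<lambda>t. A t k n))"

lemma gpdo_mult:
  assumes A: "gpdo A a" and B: "gpdo B b"
  shows "gpdo (\<lambda>t. pdo_mult (A t) (B t)) (a + b)"
  unfolding gpdo_def
proof (intro conjI allI)
  fix t show "bnd (pdo_mult (A t) (B t)) (a + b)" using A B by (intro bnd_mult) (auto simp: gpdo_def)
next
  fix k n
  have e: "pdo_mult (A t) (B t) k n = msum (A t) (B t) a b k n" for t
    using A B by (intro pdo_mult_eq) (auto simp: gpdo_def)
  show "good (\<lambda>t. pdo_mult (A t) (B t) k n)"
    unfolding e msum_def mterm_def using A B
    by (intro good_sum gmult gconst good_fdiff) (auto simp: gpdo_def)
qed

lemma gpdo_const: "bnd A d \<Longrightarrow> gpdo (\<lambda>t. A) d"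
  by (simp add: gpdo_def gconst)

lemma gpdo_Z: "gpdo Z 0"
  by (simp add: gpdo_def bZ gZ)

lemma good_Zi_neg: "good (\<lambda>t. Zi t (- int K) n)"
proof (induction K arbitrary: n rule: less_induct)
  case (less K)
  define Sg where "Sg = Sigma {0..K} (\<lambda>r. {- int K + int r..0})"
  have fin: "finite Sg" by (simp add: Sg_def)
  have mem: "(0, - int K) \<in> Sg" by (simp add: Sg_def)
  define Rest where "Rest t = (\<Sum>ri\<in>Sg - {(0, - int K)}. mterm (Zi t) (Z t) (- int K) n (fst ri) (snd ri))" for t
  have eq: "Zi t (- int K) n * Z t 0 (n - int K) + Rest t = (if K = 0 then 1 else 0)" for t
  proof -
    have "pdo_mult (Zi t) (Z t) (- int K) n = (if K = 0 then 1 else 0)"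
      using ZiZ[of t] by (simp add: mono_def)
    moreover have "pdo_mult (Zi t) (Z t) (- int K) n = (\<Sum>ri\<in>Sg. mterm (Zi t) (Z t) (- int K) n (fst ri) (snd ri))"
      unfolding pdo_mult_eq[OF bZi bZ] msum_Sigma Sg_def by (simp add: case_prod_beta')
    moreover have "(\<Sum>ri\<in>Sg. mterm (Zi t) (Z t) (- int K) n (fst ri) (snd ri))
        = mterm (Zi t) (Z t) (- int K) n 0 (- int K) + Rest t"
      unfolding Rest_def using sum.remove[OF fin mem, of "\<lambda>ri. mterm (Zi t) (Z t) (- int K) n (fst ri) (snd ri)"] by simp
    moreover have "mterm (Zi t) (Z t) (- int K) n 0 (- int K) = Zi t (- int K) n * Z t 0 (n - int K)"
      by (simp add: mterm_def)
    ultimately show ?thesis by simp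
  qed
  have "Zi t (- int K) n = ((if K = 0 then 1 else 0) - Rest t) * inverse (Z t 0 (n - int K))" for t
    using eq[of t] z0_nz[of t "n - int K"] by (simp add: field_simps)
  then have fe: "(\<lambda>t. Zi t (- int K) n) = (\<lambda>t. ((if K = 0 then 1 else 0) - Rest t) * inverse (Z t 0 (n - int K)))"
    by (intro ext)
  have gR: "good Rest"
    unfolding Rest_def[abs_def]
  proof (intro good_sum)
    fix ri assume ri: "ri \<in> Sg - {(0, - int K)}"
    obtain r i where rip: "ri = (r, i)" by fastforce
    have i: "i \<le> 0" "i > - int K" using ri rip by (auto simp: Sg_def)
    then have "i = - int (nat (- i))" "nat (- i) < K" by auto
    then have gi: "good (\<lambda>t. Zi t i n)" using less[of "nat (- i)" n] by simp
    show "good (\<lambda>t. mterm (Zi t) (Z t) (- int K) n (fst ri) (snd ri))"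
      unfolding rip mterm_def by (simp, intro gmult gi gconst good_fdiff gZ)
  qed (use fin in auto)
  show ?case unfolding fe by (intro gmult good_diff gconst gR gZinv)
qed

lemma good_Zi: "good (\<lambda>t. Zi t k n)"
proof (cases "k > 0")
  case True then show ?thesis using Zipos gconst[of 0] by simp
next
  case False
  then have "k = - int (nat (- k))" by simp
  then show ?thesis using good_Zi_neg[of "nat (- k)" n] by simp
qed

lemma gpdo_Zi: "gpdo Zi 0"
  by (simp add: gpdo_def bZi good_Zi)

lemma gpdo_L: "gpdo L 1"
  unfolding L_def'[abs_def] using gpdo_mult[OF gpdo_mult[OF gpdo_Z gpdo_const[OF bnd_mono_op]] gpdo_Zi] by simp

lemma gpdo_pow: "gpdo (\<lambda>t. pdo_pow (L t) j) (int j)"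
proof (induction j)
  case 0 then show ?case by (simp add: pdo_one_mono gpdo_const bnd_mono_op)
next
  case (Suc j)
  show ?case using gpdo_mult[OF Suc gpdo_L] by (simp add: algebra_simps)
qed

lemma gpdo_pos: assumes "gpdo A d" shows "gpdo (\<lambda>t. pdo_pos (A t)) d"
  unfolding gpdo_def
proof (intro conjI allI)
  fix t show "bnd (pdo_pos (A t)) d" using assms by (simp add: gpdo_def bnd_pos)
next
  fix k n show "good (\<lambda>t. pdo_pos (A t) k n)"
    using assms by (cases "1 \<le> k") (simp_all add: gpdo_def pdo_pos_def gconst)
qed

lemma gpdo_nonpos: assumes "gpdo A d" shows "gpdo (\<lambda>t. pdo_nonpos (A t)) 0"
  unfolding gpdo_def
proof (intro conjI allI)
  fix t show "bnd (pdo_nonpos (A t)) 0" by (rule bnd_nonpos)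
next
  fix k n show "good (\<lambda>t. pdo_nonpos (A t) k n)"
    using assms by (cases "k \<le> 0") (simp_all add: gpdo_def pdo_nonpos_def gconst)
qed

lemma gpdo_Lpos: "gpdo (Lpos j) (int j)"
  using gpdo_pos[OF gpdo_pow] .

lemma gpdo_Lneg: "gpdo (Lneg j) 0"
  using gpdo_nonpos[OF gpdo_pow] .

lemma good_pdo_apply:
  assumes A: "gpdo A d" and f: "\<And>m. good (\<lambda>t. f t m)"
  shows "good (\<lambda>t. pdo_apply (A t) (f t) n)"
proof -
  have e: "pdo_apply (A t) (f t) n = (\<Sum>k\<in>{0..nat d}. A t (int k) n * fdiff k (f t) n)" for t
    using A by (intro pdo_apply_eq) (auto simp: gpdo_def)
  show ?thesis unfolding e using A f by (intro good_sum gmult good_fdiff) (auto simp: gpdo_def)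
qed

lemma good_adj_conj_apply:
  assumes A: "gpdo A d" and f: "\<And>m. good (\<lambda>t. f t m)"
  shows "good (\<lambda>t. adj_conj_apply (A t) (f t) n)"
proof -
  have e: "adj_conj_apply (A t) (f t) n = (\<Sum>k\<in>{1..nat d}. (-1) ^ k * fdiff (k - 1) (\<lambda>m. A t (int k) m * (f t (m + 1) - f t m)) (n - int k))" for t
    using A by (intro adj_conj_apply_eq) (auto simp: gpdo_def)
  show ?thesis unfolding e using A f
    by (intro good_sum gmult gconst good_fdiff good_diff) (auto simp: gpdo_def)
qed


definition fgood :: "((nat \<Rightarrow> real) \<Rightarrow> real fls) \<Rightarrow> bool" where
  "fgood F \<longleftrightarrow> (\<exists>d. \<forall>t c. c < d \<longrightarrow> fls_nth (F t) c = 0) \<and> (\<forall>c. good (\<lambda>t. fls_nth (F t) c))"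

lemma fgoodI: "(\<And>t c. c < d \<Longrightarrow> fls_nth (F t) c = 0) \<Longrightarrow> (\<And>c. good (\<lambda>t. fls_nth (F t) c)) \<Longrightarrow> fgood F"
  unfolding fgood_def by blast

lemma fgood_bnd: "fgood F \<Longrightarrow> \<exists>d. \<forall>t c. c < d \<longrightarrow> fls_nth (F t) c = 0"
  by (simp add: fgood_def)

lemma fgood_good: "fgood F \<Longrightarrow> good (\<lambda>t. fls_nth (F t) c)"
  by (simp add: fgood_def)

lemma fgood_mult:
  assumes F: "fgood F" and H: "fgood H"
  shows "fgood (\<lambda>t. F t * H t)"
proof -
  obtain a where a: "\<And>t c. c < a \<Longrightarrow> fls_nth (F t) c = 0" using fgood_bnd[OF F] by blast
  obtain b where b: "\<And>t c. c < b \<Longrightarrow> fls_nth (H t) c = 0" using fgood_bnd[OF H] by blast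
  have e: "fls_nth (F t * H t) c = (\<Sum>x\<in>{a..c - b}. fls_nth (F t) x * fls_nth (H t) (c - x))" for t c
    by (rule fls_mult_nth_bnd) (auto simp: a b)
  show ?thesis
  proof (rule fgoodI[where d = "a + b"])
    fix t c assume "c < a + b" then show "fls_nth (F t * H t) c = 0" by (simp add: e)
  next
    fix c show "good (\<lambda>t. fls_nth (F t * H t) c)"
      unfolding e by (intro good_sum gmult fgood_good[OF F] fgood_good[OF H]) auto
  qed
qed

lemma fgood_add:
  assumes F: "fgood F" and H: "fgood H"
  shows "fgood (\<lambda>t. F t + H t)"
proof -
  obtain a where a: "\<And>t c. c < a \<Longrightarrow> fls_nth (F t) c = 0" using fgood_bnd[OF F] by blast
  obtain b where b: "\<And>t c. c < b \<Longrightarrow> fls_nth (H t) c = 0" using fgood_bnd[OF H] by blast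
  show ?thesis
    by (rule fgoodI[where d = "min a b"]) (auto simp: a b intro: gadd fgood_good[OF F] fgood_good[OF H])
qed

lemma fgood_const: "fgood (\<lambda>t. K)"
  by (rule fgoodI[where d = "fls_subdegree K"]) (auto simp: fls_eq0_below_subdegree gconst)

lemma fgood_diff:
  assumes F: "fgood F" and H: "fgood H"
  shows "fgood (\<lambda>t. F t - H t)"
  using fgood_add[OF F fgood_mult[OF fgood_const[of "-1"] H]] by simp

lemma fgood_sum: "finite S \<Longrightarrow> (\<And>x. x \<in> S \<Longrightarrow> fgood (F x)) \<Longrightarrow> fgood (\<lambda>t. \<Sum>x\<in>S. F x t)"
proof (induction S rule: finite_induct)
  case empty then show ?case using fgood_const[of 0] by simp
next
  case (insert x S) then show ?case by (simp add: fgood_add)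
qed

lemma fgood_fls_const: assumes "good f" shows "fgood (\<lambda>t. fls_const (f t))"
proof (rule fgoodI[where d = 0])
  fix t and c :: int assume "c < 0" then show "fls_nth (fls_const (f t)) c = 0" by simp
next
  fix c :: int show "good (\<lambda>t. fls_nth (fls_const (f t)) c)"
    using assms by (cases "c = 0") (simp_all add: gconst)
qed

lemma fgood_fdiff: "(\<And>m. fgood (\<lambda>t. g t m)) \<Longrightarrow> fgood (\<lambda>t. fdiff r (g t) x)"
  unfolding fdiff_def by (intro fgood_sum fgood_mult fgood_const) auto

lemma fgood_what: "fgood (\<lambda>t. what Z t a)"
  by (rule fgoodI[where d = "- a"]) (auto simp: what_order what_nth intro!: good_sum gmult gZ gconst)

lemma wstar_eq: "wstarhat Zi t b = adj_act_neg (\<lambda>k m. if k \<le> -1 then Zi t (k + 1) (m - 1) else 0) b"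
  by (simp add: wstarhat_def)

lemma bC: "bnd (\<lambda>k m. if k \<le> -1 then Zi t (k + 1) (m - 1) else 0) (-1)"
  by (simp add: bnd_def)

lemma wstar_order: "c < b + 1 \<Longrightarrow> fls_nth (wstarhat Zi t b) c = 0"
  unfolding wstar_eq by (rule adj_order[OF bC])

lemma fgood_wstar: "fgood (\<lambda>t. wstarhat Zi t b)"
proof -
  define F where "F t = fps_to_fls (Abs_fps (\<lambda>m. if m = 0 then 0 else
       (\<Sum>k\<in>{- int m .. -1}. of_int (ibinom k (nat (k + int m))) *
           bdiff (nat (k + int m)) ((\<lambda>k m. if k \<le> -1 then Zi t (k + 1) (m - 1) else 0) k) (b + int m))))" for t
  have e: "wstarhat Zi t b = F t * onepl (- b)" for t
    by (simp add: wstar_eq adj_act_neg_def F_def)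
  have gF: "fgood F"
  proof (rule fgoodI[where d = 0])
    fix t and c :: int assume "c < 0" then show "fls_nth (F t) c = 0" by (simp add: F_def)
  next
    fix c
    have "good (\<lambda>t. if c \<le> 0 then 0 else (\<Sum>k\<in>{- c .. -1}. of_int (ibinom k (nat (k + c))) *
           bdiff (nat (k + c)) ((\<lambda>k m. if k \<le> -1 then Zi t (k + 1) (m - 1) else 0) k) (b + c)))"
    proof (cases "c \<le> 0")
      case True then show ?thesis by (simp add: gconst)
    next
      case False
      have "good (\<lambda>t. (\<Sum>k\<in>{- c .. -1}. of_int (ibinom k (nat (k + c))) *
           bdiff (nat (k + c)) ((\<lambda>k m. if k \<le> -1 then Zi t (k + 1) (m - 1) else 0) k) (b + c)))"
      proof (intro good_sum gmult gconst good_bdiff)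
        fix k m assume "k \<in> {- c .. -1}"
        then show "good (\<lambda>t. if k \<le> -1 then Zi t (k + 1) (m - 1) else 0)" by (simp add: good_Zi)
      qed auto
      then show ?thesis using False by simp
    qed
    then show "good (\<lambda>t. fls_nth (F t) c)" unfolding F_def adj_fps_nth .
  qed
  show ?thesis unfolding e by (rule fgood_mult[OF gF fgood_const])
qed

definition fgpdo :: "((nat \<Rightarrow> real) \<Rightarrow> real fls pdo) \<Rightarrow> int \<Rightarrow> bool" where
  "fgpdo A d \<longleftrightarrow> (\<forall>t. bnd (A t) d) \<and> (\<forall>k n. fgood (\<lambda>t. A t k n))"

lemma fgpdo_mult:
  assumes A: "fgpdo A a" and B: "fgpdo B b"
  shows "fgpdo (\<lambda>t. pdo_mult (A t) (B t)) (a + b)"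
  unfolding fgpdo_def
proof (intro conjI allI)
  fix t show "bnd (pdo_mult (A t) (B t)) (a + b)" using A B by (intro bnd_mult) (auto simp: fgpdo_def)
next
  fix k n
  have e: "pdo_mult (A t) (B t) k n = msum (A t) (B t) a b k n" for t
    using A B by (intro pdo_mult_eq) (auto simp: fgpdo_def)
  show "fgood (\<lambda>t. pdo_mult (A t) (B t) k n)"
    unfolding e msum_def mterm_def using A B
    by (intro fgood_sum fgood_mult fgood_const fgood_fdiff) (auto simp: fgpdo_def)
qed

lemma fgpdo_const: "bnd A d \<Longrightarrow> fgpdo (\<lambda>t. A) d"
  by (simp add: fgpdo_def fgood_const)

lemma fgpdo_fun: "(\<And>m. fgood (\<lambda>t. F t m)) \<Longrightarrow> fgpdo (\<lambda>t. pdo_fun (F t)) 0"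
  unfolding fgpdo_def
proof (intro conjI allI)
  fix t show "bnd (pdo_fun (F t)) 0" by (simp add: bnd_def pdo_fun_def)
next
  fix k n assume "\<And>m. fgood (\<lambda>t. F t m)"
  then show "fgood (\<lambda>t. pdo_fun (F t) k n)"
    by (cases "k = 0") (simp_all add: pdo_fun_def fgood_const)
qed

lemma fgpdo_map: "gpdo A d \<Longrightarrow> fgpdo (\<lambda>t. pdo_map fls_const (A t)) d"
  by (auto simp: fgpdo_def gpdo_def bnd_map pdo_map_def intro: fgood_fls_const)

definition Rx :: "((nat \<Rightarrow> real) \<Rightarrow> int \<Rightarrow> real fls) \<Rightarrow> ((nat \<Rightarrow> real) \<Rightarrow> int \<Rightarrow> real fls) \<Rightarrow> nat \<Rightarrow> (nat \<Rightarrow> real) \<Rightarrow> real fls pdo" where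
  "Rx f g i t = pdo_mult (pdo_mult (pdo_mult (pdo_mult pdo_Gamma pdo_Delta_inv)
                      (pdo_fun (\<lambda>m. g t (m + 1) - g t m)))
                   (pdo_mult (pdo_map fls_const (pdo_pos (pdo_pow (L t) i))) (pdo_fun (f t))))
                 pdo_Delta_inv"

lemma bGamma: "bnd pdo_Gamma 1"
  by (simp add: bnd_def pdo_Gamma_def)

lemma fgpdo_Rx:
  assumes f: "\<And>m. fgood (\<lambda>t. f t m)" and g: "\<And>m. fgood (\<lambda>t. g t m)"
  shows "fgpdo (Rx f g i) (int i - 1)"
proof -
  have 1: "fgpdo (\<lambda>t. pdo_mult pdo_Gamma pdo_Delta_inv) 0"
    using fgpdo_const[OF bnd_mult[OF bGamma bnd_mono_op[of "-1"]]] by (simp add: pdo_Delta_inv_mono)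
  have 2: "fgpdo (\<lambda>t. pdo_fun (\<lambda>m. g t (m + 1) - g t m)) 0" by (intro fgpdo_fun fgood_diff g)
  have 3: "fgpdo (\<lambda>t. pdo_mult (pdo_map fls_const (pdo_pos (pdo_pow (L t) i))) (pdo_fun (f t))) (int i)"
    using fgpdo_mult[OF fgpdo_map[OF gpdo_Lpos] fgpdo_fun[OF f]] by simp
  have 4: "fgpdo (\<lambda>t. pdo_Delta_inv :: real fls pdo) (-1)"
    by (simp add: pdo_Delta_inv_mono fgpdo_const bnd_mono_op)
  show ?thesis unfolding Rx_def[abs_def]
    using fgpdo_mult[OF fgpdo_mult[OF fgpdo_mult[OF 1 2] 3] 4] by simp
qed

lemma good_Rx:
  assumes f: "\<And>m. fgood (\<lambda>t. f t m)" and g: "\<And>m. fgood (\<lambda>t. g t m)"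
  shows "good (\<lambda>t. fls_nth (pdo_res (Rx f g i t) n) c)"
  using fgpdo_Rx[OF f g, where i = i] unfolding fgpdo_def pdo_res_def by (auto intro: fgood_good)

lemma S1_eq: "1 \<le> i \<Longrightarrow> pdiff i (\<lambda>s. fls_nth (\<sigma> s n) k) t \<and>
    pd i (\<lambda>s. fls_nth (\<sigma> s n) k) t - fls_nth (\<sigma> t n) (k + int i) = fls_nth (pdo_res (Rx (\<lambda>t n. fls_const (\<phi> t n)) (wstarhat Zi) i t) n) k"
  using S1 unfolding sq_pot_def Rx_def by auto

lemma S2_eq: "1 \<le> i \<Longrightarrow> pdiff i (\<lambda>s. fls_nth (\<rho> s n) k) t \<and>
    pd i (\<lambda>s. fls_nth (\<rho> s n) k) t + fls_nth (\<rho> t n) (k + int i) = fls_nth (pdo_res (Rx (what Z) (\<lambda>t n. fls_const (\<psi> t n)) i t) n) k"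
  using S2 unfolding sq_pot_def Rx_def by auto

lemma S1_diff: "\<sigma> t (n + 1) - \<sigma> t n = fls_const (\<phi> t n) * (wstarhat Zi t (n + 1) - wstarhat Zi t n)"
  using S1 unfolding sq_pot_def by auto

lemma S2_diff: "\<rho> t (n + 1) - \<rho> t n = what Z t n * (fls_const (\<psi> t (n + 1)) - fls_const (\<psi> t n))"
  using S2 unfolding sq_pot_def by auto

lemma S1_bnd: "\<exists>d. \<forall>t k. k < d \<longrightarrow> fls_nth (\<sigma> t n) k = 0"
  using S1 unfolding sq_pot_def by auto

lemma S2_bnd: "\<exists>d. \<forall>t k. k < d \<longrightarrow> fls_nth (\<rho> t n) k = 0"
  using S2 unfolding sq_pot_def by auto

lemma good_R1: "good (\<lambda>t. fls_nth (pdo_res (Rx (\<lambda>t n. fls_const (\<phi> t n)) (wstarhat Zi) i t) n) c)"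
  by (rule good_Rx) (auto intro: fgood_fls_const gphi fgood_wstar)

lemma good_R2: "good (\<lambda>t. fls_nth (pdo_res (Rx (what Z) (\<lambda>t n. fls_const (\<psi> t n)) i t) n) c)"
  by (rule good_Rx) (auto intro: fgood_fls_const gpsi fgood_what)

section \<open>Good functions are smooth\<close>

lemma good_deriv: "good f \<Longrightarrow> 1 \<le> j \<Longrightarrow> \<exists>D. good D \<and> (\<forall>t. hpd j f t (D t))"
proof (induction rule: good.induct)
  case (gZ k n)
  show ?case using Z_hpd[OF gZ] gpdo_mult[OF gpdo_Lneg gpdo_Z] unfolding gpdo_def
    by (intro exI[of _ "\<lambda>t. - pdo_mult (Lneg j t) (Z t) k n"]) (auto intro: good_neg)
next
  case (gZinv n)
  have gD: "good (\<lambda>t. - pdo_mult (Lneg j t) (Z t) 0 n)"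
    using gpdo_mult[OF gpdo_Lneg gpdo_Z] unfolding gpdo_def by (auto intro: good_neg)
  have h: "hpd j (\<lambda>t. inverse (Z t 0 n)) t (- ((- pdo_mult (Lneg j t) (Z t) 0 n) * inverse (Z t 0 n) ^ 2))" for t
    by (rule hpd_inverse[OF Z_hpd[OF gZinv] z0_nz])
  have g: "good (\<lambda>t. - ((- pdo_mult (Lneg j t) (Z t) 0 n) * inverse (Z t 0 n) ^ 2))"
    unfolding power2_eq_square by (intro good_neg gmult gD good.gZinv)
  show ?case using h g by blast
next
  case (gphi n)
  have "pdiff j (\<lambda>s. \<phi> s n) t \<and> pd j (\<lambda>s. \<phi> s n) t = pdo_apply (Lpos j t) (\<phi> t) n" for t
    using eig gphi by (auto simp: eigenfunction_def)
  then have "hpd j (\<lambda>s. \<phi> s n) t (pdo_apply (Lpos j t) (\<phi> t) n)" for t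
    using pdiff_hpd by fastforce
  moreover have "good (\<lambda>t. pdo_apply (Lpos j t) (\<phi> t) n)"
    by (rule good_pdo_apply[OF gpdo_Lpos]) (rule good.gphi)
  ultimately show ?case by blast
next
  case (gpsi n)
  have "pdiff j (\<lambda>s. \<psi> s n) t \<and> pd j (\<lambda>s. \<psi> s n) t = - adj_conj_apply (Lpos j t) (\<psi> t) n" for t
    using adj gpsi by (auto simp: adjoint_eigenfunction_def)
  then have "hpd j (\<lambda>s. \<psi> s n) t (- adj_conj_apply (Lpos j t) (\<psi> t) n)" for t
    using pdiff_hpd by fastforce
  moreover have "good (\<lambda>t. - adj_conj_apply (Lpos j t) (\<psi> t) n)"
    by (rule good_neg, rule good_adj_conj_apply[OF gpdo_Lpos]) (rule good.gpsi)
  ultimately show ?case by blast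
next
  case (gsig n c)
  have "hpd j (\<lambda>s. fls_nth (\<sigma> s n) c) t (fls_nth (pdo_res (Rx (\<lambda>t n. fls_const (\<phi> t n)) (wstarhat Zi) j t) n) c + fls_nth (\<sigma> t n) (c + int j))" for t
  proof -
    have 1: "pdiff j (\<lambda>s. fls_nth (\<sigma> s n) c) t" and 2: "pd j (\<lambda>s. fls_nth (\<sigma> s n) c) t - fls_nth (\<sigma> t n) (c + int j) = fls_nth (pdo_res (Rx (\<lambda>t n. fls_const (\<phi> t n)) (wstarhat Zi) j t) n) c"
      using S1_eq[OF gsig, of n c t] by auto
    have "pd j (\<lambda>s. fls_nth (\<sigma> s n) c) t = fls_nth (pdo_res (Rx (\<lambda>t n. fls_const (\<phi> t n)) (wstarhat Zi) j t) n) c + fls_nth (\<sigma> t n) (c + int j)"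
      using 2 by simp
    then show ?thesis using pdiff_hpd[OF 1] by simp
  qed
  moreover have "good (\<lambda>t. fls_nth (pdo_res (Rx (\<lambda>t n. fls_const (\<phi> t n)) (wstarhat Zi) j t) n) c + fls_nth (\<sigma> t n) (c + int j))"
    by (intro gadd good_R1 good.gsig)
  ultimately show ?case by blast
next
  case (grho n c)
  have "hpd j (\<lambda>s. fls_nth (\<rho> s n) c) t (fls_nth (pdo_res (Rx (what Z) (\<lambda>t n. fls_const (\<psi> t n)) j t) n) c - fls_nth (\<rho> t n) (c + int j))" for t
  proof -
    have 1: "pdiff j (\<lambda>s. fls_nth (\<rho> s n) c) t" and 2: "pd j (\<lambda>s. fls_nth (\<rho> s n) c) t + fls_nth (\<rho> t n) (c + int j) = fls_nth (pdo_res (Rx (what Z) (\<lambda>t n. fls_const (\<psi> t n)) j t) n) c"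
      using S2_eq[OF grho, of n c t] by auto
    have "pd j (\<lambda>s. fls_nth (\<rho> s n) c) t = fls_nth (pdo_res (Rx (what Z) (\<lambda>t n. fls_const (\<psi> t n)) j t) n) c - fls_nth (\<rho> t n) (c + int j)"
      using 2 by simp
    then show ?thesis using pdiff_hpd[OF 1] by simp
  qed
  moreover have "good (\<lambda>t. fls_nth (pdo_res (Rx (what Z) (\<lambda>t n. fls_const (\<psi> t n)) j t) n) c - fls_nth (\<rho> t n) (c + int j))"
    by (intro good_diff good_R2 good.grho)
  ultimately show ?case by blast
next
  case (gconst c)
  show ?case by (intro exI[of _ "\<lambda>t. 0"]) (auto intro: good.gconst hpd_const)
next
  case (gadd f g)
  then obtain Df Dg where "good Df" "\<And>t. hpd j f t (Df t)" "good Dg" "\<And>t. hpd j g t (Dg t)" by blast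
  then show ?case by (intro exI[of _ "\<lambda>t. Df t + Dg t"]) (auto intro: good.gadd hpd_add)
next
  case (gmult f g)
  then obtain Df Dg where "good Df" "\<And>t. hpd j f t (Df t)" "good Dg" "\<And>t. hpd j g t (Dg t)" by blast
  then show ?case using gmult.hyps
    by (intro exI[of _ "\<lambda>t. Df t * g t + f t * Dg t"]) (auto intro: good.gadd good.gmult hpd_mult)
qed

lemma good_pdiff: "good f \<Longrightarrow> 1 \<le> j \<Longrightarrow> pdiff j f t"
  using good_deriv hpd_pd(1) by blast

lemma good_pd: "good f \<Longrightarrow> 1 \<le> j \<Longrightarrow> good (\<lambda>t. pd j f t)"
proof -
  assume "good f" "1 \<le> j"
  then obtain D where D: "good D" "\<And>t. hpd j f t (D t)" using good_deriv by blast
  then have "(\<lambda>t. pd j f t) = D" using hpd_pd(2) by blast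
  then show ?thesis using D by simp
qed

end


lemma order_prop:
  fixes F R :: "(nat \<Rightarrow> real) \<Rightarrow> int \<Rightarrow> real"
  assumes bd: "\<And>t k. k < d \<Longrightarrow> F t k = 0"
    and rec: "\<And>t k. k < N \<Longrightarrow> F t (k + 1) = e * pd 1 (\<lambda>s. F s k) t + R t k"
    and R0: "\<And>t k. k < N \<Longrightarrow> R t k = 0"
    and k: "k \<le> N"
  shows "F t k = 0"
proof -
  have H: "k < d + int m \<Longrightarrow> k \<le> N \<Longrightarrow> F t k = 0" for m k t
  proof (induction m arbitrary: k t)
    case 0 then show ?case using bd by simp
  next
    case (Suc m)
    show ?case
    proof (cases "k < d + int m")
      case True then show ?thesis by (rule Suc.IH[OF _ Suc.prems(2)])
    next
      case False
      then have kk: "k - 1 < d + int m" "k - 1 \<le> N" "k - 1 < N" using Suc.prems by auto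
      have z: "F s (k - 1) = 0" for s by (rule Suc.IH[OF kk(1) kk(2)])
      have "F t (k - 1 + 1) = e * pd 1 (\<lambda>s. F s (k - 1)) t + R t (k - 1)" by (rule rec[OF kk(3)])
      also have "\<dots> = 0" using z R0[OF kk(3)] by (simp add: pd_zero)
      finally show ?thesis by simp
    qed
  qed
  have mk: "k < d + int (nat (k - d + 1))" by simp
  show ?thesis by (rule H[OF mk k])
qed

lemma nth_const_mid: "fls_nth ((Q :: 'a::comm_ring_1 fls) * (fls_const a * Y)) c = a * fls_nth (Q * Y) c"
proof -
  have e: "Q * (fls_const a * Y) = fls_const a * (Q * Y)" by (simp add: mult.left_commute)
  show ?thesis unfolding e by (rule fls_mult_const_nth(1))
qed

lemma nth_pm1: "fls_nth ((Q :: 'a::comm_ring_1 fls) * ((-1) ^ k * Y)) c = (-1) ^ k * fls_nth (Q * Y) c"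
proof (induction k)
  case 0 then show ?case by simp
next
  case (Suc k)
  have "Q * ((-1) ^ Suc k * Y) = - (Q * ((-1) ^ k * Y))" by simp
  then show ?case using Suc by simp
qed

lemma fdiff_lin:
  fixes Q :: "real fls"
  shows "fls_nth (Q * fdiff r H x) c = fdiff r (\<lambda>m. fls_nth (Q * H m) c) x"
proof -
  have "fls_nth (Q * fdiff r H x) c = (\<Sum>s\<le>r. fls_nth (Q * (fls_const (of_int ((-1) ^ (r - s) * int (r choose s))) * H (x + int s))) c)"
    unfolding fdiff_def by (simp add: sum_distrib_left fls_nth_sum fls_of_int)
  also have "\<dots> = fdiff r (\<lambda>m. fls_nth (Q * H m) c) x"
    unfolding fdiff_def nth_const_mid ..
  finally show ?thesis .
qed

lemma lin_apply:
  assumes A: "bnd (A :: real pdo) d"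
  shows "fls_nth (Q * pdo_apply (pdo_map fls_const A) F a) c = pdo_apply A (\<lambda>m. fls_nth (Q * F m) c) a"
proof -
  have "fls_nth (Q * pdo_apply (pdo_map fls_const A) F a) c = (\<Sum>k\<in>{0..nat d}. fls_nth (Q * (fls_const (A (int k) a) * fdiff k F a)) c)"
    by (simp add: pdo_apply_eq[OF bnd_map[OF A]] pdo_map_def sum_distrib_left fls_nth_sum)
  also have "\<dots> = pdo_apply A (\<lambda>m. fls_nth (Q * F m) c) a"
    unfolding nth_const_mid fdiff_lin pdo_apply_eq[OF A] ..
  finally show ?thesis .
qed

lemma lin_adj:
  assumes A: "bnd (A :: real pdo) d"
  shows "fls_nth (Q * adj_conj_apply (pdo_map fls_const A) F b) c = adj_conj_apply A (\<lambda>m. fls_nth (Q * F m) c) b"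
proof -
  have "fls_nth (Q * adj_conj_apply (pdo_map fls_const A) F b) c
      = (\<Sum>k\<in>{1..nat d}. fls_nth (Q * (((-1) ^ k) * fdiff (k - 1) (\<lambda>m. fls_const (A (int k) m) * (F (m + 1) - F m)) (b - int k))) c)"
    by (simp add: adj_conj_apply_eq[OF bnd_map[OF A]] pdo_map_def sum_distrib_left fls_nth_sum)
  also have "\<dots> = (\<Sum>k\<in>{1..nat d}. (-1) ^ k * fdiff (k - 1) (\<lambda>m. fls_nth (Q * (fls_const (A (int k) m) * (F (m + 1) - F m))) c) (b - int k))"
    unfolding nth_pm1 fdiff_lin ..
  also have "\<dots> = adj_conj_apply A (\<lambda>m. fls_nth (Q * F m) c) b"
    unfolding adj_conj_apply_eq[OF A] nth_const_mid by (simp add: algebra_simps)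
  finally show ?thesis .
qed

lemma pdo_apply_cong:
  assumes A: "bnd A d" and fg: "\<And>m. m \<ge> a \<Longrightarrow> f m = g m"
  shows "pdo_apply A f a = pdo_apply A g a"
  unfolding pdo_apply_eq[OF A]
proof (rule sum.cong[OF refl])
  fix k
  have "fdiff k f a = fdiff k g a" by (rule fdiff_cong) (simp add: fg)
  then show "A (int k) a * fdiff k f a = A (int k) a * fdiff k g a" by simp
qed

lemma adj_cong:
  assumes A: "bnd A d" and fg: "\<And>m. m \<le> b \<Longrightarrow> f m = g m"
  shows "adj_conj_apply A f b = adj_conj_apply A g b"
  unfolding adj_conj_apply_eq[OF A]
proof (rule sum.cong[OF refl])
  fix k assume k: "k \<in> {1..nat d}"
  have "fdiff (k - 1) (\<lambda>m. A (int k) m * (f (m + 1) - f m)) (b - int k) = fdiff (k - 1) (\<lambda>m. A (int k) m * (g (m + 1) - g m)) (b - int k)"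
  proof (rule fdiff_cong)
    fix s assume s: "s \<le> k - 1"
    then have "b - int k + int s + 1 \<le> b" using k by auto
    then show "A (int k) (b - int k + int s) * (f (b - int k + int s + 1) - f (b - int k + int s))
      = A (int k) (b - int k + int s) * (g (b - int k + int s + 1) - g (b - int k + int s))"
      using fg by simp
  qed
  then show "(-1) ^ k * fdiff (k - 1) (\<lambda>m. A (int k) m * (f (m + 1) - f m)) (b - int k) = (-1) ^ k * fdiff (k - 1) (\<lambda>m. A (int k) m * (g (m + 1) - g m)) (b - int k)"
    by simp
qed

lemma hpd_unique: "hpd i f t D1 \<Longrightarrow> hpd i f t D2 \<Longrightarrow> D1 = D2"
  unfolding hpd_def by (rule DERIV_unique)

context dm
begin

lemma fg_sig: "fgood (\<lambda>t. \<sigma> t n)"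
proof -
  obtain d where d: "\<forall>t k. k < d \<longrightarrow> fls_nth (\<sigma> t n) k = 0" using S1_bnd[of n] by blast
  show ?thesis by (rule fgoodI[where d = d]) (use d in simp, rule gsig)
qed

lemma fg_rho: "fgood (\<lambda>t. \<rho> t n)"
proof -
  obtain d where d: "\<forall>t k. k < d \<longrightarrow> fls_nth (\<rho> t n) k = 0" using S2_bnd[of n] by blast
  show ?thesis by (rule fgoodI[where d = d]) (use d in simp, rule grho)
qed

lemma fg_T: "fgood (\<lambda>t. what Z t n * fls_const (\<psi> t n) - \<rho> t n)"
  by (intro fgood_diff fgood_mult fgood_what fgood_fls_const gpsi fg_rho)

lemma fgood_Dtw:
  assumes F: "fgood (\<lambda>t. F t n)" and j: "1 \<le> j"
  shows "fgood (\<lambda>t. Dtw e j F t n)"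
proof -
  obtain d where d: "\<And>t c. c < d \<Longrightarrow> fls_nth (F t n) c = 0" using fgood_bnd[OF F] by blast
  show ?thesis
  proof (rule fgoodI[where d = "d - int j"])
    fix t c assume "c < d - int j" then show "fls_nth (Dtw e j F t n) c = 0" using Dtw_order[of d F n] d by blast
  next
    fix c
    have "(\<lambda>t. fls_nth (Dtw e j F t n) c) = (\<lambda>t. pd j (\<lambda>s. fls_nth (F s n) c) t + e * fls_nth (F t n) (c + int j))"
      by (intro ext Dtw_nth[of d F n, OF d])
    then show "good (\<lambda>t. fls_nth (Dtw e j F t n) c)"
      using F j by (simp add: gadd gmult gconst good_pd fgood_good)
  qed
qed

lemma fgood_Dtw_list:
  assumes "\<forall>i\<in>set is. 1 \<le> i" and "\<And>n. fgood (\<lambda>t. F t n)"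
  shows "fgood (\<lambda>t. Dtw_list e is F t n)"
  using assms
proof (induction "is" arbitrary: n)
  case Nil then show ?case by simp
next
  case (Cons i "is")
  then have "\<And>n. fgood (\<lambda>t. Dtw_list e is F t n)" "1 \<le> i" by auto
  then show ?case by (simp add: fgood_Dtw)
qed

lemma PRt:
  assumes W: "fgood (\<lambda>t. W t a)" and V: "fgood (\<lambda>t. V t n)" and j: "1 \<le> j"
  shows "hpd j (\<lambda>s. fls_nth (W s a * V s n) c) t
           (fls_nth (Dtw e j W t a * V t n) c + fls_nth (W t a * Dtw (- e) j V t n) c)"
proof -
  obtain dW where dW: "\<And>s c. c < dW \<Longrightarrow> fls_nth (W s a) c = 0" using fgood_bnd[OF W] by blast
  obtain dV where dV: "\<And>s c. c < dV \<Longrightarrow> fls_nth (V s n) c = 0" using fgood_bnd[OF V] by blast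
  have pW: "\<And>c. pdiff j (\<lambda>s. fls_nth (W s a) c) t" by (rule good_pdiff[OF fgood_good[OF W] j])
  have pV: "\<And>c. pdiff j (\<lambda>s. fls_nth (V s n) c) t" by (rule good_pdiff[OF fgood_good[OF V] j])
  show ?thesis
    by (rule Dtw_PR[where dW = dW and W = W and a = a and dV = dV and V = V and n = n, OF dW dV pW pV])
qed

lemma bil: "fls_nth (what Z t a * wstarhat Zi t b) 1 = (if b \<le> a then 1 else 0)"
  unfolding what_act' wstar_eq by (rule bilinear[OF bZ bZi ZZi])


lemma bDi: "bnd (pdo_Delta_inv :: 'a::comm_ring_1 pdo) (-1)"
  by (simp add: pdo_Delta_inv_mono bnd_mono_op)

lemma oGamma: "ordge (pdo_Gamma k m) 0"
  by (simp add: pdo_Gamma_def ordge_def)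

lemma oDi: "ordge (pdo_Delta_inv k m) 0"
  by (simp add: pdo_Delta_inv_def ordge_def)

lemma bP1: "bnd (pdo_mult pdo_Gamma pdo_Delta_inv :: real fls pdo) 0"
  using bnd_mult[OF bGamma bDi] by simp

lemma oP1: "ordge (pdo_mult pdo_Gamma pdo_Delta_inv k m) 0"
  by (rule ordge_pdo_mult[OF bGamma bDi, where oA = "\<lambda>_. 0" and oB = "\<lambda>_ _. 0"]) (auto intro: oGamma oDi)

lemma R1_order:
  assumes c: "c < n"
  shows "fls_nth (pdo_res (Rx (\<lambda>t n. fls_const (\<phi> t n)) (wstarhat Zi) 1 t) n) c = 0"
proof -
  define H where "H = pdo_fun (\<lambda>m. wstarhat Zi t (m + 1) - wstarhat Zi t m)"
  have bH: "bnd H 0" by (simp add: H_def bnd_def pdo_fun_def)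
  have oH: "ordge (H k m) (m + k + 1)" for k m
  proof (cases "k = 0")
    case True
    have "ordge (wstarhat Zi t (m + 1)) (m + 1)" by (auto simp: ordge_def wstar_order)
    moreover have "ordge (wstarhat Zi t m) (m + 1)" by (auto simp: ordge_def wstar_order)
    ultimately show ?thesis using True by (simp add: H_def pdo_fun_def ordge_diff)
  next
    case False then show ?thesis by (simp add: H_def pdo_fun_def ordge_zero)
  qed
  define P2 where "P2 = pdo_mult (pdo_mult pdo_Gamma pdo_Delta_inv) H"
  have bP2: "bnd P2 0" unfolding P2_def using bnd_mult[OF bP1 bH] by simp
  have oP2: "ordge (P2 k m) (m + k + 1)" for k m
    unfolding P2_def by (rule ordge_pdo_mult[OF bP1 bH, where oA = "\<lambda>_. 0" and oB = "\<lambda>k m. m + k + 1"]) (auto intro: oP1 oH)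
  define P3 where "P3 = pdo_mult (pdo_map fls_const (Lpos 1 t)) (pdo_fun (\<lambda>m. fls_const (\<phi> t m)))"
  have bF: "bnd (pdo_fun (\<lambda>m. fls_const (\<phi> t m))) 0" by (simp add: bnd_def pdo_fun_def)
  have bP3: "bnd P3 1" unfolding P3_def using bnd_mult[OF bnd_map[OF bLp[where j = 1 and t = t]] bF] by simp
  have oP3: "ordge (P3 k m) 0" for k m
    unfolding P3_def
    by (rule ordge_pdo_mult[OF bnd_map[OF bLp] bF, where oA = "\<lambda>_. 0" and oB = "\<lambda>_ _. 0"])
      (auto simp: pdo_map_def pdo_fun_def ordge_fls_const ordge_zero)
  define P4 where "P4 = pdo_mult P2 P3"
  have bP4: "bnd P4 1" unfolding P4_def using bnd_mult[OF bP2 bP3] by simp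
  have oP4: "ordge (P4 k m) (m + k)" for k m
    unfolding P4_def by (rule ordge_pdo_mult[OF bP2 bP3, where oA = "\<lambda>i. m + i + 1" and oB = "\<lambda>_ _. 0"]) (auto intro: oP2 oP3)
  have oP5: "ordge (pdo_mult P4 pdo_Delta_inv k m) (m + k + 1)" for k m
    by (rule ordge_pdo_mult[OF bP4 bDi, where oA = "\<lambda>i. m + i" and oB = "\<lambda>_ _. 0"]) (auto intro: oP4 oDi)
  have "Rx (\<lambda>t n. fls_const (\<phi> t n)) (wstarhat Zi) 1 t = pdo_mult P4 pdo_Delta_inv"
    by (simp add: Rx_def P4_def P3_def P2_def H_def)
  then show ?thesis using oP5[of "-1" n] c by (simp add: pdo_res_def ordge_def)
qed

lemma R2_order:
  assumes c: "c < - n - 1"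
  shows "fls_nth (pdo_res (Rx (what Z) (\<lambda>t n. fls_const (\<psi> t n)) 1 t) n) c = 0"
proof -
  define H where "H = pdo_fun (\<lambda>m. fls_const (\<psi> t (m + 1)) - fls_const (\<psi> t m))"
  have bH: "bnd H 0" by (simp add: H_def bnd_def pdo_fun_def)
  have oH: "ordge (H k m) 0" for k m
    by (simp add: H_def pdo_fun_def ordge_diff ordge_fls_const ordge_zero)
  define P2 where "P2 = pdo_mult (pdo_mult pdo_Gamma pdo_Delta_inv) H"
  have bP2: "bnd P2 0" unfolding P2_def using bnd_mult[OF bP1 bH] by simp
  have oP2: "ordge (P2 k m) 0" for k m
    unfolding P2_def by (rule ordge_pdo_mult[OF bP1 bH, where oA = "\<lambda>_. 0" and oB = "\<lambda>_ _. 0"]) (auto intro: oP1 oH)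
  have bW: "bnd (pdo_fun (what Z t)) 0" by (simp add: bnd_def pdo_fun_def)
  have oW: "ordge (pdo_fun (what Z t) k m) (- m)" for k m
    by (auto simp: pdo_fun_def ordge_def what_order)
  define P3 where "P3 = pdo_mult (pdo_map fls_const (Lpos 1 t)) (pdo_fun (what Z t))"
  have bP3: "bnd P3 1" unfolding P3_def using bnd_mult[OF bnd_map[OF bLp[where j = 1 and t = t]] bW] by simp
  have oP3: "ordge (P3 k m) (- m - 1)" for k m
    unfolding P3_def
    by (rule ordge_pdo_mult[OF bnd_map[OF bLp] bW, where oA = "\<lambda>_. 0" and oB = "\<lambda>k m. - m"])
      (auto simp: pdo_map_def ordge_fls_const intro: oW)
  define P4 where "P4 = pdo_mult P2 P3"
  have bP4: "bnd P4 1" unfolding P4_def using bnd_mult[OF bP2 bP3] by simp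
  have oP4: "ordge (P4 k m) (- m - 1)" for k m
    unfolding P4_def by (rule ordge_pdo_mult[OF bP2 bP3, where oA = "\<lambda>_. 0" and oB = "\<lambda>k m. - m - 1"]) (auto intro: oP2 oP3)
  have oP5: "ordge (pdo_mult P4 pdo_Delta_inv k m) (- m - 1)" for k m
    by (rule ordge_pdo_mult[OF bP4 bDi, where oA = "\<lambda>i. - m - 1" and oB = "\<lambda>_ _. 0"]) (auto intro: oP4 oDi)
  have "Rx (what Z) (\<lambda>t n. fls_const (\<psi> t n)) 1 t = pdo_mult P4 pdo_Delta_inv"
    by (simp add: Rx_def P4_def P3_def P2_def H_def)
  then show ?thesis using oP5[of "-1" n] c by (simp add: pdo_res_def ordge_def)
qed

lemma sig_order:
  assumes c: "c \<le> n"
  shows "fls_nth (\<sigma> t n) c = 0"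
proof -
  obtain d where d: "\<forall>t k. k < d \<longrightarrow> fls_nth (\<sigma> t n) k = 0" using S1_bnd[of n] by blast
  show ?thesis
  proof (rule order_prop[where F = "\<lambda>t k. fls_nth (\<sigma> t n) k" and d = d and N = n and e = 1
        and R = "\<lambda>t k. - fls_nth (pdo_res (Rx (\<lambda>t n. fls_const (\<phi> t n)) (wstarhat Zi) 1 t) n) k", OF _ _ _ c])
    fix t k assume "k < d" then show "fls_nth (\<sigma> t n) k = 0" using d by simp
  next
    fix t k assume "k < n"
    show "fls_nth (\<sigma> t n) (k + 1) = 1 * pd 1 (\<lambda>s. fls_nth (\<sigma> s n) k) t + - fls_nth (pdo_res (Rx (\<lambda>t n. fls_const (\<phi> t n)) (wstarhat Zi) 1 t) n) k"
      using S1_eq[of 1 n k t] by simp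
  next
    fix t k assume k: "k < n"
    from R1_order[OF k, of t] show "- fls_nth (pdo_res (Rx (\<lambda>t n. fls_const (\<phi> t n)) (wstarhat Zi) 1 t) n) k = 0"
      by simp
  qed
qed

lemma rho_order:
  assumes c: "c < - n"
  shows "fls_nth (\<rho> t n) c = 0"
proof -
  obtain d where d: "\<forall>t k. k < d \<longrightarrow> fls_nth (\<rho> t n) k = 0" using S2_bnd[of n] by blast
  have c': "c \<le> - n - 1" using c by simp
  show ?thesis
  proof (rule order_prop[where F = "\<lambda>t k. fls_nth (\<rho> t n) k" and d = d and N = "- n - 1" and e = "-1"
        and R = "\<lambda>t k. fls_nth (pdo_res (Rx (what Z) (\<lambda>t n. fls_const (\<psi> t n)) 1 t) n) k", OF _ _ _ c'])
    fix t k assume "k < d" then show "fls_nth (\<rho> t n) k = 0" using d by simp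
  next
    fix t k assume "k < - n - 1"
    show "fls_nth (\<rho> t n) (k + 1) = -1 * pd 1 (\<lambda>s. fls_nth (\<rho> s n) k) t + fls_nth (pdo_res (Rx (what Z) (\<lambda>t n. fls_const (\<psi> t n)) 1 t) n) k"
      using S2_eq[of 1 n k t] by simp
  next
    fix t k assume k: "k < - n - 1"
    from R2_order[OF k, of t] show "fls_nth (pdo_res (Rx (what Z) (\<lambda>t n. fls_const (\<psi> t n)) 1 t) n) k = 0"
      by simp
  qed
qed

end


context dm
begin

lemma res_step1:
  "fls_nth (what Z t a * \<sigma> t (m + 1)) 1 - fls_nth (what Z t a * \<sigma> t m) 1
   = \<phi> t m * (fls_nth (what Z t a * wstarhat Zi t (m + 1)) 1 - fls_nth (what Z t a * wstarhat Zi t m) 1)"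
proof -
  have "what Z t a * \<sigma> t (m + 1) - what Z t a * \<sigma> t m = what Z t a * (\<sigma> t (m + 1) - \<sigma> t m)"
    by (simp add: right_diff_distrib)
  also have "\<dots> = what Z t a * (fls_const (\<phi> t m) * (wstarhat Zi t (m + 1) - wstarhat Zi t m))"
    by (simp only: S1_diff)
  also have "\<dots> = fls_const (\<phi> t m) * (what Z t a * wstarhat Zi t (m + 1) - what Z t a * wstarhat Zi t m)"
    by (simp add: algebra_simps)
  finally have e: "what Z t a * \<sigma> t (m + 1) - what Z t a * \<sigma> t m = fls_const (\<phi> t m) * (what Z t a * wstarhat Zi t (m + 1) - what Z t a * wstarhat Zi t m)" .
  have "fls_nth (what Z t a * \<sigma> t (m + 1) - what Z t a * \<sigma> t m) 1 = fls_nth (fls_const (\<phi> t m) * (what Z t a * wstarhat Zi t (m + 1) - what Z t a * wstarhat Zi t m)) 1"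
    by (simp only: e)
  then show ?thesis by simp
qed

lemma base1:
  assumes "n \<le> a"
  shows "fls_nth (what Z t a * \<sigma> t n) 1 = \<phi> t a"
proof -
  have top: "fls_nth (what Z t a * \<sigma> t (a + 1)) 1 = 0"
  proof -
    have "ordge (what Z t a) (- a)" by (auto simp: ordge_def what_order)
    moreover have "ordge (\<sigma> t (a + 1)) (a + 2)" by (auto simp: ordge_def sig_order)
    ultimately have "ordge (what Z t a * \<sigma> t (a + 1)) (- a + (a + 2))" by (rule ordge_mult)
    then show ?thesis by (simp add: ordge_def)
  qed
  have at: "fls_nth (what Z t a * \<sigma> t a) 1 = \<phi> t a"
    using res_step1[of t a a] top by (simp add: bil)
  have "\<forall>n. nat (a - n) = k \<longrightarrow> n \<le> a \<longrightarrow> fls_nth (what Z t a * \<sigma> t n) 1 = \<phi> t a" for k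
  proof (induction k)
    case 0 then show ?case using at by auto
  next
    case (Suc k)
    show ?case
    proof (intro allI impI)
      fix n assume n: "nat (a - n) = Suc k" "n \<le> a"
      then have "nat (a - (n + 1)) = k" "n + 1 \<le> a" by auto
      then have "fls_nth (what Z t a * \<sigma> t (n + 1)) 1 = \<phi> t a" using Suc by blast
      moreover have "n + 1 \<le> a" "n \<le> a" using n by auto
      ultimately show "fls_nth (what Z t a * \<sigma> t n) 1 = \<phi> t a"
        using res_step1[of t a n] by (simp add: bil)
    qed
  qed
  then show ?thesis using assms by blast
qed

lemma res_step2:
  "fls_nth (wstarhat Zi t b * (what Z t (m + 1) * fls_const (\<psi> t (m + 1)) - \<rho> t (m + 1))) 1
   - fls_nth (wstarhat Zi t b * (what Z t m * fls_const (\<psi> t m) - \<rho> t m)) 1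
   = \<psi> t (m + 1) * (fls_nth (what Z t (m + 1) * wstarhat Zi t b) 1 - fls_nth (what Z t m * wstarhat Zi t b) 1)"
proof -
  have r: "\<rho> t (m + 1) = \<rho> t m + what Z t m * (fls_const (\<psi> t (m + 1)) - fls_const (\<psi> t m))"
    using S2_diff[of t m] by (simp add: algebra_simps)
  have e: "wstarhat Zi t b * (what Z t (m + 1) * fls_const (\<psi> t (m + 1)) - \<rho> t (m + 1))
     - wstarhat Zi t b * (what Z t m * fls_const (\<psi> t m) - \<rho> t m)
     = fls_const (\<psi> t (m + 1)) * (what Z t (m + 1) * wstarhat Zi t b - what Z t m * wstarhat Zi t b)"
    unfolding r by (simp add: algebra_simps)
  have "fls_nth (wstarhat Zi t b * (what Z t (m + 1) * fls_const (\<psi> t (m + 1)) - \<rho> t (m + 1))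
     - wstarhat Zi t b * (what Z t m * fls_const (\<psi> t m) - \<rho> t m)) 1
     = fls_nth (fls_const (\<psi> t (m + 1)) * (what Z t (m + 1) * wstarhat Zi t b - what Z t m * wstarhat Zi t b)) 1"
    by (simp only: e)
  then show ?thesis by simp
qed

lemma base2:
  assumes "b \<le> n"
  shows "fls_nth (wstarhat Zi t b * (what Z t n * fls_const (\<psi> t n) - \<rho> t n)) 1 = \<psi> t b"
proof -
  have bot: "fls_nth (wstarhat Zi t b * (what Z t (b - 1) * fls_const (\<psi> t (b - 1)) - \<rho> t (b - 1))) 1 = 0"
  proof -
    have "ordge (wstarhat Zi t b) (b + 1)" by (auto simp: ordge_def wstar_order)
    moreover have "ordge (what Z t (b - 1) * fls_const (\<psi> t (b - 1)) - \<rho> t (b - 1)) (1 - b)"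
    proof (rule ordge_diff)
      have "ordge (what Z t (b - 1)) (1 - b)" by (auto simp: ordge_def what_order)
      then show "ordge (what Z t (b - 1) * fls_const (\<psi> t (b - 1))) (1 - b)"
        using ordge_mult[OF _ ordge_fls_const] by fastforce
      show "ordge (\<rho> t (b - 1)) (1 - b)" by (auto simp: ordge_def rho_order)
    qed
    ultimately have "ordge (wstarhat Zi t b * (what Z t (b - 1) * fls_const (\<psi> t (b - 1)) - \<rho> t (b - 1))) (b + 1 + (1 - b))"
      by (rule ordge_mult)
    then show ?thesis by (simp add: ordge_def)
  qed
  have at: "fls_nth (wstarhat Zi t b * (what Z t b * fls_const (\<psi> t b) - \<rho> t b)) 1 = \<psi> t b"
    using res_step2[of t b "b - 1"] bot by (simp add: bil)
  have "\<forall>n. nat (n - b) = k \<longrightarrow> b \<le> n \<longrightarrow> fls_nth (wstarhat Zi t b * (what Z t n * fls_const (\<psi> t n) - \<rho> t n)) 1 = \<psi> t b" for k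
  proof (induction k)
    case 0 then show ?case using at by auto
  next
    case (Suc k)
    show ?case
    proof (intro allI impI)
      fix n assume n: "nat (n - b) = Suc k" "b \<le> n"
      then have "nat ((n - 1) - b) = k" "b \<le> n - 1" by auto
      then have "fls_nth (wstarhat Zi t b * (what Z t (n - 1) * fls_const (\<psi> t (n - 1)) - \<rho> t (n - 1))) 1 = \<psi> t b"
        using Suc by blast
      moreover have "b \<le> n - 1" "b \<le> n" using n by auto
      ultimately show "fls_nth (wstarhat Zi t b * (what Z t n * fls_const (\<psi> t n) - \<rho> t n)) 1 = \<psi> t b"
        using res_step2[of t b "n - 1"] by (simp add: bil)
    qed
  qed
  then show ?thesis using assms by blast
qed


lemma Lpos_neg': "\<And>k n. k \<le> 0 \<Longrightarrow> Lpos j t k n = 0"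
  by (rule Lp_neg)

theorem wstar_D:
  assumes j: "1 \<le> j"
  shows "Dtw (-1) j (wstarhat Zi) t b = - adj_conj_apply (pdo_map fls_const (Lpos j t)) (wstarhat Zi t) b"
proof -
  define F where "F = Dtw (-1) j (wstarhat Zi) t b + adj_conj_apply (pdo_map fls_const (Lpos j t)) (wstarhat Zi t) b"
  have resF: "fls_nth (what Z t a * F) 1 = 0" for a
  proof -
    have h1: "hpd j (\<lambda>s. fls_nth (what Z s a * wstarhat Zi s b) 1) t
        (fls_nth (Dtw 1 j (what Z) t a * wstarhat Zi t b) 1 + fls_nth (what Z t a * Dtw (- 1) j (wstarhat Zi) t b) 1)"
      by (rule PRt[OF fgood_what fgood_wstar j])
    have h2: "hpd j (\<lambda>s. fls_nth (what Z s a * wstarhat Zi s b) 1) t 0"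
      by (rule hpd_cong[OF bil]) (rule hpd_const)
    have sum0: "fls_nth (Dtw 1 j (what Z) t a * wstarhat Zi t b) 1 + fls_nth (what Z t a * Dtw (- 1) j (wstarhat Zi) t b) 1 = 0"
      using hpd_unique[OF h1 h2] .
    have e1: "fls_nth (Dtw 1 j (what Z) t a * wstarhat Zi t b) 1 = pdo_apply (Lpos j t) (\<lambda>m. if b \<le> m then 1 else 0) a"
    proof -
      have "fls_nth (Dtw 1 j (what Z) t a * wstarhat Zi t b) 1 = fls_nth (wstarhat Zi t b * pdo_apply (pdo_map fls_const (Lpos j t)) (what Z t) a) 1"
        by (simp add: what_D[OF j] mult.commute)
      also have "\<dots> = pdo_apply (Lpos j t) (\<lambda>m. fls_nth (wstarhat Zi t b * what Z t m) 1) a"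
        by (rule lin_apply[OF bLp])
      also have "(\<lambda>m. fls_nth (wstarhat Zi t b * what Z t m) 1) = (\<lambda>m. if b \<le> m then 1 else 0)"
        by (intro ext) (simp add: mult.commute[of "wstarhat Zi t b"] bil)
      finally show ?thesis .
    qed
    have e2: "fls_nth (what Z t a * adj_conj_apply (pdo_map fls_const (Lpos j t)) (wstarhat Zi t) b) 1
        = adj_conj_apply (Lpos j t) (\<lambda>m. if m \<le> a then 1 else 0) b"
    proof -
      have "fls_nth (what Z t a * adj_conj_apply (pdo_map fls_const (Lpos j t)) (wstarhat Zi t) b) 1
          = adj_conj_apply (Lpos j t) (\<lambda>m. fls_nth (what Z t a * wstarhat Zi t m) 1) b"
        by (rule lin_adj[OF bLp])
      also have "(\<lambda>m. fls_nth (what Z t a * wstarhat Zi t m) 1) = (\<lambda>m. if m \<le> a then 1 else 0)"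
        by (intro ext) (simp add: bil)
      finally show ?thesis .
    qed
    have K: "adj_conj_apply (Lpos j t) (\<lambda>m. if m \<le> a then 1 else 0) b = pdo_apply (Lpos j t) (\<lambda>m. if b \<le> m then 1 else 0) a"
      by (rule KI[OF bLp]) (rule Lp_neg)
    have "fls_nth (what Z t a * F) 1 = fls_nth (what Z t a * Dtw (- 1) j (wstarhat Zi) t b) 1
        + fls_nth (what Z t a * adj_conj_apply (pdo_map fls_const (Lpos j t)) (wstarhat Zi t) b) 1"
      by (simp add: F_def distrib_left)
    then show ?thesis using sum0 e1 e2 K by simp
  qed
  have "F = 0"
  proof (rule ccontr)
    assume nz: "F \<noteq> 0"
    define c0 where "c0 = fls_subdegree F"
    have Fc0: "fls_nth F c0 \<noteq> 0" using nz by (simp add: c0_def nth_fls_subdegree_nonzero)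
    have Fbel: "\<And>c. c < c0 \<Longrightarrow> fls_nth F c = 0" by (simp add: c0_def fls_eq0_below_subdegree)
    have "fls_nth (what Z t (c0 - 1) * F) 1 = (\<Sum>x\<in>{- (c0 - 1)..1 - c0}. fls_nth (what Z t (c0 - 1)) x * fls_nth F (1 - x))"
      by (rule fls_mult_nth_bnd) (auto simp: what_order Fbel)
    also have "{- (c0 - 1)..1 - c0} = {1 - c0}" by auto
    finally have "fls_nth (what Z t (c0 - 1) * F) 1 = fls_nth (what Z t (c0 - 1)) (1 - c0) * fls_nth F c0" by simp
    also have "fls_nth (what Z t (c0 - 1)) (1 - c0) = Z t 0 (c0 - 1)"
      using what_lead[of t "c0 - 1"] by simp
    finally have "fls_nth (what Z t (c0 - 1) * F) 1 \<noteq> 0" using Fc0 z0_nz by simp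
    then show False using resF by simp
  qed
  then show ?thesis by (simp add: F_def add_eq_0_iff)
qed

lemma pdo_apply_zero: "bnd A d \<Longrightarrow> pdo_apply A (\<lambda>_. 0) a = (0::real)"
  by (simp add: pdo_apply_eq)

lemma adj_zero: "bnd A d \<Longrightarrow> adj_conj_apply A (\<lambda>_. 0) b = (0::real)"
  by (simp add: adj_conj_apply_eq)

theorem main1:
  assumes "\<forall>i\<in>set is. 1 \<le> i" and "n \<le> a"
  shows "fls_nth (what Z t a * Dtw_list (-1) is \<sigma> t n) 1 = (if is = [] then \<phi> t a else 0)"
  using assms
proof (induction "is" arbitrary: t n a)
  case Nil then show ?case using base1 by simp
next
  case (Cons j "is")
  have j: "1 \<le> j" and isj: "\<forall>i\<in>set is. 1 \<le> i" using Cons.prems by auto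
  define G where "G = Dtw_list (-1) is \<sigma>"
  have fgG: "fgood (\<lambda>t. G t n)" unfolding G_def by (rule fgood_Dtw_list[OF isj fg_sig])
  have IH: "fls_nth (what Z s m * G s n) 1 = (if is = [] then \<phi> s m else 0)" if "n \<le> m" for s m
    unfolding G_def using Cons.IH[OF isj that] .
  have h1: "hpd j (\<lambda>s. fls_nth (what Z s a * G s n) 1) t
      (fls_nth (Dtw 1 j (what Z) t a * G t n) 1 + fls_nth (what Z t a * Dtw (- 1) j G t n) 1)"
    by (rule PRt[where W = "what Z" and a = a and V = G and n = n, OF fgood_what fgG j])
  have h2: "hpd j (\<lambda>s. fls_nth (what Z s a * G s n) 1) t (if is = [] then pdo_apply (Lpos j t) (\<phi> t) a else 0)"
  proof (cases "is = []")
    case True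
    have "pdiff j (\<lambda>s. \<phi> s a) t \<and> pd j (\<lambda>s. \<phi> s a) t = pdo_apply (Lpos j t) (\<phi> t) a"
      using eig j by (auto simp: eigenfunction_def)
    then have hp: "hpd j (\<lambda>s. \<phi> s a) t (pdo_apply (Lpos j t) (\<phi> t) a)" using pdiff_hpd by fastforce
    have hc: "\<And>s. fls_nth (what Z s a * G s n) 1 = \<phi> s a" using True Cons.prems by (simp add: IH)
    show ?thesis using True hpd_cong[OF hc hp] by simp
  next
    case False
    have hc: "\<And>s. fls_nth (what Z s a * G s n) 1 = 0" using False Cons.prems by (simp add: IH)
    show ?thesis using False hpd_cong[OF hc hpd_const] by simp
  qed
  have e1: "fls_nth (Dtw 1 j (what Z) t a * G t n) 1 = pdo_apply (Lpos j t) (\<lambda>m. if is = [] then \<phi> t m else 0) a"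
  proof -
    have "fls_nth (Dtw 1 j (what Z) t a * G t n) 1 = fls_nth (G t n * pdo_apply (pdo_map fls_const (Lpos j t)) (what Z t) a) 1"
      by (simp add: what_D[OF j] mult.commute)
    also have "\<dots> = pdo_apply (Lpos j t) (\<lambda>m. fls_nth (G t n * what Z t m) 1) a"
      by (rule lin_apply[OF bLp])
    also have "\<dots> = pdo_apply (Lpos j t) (\<lambda>m. if is = [] then \<phi> t m else 0) a"
      by (rule pdo_apply_cong[OF bLp]) (use Cons.prems in \<open>simp add: mult.commute[of "G t n"] IH\<close>)
    finally show ?thesis .
  qed
  have "fls_nth (what Z t a * Dtw (- 1) j G t n) 1 = 0"
  proof (cases "is = []")
    case True
    then show ?thesis using hpd_unique[OF h1 h2] e1 by simp
  next
    case False
    then show ?thesis using hpd_unique[OF h1 h2] e1 pdo_apply_zero[OF bLp] by simp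
  qed
  then show ?case by (simp add: G_def)
qed

theorem main2:
  assumes "\<forall>i\<in>set is. 1 \<le> i" and "b \<le> n"
  shows "fls_nth (wstarhat Zi t b * Dtw_list 1 is (\<lambda>s m. what Z s m * fls_const (\<psi> s m) - \<rho> s m) t n) 1
         = (if is = [] then \<psi> t b else 0)"
  using assms
proof (induction "is" arbitrary: t n b)
  case Nil then show ?case using base2 by simp
next
  case (Cons j "is")
  have j: "1 \<le> j" and isj: "\<forall>i\<in>set is. 1 \<le> i" using Cons.prems by auto
  define G where "G = Dtw_list 1 is (\<lambda>s m. what Z s m * fls_const (\<psi> s m) - \<rho> s m)"
  have fgG: "fgood (\<lambda>t. G t n)" unfolding G_def by (rule fgood_Dtw_list[OF isj fg_T])
  have IH: "fls_nth (wstarhat Zi s m * G s n) 1 = (if is = [] then \<psi> s m else 0)" if "m \<le> n" for s m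
    unfolding G_def using Cons.IH[OF isj that] .
  have h1: "hpd j (\<lambda>s. fls_nth (wstarhat Zi s b * G s n) 1) t
      (fls_nth (Dtw (-1) j (wstarhat Zi) t b * G t n) 1 + fls_nth (wstarhat Zi t b * Dtw (- (-1)) j G t n) 1)"
    by (rule PRt[where W = "wstarhat Zi" and a = b and V = G and n = n, OF fgood_wstar fgG j])
  have h2: "hpd j (\<lambda>s. fls_nth (wstarhat Zi s b * G s n) 1) t (if is = [] then - adj_conj_apply (Lpos j t) (\<psi> t) b else 0)"
  proof (cases "is = []")
    case True
    have "pdiff j (\<lambda>s. \<psi> s b) t \<and> pd j (\<lambda>s. \<psi> s b) t = - adj_conj_apply (Lpos j t) (\<psi> t) b"
      using adj j by (auto simp: adjoint_eigenfunction_def)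
    then have hp: "hpd j (\<lambda>s. \<psi> s b) t (- adj_conj_apply (Lpos j t) (\<psi> t) b)" using pdiff_hpd by fastforce
    have hc: "\<And>s. fls_nth (wstarhat Zi s b * G s n) 1 = \<psi> s b" using True Cons.prems by (simp add: IH)
    show ?thesis using True hpd_cong[OF hc hp] by simp
  next
    case False
    have hc: "\<And>s. fls_nth (wstarhat Zi s b * G s n) 1 = 0" using False Cons.prems by (simp add: IH)
    show ?thesis using False hpd_cong[OF hc hpd_const] by simp
  qed
  have e1: "fls_nth (Dtw (-1) j (wstarhat Zi) t b * G t n) 1 = - adj_conj_apply (Lpos j t) (\<lambda>m. if is = [] then \<psi> t m else 0) b"
  proof -
    have "fls_nth (Dtw (-1) j (wstarhat Zi) t b * G t n) 1 = - fls_nth (G t n * adj_conj_apply (pdo_map fls_const (Lpos j t)) (wstarhat Zi t) b) 1"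
      by (simp add: wstar_D[OF j] mult.commute)
    also have "fls_nth (G t n * adj_conj_apply (pdo_map fls_const (Lpos j t)) (wstarhat Zi t) b) 1
        = adj_conj_apply (Lpos j t) (\<lambda>m. fls_nth (G t n * wstarhat Zi t m) 1) b"
      by (rule lin_adj[OF bLp])
    also have "\<dots> = adj_conj_apply (Lpos j t) (\<lambda>m. if is = [] then \<psi> t m else 0) b"
      by (rule adj_cong[OF bLp]) (use Cons.prems in \<open>simp add: mult.commute[of "G t n"] IH\<close>)
    finally show ?thesis .
  qed
  have "fls_nth (wstarhat Zi t b * Dtw 1 j G t n) 1 = 0"
  proof (cases "is = []")
    case True
    then show ?thesis using hpd_unique[OF h1 h2] e1 by simp
  next
    case False
    then show ?thesis using hpd_unique[OF h1 h2] e1 adj_zero[OF bLp] by simp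
  qed
  then show ?case by (simp add: G_def)
qed

theorem final:
  "\<forall>is t n. (\<forall>i\<in>set is. i \<ge> 1) \<longrightarrow>
           fls_nth (what Z t n * Dtw_list (-1) is \<sigma> t n) 1
             = (if is = [] then \<phi> t n else 0)
         \<and> fls_nth (wstarhat Zi t n *
              Dtw_list 1 is (\<lambda>s m. what Z s m * fls_const (\<psi> s m) - \<rho> s m) t n) 1
             = (if is = [] then \<psi> t n else 0)"
  using main1 main2 by simp

end


theorem proposition3p3:
  fixes Z Zi :: tpdo
    and \<phi> \<psi> :: "(nat \<Rightarrow> real) \<Rightarrow> int \<Rightarrow> real"
    and \<sigma> \<rho> :: "(nat \<Rightarrow> real) \<Rightarrow> int \<Rightarrow> real fls"
  assumes dress: "dmKP_dressing Z Zi"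
    and eig: "eigenfunction (Lax Z Zi) \<phi>"
    and adj: "adjoint_eigenfunction (Lax Z Zi) \<psi>"
    and S1: "sq_pot (Lax Z Zi) (-1) (\<lambda>t n. fls_const (\<phi> t n)) (wstarhat Zi) \<sigma>"
    and S2: "sq_pot (Lax Z Zi) 1 (what Z) (\<lambda>t n. fls_const (\<psi> t n)) \<rho>"
  shows "\<forall>is t n. (\<forall>i\<in>set is. i \<ge> 1) \<longrightarrow>
           fls_nth (what Z t n * Dtw_list (-1) is \<sigma> t n) 1
             = (if is = [] then \<phi> t n else 0)
         \<and> fls_nth (wstarhat Zi t n *
              Dtw_list 1 is (\<lambda>s m. what Z s m * fls_const (\<psi> s m) - \<rho> s m) t n) 1
             = (if is = [] then \<psi> t n else 0)"
  using dm.final[OF dm.intro[OF dress eig adj S1 S2]] .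

end
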